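(* The tangent space of the model \(\mathbf{P}\) at \(P_{0}\) is the set \(\dot{\mathbf{P}} \subseteq L_{2}(P_{0})\) of all functions \(h\) such that (a) for every \(a \in \{0,1\}\), \(\int h(y,a,z)\, q_{a}(y,z;Q_{0})\, \nu_{a}(\mathrm{d}y,\mathrm{d}z) = 0\); (b) \(\int_{\mathbb{R}} h(y,1,z)\, q_{1}(y,z;Q_{0})\, \mu_{1}(\mathrm{d}y) = \int h(y,0,z)\, q_{0}(y,z;Q_{0})\, \mu_{0}(\mathrm{d}y)\) for \(\mu_{Z}\)-almost every \(z\).
   Context: Let \(W = (Y(0), Y(1), Z')'\) be a random vector in \(\mathbb{R}^{2+k}\) (potential outcomes and baseline covariates) whose distribution \(Q\) belongs to a family \(\mathbf{Q}\) of distributions, each dominated by the product measure \(\mu\) of \(\sigma\)-finite measures \(\mu_{0}, \mu_{1}\) on \(\mathbb{R}\) and \(\mu_{Z}\) on \(\mathbb{R}^{k}\), with \(\mathbb{E}_{Q}[Y(a)^{2}] < \infty\) for \(a \in \{0,1\}\); the true distribution is \(Q_{0}\). For \(a \in \{0,1\}\), let \(\nu_{a} = \mu_{a} \times \mu_{Z}\) and let \(q_{a}(y,z;Q)\) be the \(\nu_{a}\)-density of \((Y(a), Z)\) under \(Q\). Let \(\mathbb{S} : \mathbb{R}^{k} \to \{1, \dots, \mathcal{S}\}\) be a known measurable stratification function and \(\pi(s) \in (0,1)\) known target treatment probabilities. \(\mathbf{P}\) is the family of distributions of \(X = (Y, A, Z')'\) where \(Y = Y(1)A + Y(0)(1-A)\),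 \(A\) is independent of \((Y(0),Y(1),Z)\) conditional on \(\mathbb{S}(Z)\), and \(A \mid \mathbb{S}(Z) = s \sim \mathrm{Bernoulli}(\pi(s))\), with \(W \sim Q \in \mathbf{Q}\); \(P_{0}\) is the member corresponding to \(Q_{0}\). Each \(P \in \mathbf{P}\) has density \(p(y,a,z) = [q_{1}(y,z;Q)\pi(\mathbb{S}(z))]^{a}[q_{0}(y,z;Q)(1-\pi(\mathbb{S}(z)))]^{1-a}\) with respect to the measure \(\nu\) defined by \(\nu(\mathcal{Y}\times\mathcal{A}\times\mathcal{Z}) = \nu_{1}(\mathcal{Y}\times\mathcal{Z})\mathbb{I}(1\in\mathcal{A}) + \nu_{0}(\mathcal{Y}\times\mathcal{Z})\mathbb{I}(0\in\mathcal{A})\). A regular parametric submodel \(\{P_{\theta}\}\) of \(\mathbf{P}\) through \(P_{0}\) is one of this form with densities \(q_{a}(\cdot;\theta)\) sharing a common \(Z\)-marginal density for all \(\theta\), identifying \(P_{0}\) uniquely at \(\theta_{0}\), with \(\theta \mapsto \sqrt{q_{a}(\cdot;\theta)}\) differentiable in quadratic mean at \(\theta_{0}\) with derivative \(D_{a}\) and nonsingular information; its score is \(h(y,a,z) = 2 D_{a}(y,z) / \sqrt{q_{a}(y,z;Q_{0})}\, \mathbb{I}\{q_{a}(y,z;Q_{0}) > 0\}\). The tangent space is the closed linear span in \(L_{2}(P_{0})\) of the scores of all such regular parametric submodels. *)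

theory Defs
  imports "HOL-Probability.Probability"
begin

text \<open>Setting: Y(0), Y(1) real, Z in (real^'k). Treatment indicator a :: bool (True = 1).
  mu0, mu1 on the reals, muZ on (real^'k); nu_a = mu_a x muZ; mu = mu0 x mu1 x muZ.\<close>

definition nuM :: "real measure \<Rightarrow> real measure \<Rightarrow> (real^'k) measure \<Rightarrow> bool \<Rightarrow> (real \<times> (real^'k)) measure" where
  "nuM mu0 mu1 muZ a = (if a then mu1 else mu0) \<Otimes>\<^sub>M muZ"

text \<open>Density of (Y(a),Z) w.r.t. nu_a obtained from the joint density q of (Y(0),Y(1),Z) w.r.t. mu.\<close>
definition qmarg :: "real measure \<Rightarrow> real measure \<Rightarrow> (real \<times> real \<times> (real^'k) \<Rightarrow> real) \<Rightarrow> bool \<Rightarrow> real \<times> (real^'k) \<Rightarrow> real" where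
  "qmarg mu0 mu1 q a x = (case x of (y, z) \<Rightarrow>
     if a then enn2real (\<integral>\<^sup>+ y0. ennreal (q (y0, y, z)) \<partial>mu0)
     else enn2real (\<integral>\<^sup>+ y1. ennreal (q (y, y1, z)) \<partial>mu1))"

text \<open>The family Q: all distributions of W = (Y(0),Y(1),Z) dominated by mu with finite second
  moments of Y(0) and Y(1), represented by their mu-densities.\<close>
definition Qfam :: "real measure \<Rightarrow> real measure \<Rightarrow> (real^'k) measure \<Rightarrow> (real \<times> real \<times> (real^'k) \<Rightarrow> real) set" where
  "Qfam mu0 mu1 muZ = {q.
     q \<in> borel_measurable (mu0 \<Otimes>\<^sub>M (mu1 \<Otimes>\<^sub>M muZ)) \<and> (\<forall>w. 0 \<le> q w) \<and>
     (\<integral>\<^sup>+ w. ennreal (q w) \<partial>(mu0 \<Otimes>\<^sub>M (mu1 \<Otimes>\<^sub>M muZ))) = 1 \<and>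
     (\<integral>\<^sup>+ w. ennreal ((fst w)\<^sup>2 * q w) \<partial>(mu0 \<Otimes>\<^sub>M (mu1 \<Otimes>\<^sub>M muZ))) < \<infinity> \<and>
     (\<integral>\<^sup>+ w. ennreal ((fst (snd w))\<^sup>2 * q w) \<partial>(mu0 \<Otimes>\<^sub>M (mu1 \<Otimes>\<^sub>M muZ))) < \<infinity>}"

text \<open>Treatment assignment probability P(A = a | S(Z) = S z).\<close>
definition pw :: "(nat \<Rightarrow> real) \<Rightarrow> ((real^'k) \<Rightarrow> nat) \<Rightarrow> bool \<Rightarrow> (real^'k) \<Rightarrow> real" where
  "pw ppi S a z = (if a then ppi (S z) else 1 - ppi (S z))"

text \<open>Integrals with respect to P (the law of X=(Y,A,Z) built from density q), via
  p(y,a,z) = q_a(y,z) pi_a(S z) w.r.t. nu.  Nonnegative version and Bochner version.\<close>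
definition Pnn :: "real measure \<Rightarrow> real measure \<Rightarrow> (real^'k) measure \<Rightarrow> (nat \<Rightarrow> real) \<Rightarrow> ((real^'k) \<Rightarrow> nat)
    \<Rightarrow> (real \<times> real \<times> (real^'k) \<Rightarrow> real) \<Rightarrow> (real \<times> bool \<times> (real^'k) \<Rightarrow> real) \<Rightarrow> ennreal" where
  "Pnn mu0 mu1 muZ ppi S q f = (\<Sum>a\<in>UNIV.
     \<integral>\<^sup>+ x. ennreal (f (fst x, a, snd x) * qmarg mu0 mu1 q a x * pw ppi S a (snd x)) \<partial>nuM mu0 mu1 muZ a)"

definition Pint :: "real measure \<Rightarrow> real measure \<Rightarrow> (real^'k) measure \<Rightarrow> (nat \<Rightarrow> real) \<Rightarrow> ((real^'k) \<Rightarrow> nat)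
    \<Rightarrow> (real \<times> real \<times> (real^'k) \<Rightarrow> real) \<Rightarrow> (real \<times> bool \<times> (real^'k) \<Rightarrow> real) \<Rightarrow> real" where
  "Pint mu0 mu1 muZ ppi S q f = (\<Sum>a\<in>UNIV.
     \<integral> x. f (fst x, a, snd x) * qmarg mu0 mu1 q a x * pw ppi S a (snd x) \<partial>nuM mu0 mu1 muZ a)"

text \<open>L_2(P) (as a set of functions, not equivalence classes).\<close>
definition L2P :: "real measure \<Rightarrow> real measure \<Rightarrow> (real^'k) measure \<Rightarrow> (nat \<Rightarrow> real) \<Rightarrow> ((real^'k) \<Rightarrow> nat)
    \<Rightarrow> (real \<times> real \<times> (real^'k) \<Rightarrow> real) \<Rightarrow> (real \<times> bool \<times> (real^'k) \<Rightarrow> real) set" where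
  "L2P mu0 mu1 muZ ppi S q = {h.
     (\<forall>a. (\<lambda>x. h (fst x, a, snd x)) \<in> borel_measurable (nuM mu0 mu1 muZ a)) \<and>
     Pnn mu0 mu1 muZ ppi S q (\<lambda>w. (h w)\<^sup>2) < \<infinity>}"

text \<open>R^d embedded in nat \<Rightarrow> real (coordinates >= d vanish) and its Euclidean norm.\<close>
definition Rd :: "nat \<Rightarrow> (nat \<Rightarrow> real) set" where
  "Rd d = {th. \<forall>i\<ge>d. th i = 0}"

definition normd :: "nat \<Rightarrow> (nat \<Rightarrow> real) \<Rightarrow> real" where
  "normd d th = sqrt (\<Sum>i<d. (th i)\<^sup>2)"

definition score :: "real measure \<Rightarrow> real measure \<Rightarrow> (real \<times> real \<times> (real^'k) \<Rightarrow> real)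
    \<Rightarrow> (bool \<Rightarrow> nat \<Rightarrow> real \<times> (real^'k) \<Rightarrow> real) \<Rightarrow> nat \<Rightarrow> real \<times> bool \<times> (real^'k) \<Rightarrow> real" where
  "score mu0 mu1 q0 D j w = (case w of (y, a, z) \<Rightarrow>
     (if 0 < qmarg mu0 mu1 q0 a (y, z)
      then 2 * D a j (y, z) / sqrt (qmarg mu0 mu1 q0 a (y, z)) else 0))"

text \<open>Regular parametric submodel through P0 (true joint density q0), with parameter set
  Theta, an open subset of R^d, true parameter th0, member densities qth th in Q, and
  quadratic-mean derivatives D a j (j < d) of th \<mapsto> sqrt(q_a(.;th)) in L_2(nu_a).\<close>
definition regular_submodel :: "real measure \<Rightarrow> real measure \<Rightarrow> (real^'k) measure \<Rightarrow> (nat \<Rightarrow> real) \<Rightarrow> ((real^'k) \<Rightarrow> nat)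
    \<Rightarrow> (real \<times> real \<times> (real^'k) \<Rightarrow> real) \<Rightarrow> nat \<Rightarrow> (nat \<Rightarrow> real) set \<Rightarrow> (nat \<Rightarrow> real)
    \<Rightarrow> ((nat \<Rightarrow> real) \<Rightarrow> real \<times> real \<times> (real^'k) \<Rightarrow> real)
    \<Rightarrow> (bool \<Rightarrow> nat \<Rightarrow> real \<times> (real^'k) \<Rightarrow> real) \<Rightarrow> bool" where
  "regular_submodel mu0 mu1 muZ ppi S q0 d Theta th0 qth D \<longleftrightarrow>
     Theta \<subseteq> Rd d \<and> th0 \<in> Theta \<and>
     (\<forall>th\<in>Theta. \<exists>r>0. \<forall>th'\<in>Rd d. normd d (\<lambda>i. th' i - th i) < r \<longrightarrow> th' \<in> Theta) \<and>
     (\<forall>th\<in>Theta. qth th \<in> Qfam mu0 mu1 muZ) \<and>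
     (\<forall>th\<in>Theta.
        (\<forall>a. AE x in nuM mu0 mu1 muZ a.
           qmarg mu0 mu1 (qth th) a x * pw ppi S a (snd x) = qmarg mu0 mu1 q0 a x * pw ppi S a (snd x))
        \<longleftrightarrow> th = th0) \<and>
     (\<forall>a. \<forall>j<d. D a j \<in> borel_measurable (nuM mu0 mu1 muZ a) \<and>
                 (\<integral>\<^sup>+ x. ennreal ((D a j x)\<^sup>2) \<partial>nuM mu0 mu1 muZ a) < \<infinity>) \<and>
     (\<forall>a. \<forall>e>0. \<exists>del>0. \<forall>th\<in>Theta. normd d (\<lambda>i. th i - th0 i) < del \<longrightarrow>
        (\<integral>\<^sup>+ x. ennreal ((sqrt (qmarg mu0 mu1 (qth th) a x) - sqrt (qmarg mu0 mu1 (qth th0) a x)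
              - (\<Sum>j<d. (th j - th0 j) * D a j x))\<^sup>2) \<partial>nuM mu0 mu1 muZ a)
        \<le> ennreal (e * (normd d (\<lambda>i. th i - th0 i))\<^sup>2)) \<and>
     (\<forall>c::nat \<Rightarrow> real.
        (\<forall>i<d. (\<Sum>j<d. Pint mu0 mu1 muZ ppi S q0 (\<lambda>w. score mu0 mu1 q0 D i w * score mu0 mu1 q0 D j w) * c j) = 0)
        \<longrightarrow> (\<forall>j<d. c j = 0))"

definition scores :: "real measure \<Rightarrow> real measure \<Rightarrow> (real^'k) measure \<Rightarrow> (nat \<Rightarrow> real) \<Rightarrow> ((real^'k) \<Rightarrow> nat)
    \<Rightarrow> (real \<times> real \<times> (real^'k) \<Rightarrow> real) \<Rightarrow> (real \<times> bool \<times> (real^'k) \<Rightarrow> real) set" where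
  "scores mu0 mu1 muZ ppi S q0 = {score mu0 mu1 q0 D j | d Theta th0 qth D j.
     regular_submodel mu0 mu1 muZ ppi S q0 d Theta th0 qth D \<and> j < d}"

definition lin_span :: "('a \<Rightarrow> real) set \<Rightarrow> ('a \<Rightarrow> real) set" where
  "lin_span A = {g. \<exists>(n::nat) (c::nat \<Rightarrow> real) f. (\<forall>i<n. f i \<in> A) \<and> g = (\<lambda>w. \<Sum>i<n. c i * f i w)}"

definition tangent_space :: "real measure \<Rightarrow> real measure \<Rightarrow> (real^'k) measure \<Rightarrow> (nat \<Rightarrow> real) \<Rightarrow> ((real^'k) \<Rightarrow> nat)
    \<Rightarrow> (real \<times> real \<times> (real^'k) \<Rightarrow> real) \<Rightarrow> (real \<times> bool \<times> (real^'k) \<Rightarrow> real) set" where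
  "tangent_space mu0 mu1 muZ ppi S q0 = {h \<in> L2P mu0 mu1 muZ ppi S q0.
     \<forall>e>0. \<exists>g\<in>lin_span (scores mu0 mu1 muZ ppi S q0).
        Pnn mu0 mu1 muZ ppi S q0 (\<lambda>w. (h w - g w)\<^sup>2) < ennreal e}"

end

theory Submission
  imports Defs
begin

lemma psf_intro: "sigma_finite_measure A \<Longrightarrow> sigma_finite_measure B \<Longrightarrow> pair_sigma_finite A B"
  by (simp add: pair_sigma_finite_def)

locale L4 =
  fixes mu0 mu1 :: "real measure" and muZ :: "(real^'k) measure"
    and S :: "(real^'k) \<Rightarrow> nat" and nS :: nat and ppi :: "nat \<Rightarrow> real"
    and q0 :: "real \<times> real \<times> (real^'k) \<Rightarrow> real"
  assumes sf0: "sigma_finite_measure mu0" and sf1: "sigma_finite_measure mu1"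
    and sfZ: "sigma_finite_measure muZ"
    and s0: "sets mu0 = sets borel" and s1: "sets mu1 = sets borel" and sZ: "sets muZ = sets borel"
    and Smeas: "S \<in> measurable muZ (count_space UNIV)" and Srange: "\<forall>z. S z \<in> {1..nS}"
    and ppi_bd: "\<forall>s\<in>{1..nS}. 0 < ppi s \<and> ppi s < 1"
    and q0Q: "q0 \<in> Qfam mu0 mu1 muZ"
begin

definition MM :: "bool \<Rightarrow> real measure" where "MM a = (if a then mu1 else mu0)"

abbreviation nu where "nu a \<equiv> nuM mu0 mu1 muZ a"
abbreviation qm where "qm q a \<equiv> qmarg mu0 mu1 q a"
abbreviation pwz where "pwz a z \<equiv> pw ppi S a z"

lemma nu_eq: "nu a = MM a \<Otimes>\<^sub>M muZ" by (simp add: nuM_def MM_def)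
lemma sfM: "sigma_finite_measure (MM a)" using sf0 sf1 by (simp add: MM_def)
lemma sM: "sets (MM a) = sets borel" using s0 s1 by (simp add: MM_def)
lemma spM: "space (MM a) = UNIV" using sets_eq_imp_space_eq[OF sM] by simp
lemma sp0: "space mu0 = UNIV" using sets_eq_imp_space_eq[OF s0] by simp
lemma sp1: "space mu1 = UNIV" using sets_eq_imp_space_eq[OF s1] by simp
lemma spZ: "space muZ = UNIV" using sets_eq_imp_space_eq[OF sZ] by simp
declare sp0[simp] sp1[simp] spZ[simp] spM[simp] space_pair_measure[simp]
lemma psf: "pair_sigma_finite (MM a) muZ" by (rule psf_intro[OF sfM sfZ])
lemma psf1: "pair_sigma_finite mu1 muZ" by (rule psf_intro[OF sf1 sfZ])
lemma psf0: "pair_sigma_finite mu0 muZ" by (rule psf_intro[OF sf0 sfZ])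
lemma sf_nu: "sigma_finite_measure (nu a)"
  unfolding nu_eq by (rule sigma_finite_pair_measure[OF sfM sfZ])
lemma sf10: "sigma_finite_measure (mu1 \<Otimes>\<^sub>M muZ)"
  by (rule sigma_finite_pair_measure[OF sf1 sfZ])
lemma psf_big: "pair_sigma_finite mu0 (mu1 \<Otimes>\<^sub>M muZ)" by (rule psf_intro[OF sf0 sf10])
lemma sp_nu: "space (nu a) = UNIV" by (simp add: nu_eq space_pair_measure spM spZ)

lemma T1:
  fixes f :: "real \<times> real \<times> (real^'k) \<Rightarrow> ennreal"
  assumes f[measurable]: "f \<in> borel_measurable (mu0 \<Otimes>\<^sub>M (mu1 \<Otimes>\<^sub>M muZ))"
  shows "(\<integral>\<^sup>+w. f w \<partial>(mu0 \<Otimes>\<^sub>M (mu1 \<Otimes>\<^sub>M muZ))) = (\<integral>\<^sup>+x. (\<integral>\<^sup>+y0. f (y0, fst x, snd x) \<partial>mu0) \<partial>nu True)"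
proof -
  interpret P: pair_sigma_finite mu0 "mu1 \<Otimes>\<^sub>M muZ" by (rule psf_big)
  show ?thesis using P.nn_integral_snd[OF f] by (simp add: nu_eq MM_def)
qed

lemma T0:
  fixes f :: "real \<times> real \<times> (real^'k) \<Rightarrow> ennreal"
  assumes f[measurable]: "f \<in> borel_measurable (mu0 \<Otimes>\<^sub>M (mu1 \<Otimes>\<^sub>M muZ))"
  shows "(\<integral>\<^sup>+w. f w \<partial>(mu0 \<Otimes>\<^sub>M (mu1 \<Otimes>\<^sub>M muZ))) = (\<integral>\<^sup>+x. (\<integral>\<^sup>+y1. f (fst x, y1, snd x) \<partial>mu1) \<partial>nu False)"
proof -
  interpret B: sigma_finite_measure "mu1 \<Otimes>\<^sub>M muZ" by (rule sf10)
  interpret P1: pair_sigma_finite mu1 muZ by (rule psf1)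
  have "(\<integral>\<^sup>+w. f w \<partial>(mu0 \<Otimes>\<^sub>M (mu1 \<Otimes>\<^sub>M muZ))) = (\<integral>\<^sup>+y0. (\<integral>\<^sup>+w. f (y0, w) \<partial>(mu1 \<Otimes>\<^sub>M muZ)) \<partial>mu0)"
    using B.nn_integral_fst[OF f] by simp
  also have "\<dots> = (\<integral>\<^sup>+y0. (\<integral>\<^sup>+z. (\<integral>\<^sup>+y1. f (y0, y1, z) \<partial>mu1) \<partial>muZ) \<partial>mu0)"
  proof (rule nn_integral_cong)
    fix y0 assume "y0 \<in> space mu0"
    have m: "(\<lambda>w. f (y0, w)) \<in> borel_measurable (mu1 \<Otimes>\<^sub>M muZ)"
      by (rule measurable_Pair2[OF f]) fact
    show "(\<integral>\<^sup>+w. f (y0, w) \<partial>(mu1 \<Otimes>\<^sub>M muZ)) = (\<integral>\<^sup>+z. (\<integral>\<^sup>+y1. f (y0, y1, z) \<partial>mu1) \<partial>muZ)"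
      using P1.nn_integral_snd[OF m] by simp
  qed
  also have "\<dots> = (\<integral>\<^sup>+x. (\<integral>\<^sup>+y1. f (fst x, y1, snd x) \<partial>mu1) \<partial>(mu0 \<Otimes>\<^sub>M muZ))"
  proof -
    have m: "(\<lambda>x. \<integral>\<^sup>+y1. f (fst x, y1, snd x) \<partial>mu1) \<in> borel_measurable (mu0 \<Otimes>\<^sub>M muZ)"
      by measurable
    show ?thesis using P1.M2.nn_integral_fst[OF m] by simp
  qed
  finally show ?thesis by (simp add: nu_eq MM_def)
qed

lemma Tz:
  fixes f :: "real \<times> (real^'k) \<Rightarrow> ennreal"
  assumes f[measurable]: "f \<in> borel_measurable (nu a)"
  shows "(\<integral>\<^sup>+x. f x \<partial>nu a) = (\<integral>\<^sup>+z. (\<integral>\<^sup>+y. f (y, z) \<partial>MM a) \<partial>muZ)"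
proof -
  interpret P: pair_sigma_finite "MM a" muZ by (rule psf)
  have f': "f \<in> borel_measurable (MM a \<Otimes>\<^sub>M muZ)" using f by (simp add: nu_eq)
  show ?thesis using P.nn_integral_snd[OF f'] by (simp add: nu_eq)
qed

lemma qm_True: "qm q True x = enn2real (\<integral>\<^sup>+y0. ennreal (q (y0, fst x, snd x)) \<partial>mu0)"
  by (simp add: qmarg_def split_beta)
lemma qm_False: "qm q False x = enn2real (\<integral>\<^sup>+y1. ennreal (q (fst x, y1, snd x)) \<partial>mu1)"
  by (simp add: qmarg_def split_beta)
lemma qm_nonneg: "0 \<le> qm q a x"
  by (cases a) (simp_all add: qm_True qm_False enn2real_nonneg)

lemma qm_meas:
  assumes q[measurable]: "q \<in> borel_measurable (mu0 \<Otimes>\<^sub>M (mu1 \<Otimes>\<^sub>M muZ))"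
  shows "qm q a \<in> borel_measurable (nu a)"
proof -
  interpret M0: sigma_finite_measure mu0 by (rule sf0)
  interpret M1: sigma_finite_measure mu1 by (rule sf1)
  show ?thesis
  proof (cases a)
    case True
    have "(\<lambda>x. enn2real (\<integral>\<^sup>+y0. ennreal (q (y0, fst x, snd x)) \<partial>mu0)) \<in> borel_measurable (mu1 \<Otimes>\<^sub>M muZ)"
      by measurable
    then show ?thesis using True by (simp add: qm_True[abs_def] nu_eq MM_def)
  next
    case False
    have "(\<lambda>x. enn2real (\<integral>\<^sup>+y1. ennreal (q (fst x, y1, snd x)) \<partial>mu1)) \<in> borel_measurable (mu0 \<Otimes>\<^sub>M muZ)"
      by measurable
    then show ?thesis using False by (simp add: qm_False[abs_def] nu_eq MM_def)
  qed
qed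

definition pj :: "bool \<Rightarrow> real \<times> real \<times> (real^'k) \<Rightarrow> real \<times> (real^'k)" where
  "pj a w = (if a then (fst (snd w), snd (snd w)) else (fst w, snd (snd w)))"

lemma marg_gen:
  assumes q[measurable]: "q \<in> borel_measurable (mu0 \<Otimes>\<^sub>M (mu1 \<Otimes>\<^sub>M muZ))"
    and g[measurable]: "g \<in> borel_measurable (nu a)"
  shows "(\<integral>\<^sup>+x. g x * ennreal (qm q a x) \<partial>nu a) \<le> (\<integral>\<^sup>+w. g (pj a w) * ennreal (q w) \<partial>(mu0 \<Otimes>\<^sub>M (mu1 \<Otimes>\<^sub>M muZ)))"
    and "(\<integral>\<^sup>+w. ennreal (q w) \<partial>(mu0 \<Otimes>\<^sub>M (mu1 \<Otimes>\<^sub>M muZ))) \<noteq> \<infinity> \<Longrightarrow>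
     (\<integral>\<^sup>+x. g x * ennreal (qm q a x) \<partial>nu a) = (\<integral>\<^sup>+w. g (pj a w) * ennreal (q w) \<partial>(mu0 \<Otimes>\<^sub>M (mu1 \<Otimes>\<^sub>M muZ)))"
proof -
  interpret M0: sigma_finite_measure mu0 by (rule sf0)
  interpret M1: sigma_finite_measure mu1 by (rule sf1)
  define I where "I = (\<lambda>x. if a then (\<integral>\<^sup>+y0. ennreal (q (y0, fst x, snd x)) \<partial>mu0)
       else (\<integral>\<^sup>+y1. ennreal (q (fst x, y1, snd x)) \<partial>mu1))"
  have Imeas: "I \<in> borel_measurable (nu a)"
  proof (cases a)
    case True
    have "(\<lambda>x. (\<integral>\<^sup>+y0. ennreal (q (y0, fst x, snd x)) \<partial>mu0)) \<in> borel_measurable (mu1 \<Otimes>\<^sub>M muZ)"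
      by measurable
    then show ?thesis using True by (simp add: I_def nu_eq MM_def)
  next
    case False
    have "(\<lambda>x. (\<integral>\<^sup>+y1. ennreal (q (fst x, y1, snd x)) \<partial>mu1)) \<in> borel_measurable (mu0 \<Otimes>\<^sub>M muZ)"
      by measurable
    then show ?thesis using False by (simp add: I_def nu_eq MM_def)
  qed
  have qmI: "qm q a x = enn2real (I x)" for x
    by (cases a) (simp_all add: I_def qm_True qm_False)
  have gm: "(\<lambda>w. g (pj a w) * ennreal (q w)) \<in> borel_measurable (mu0 \<Otimes>\<^sub>M (mu1 \<Otimes>\<^sub>M muZ))"
  proof (cases a)
    case True
    then have g': "g \<in> borel_measurable (mu1 \<Otimes>\<^sub>M muZ)" using g by (simp add: nu_eq MM_def)
    note g'[measurable]
    show ?thesis using True by (simp add: pj_def) measurable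
  next
    case False
    then have g': "g \<in> borel_measurable (mu0 \<Otimes>\<^sub>M muZ)" using g by (simp add: nu_eq MM_def)
    note g'[measurable]
    show ?thesis using False by (simp add: pj_def) measurable
  qed
  have RHS: "(\<integral>\<^sup>+w. g (pj a w) * ennreal (q w) \<partial>(mu0 \<Otimes>\<^sub>M (mu1 \<Otimes>\<^sub>M muZ))) = (\<integral>\<^sup>+x. g x * I x \<partial>nu a)"
  proof (cases a)
    case True
    have "(\<integral>\<^sup>+w. g (pj a w) * ennreal (q w) \<partial>(mu0 \<Otimes>\<^sub>M (mu1 \<Otimes>\<^sub>M muZ)))
       = (\<integral>\<^sup>+x. (\<integral>\<^sup>+y0. g x * ennreal (q (y0, fst x, snd x)) \<partial>mu0) \<partial>nu True)"
      using T1[OF gm] True by (simp add: pj_def)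
    also have "\<dots> = (\<integral>\<^sup>+x. g x * I x \<partial>nu a)"
      using True by (simp add: I_def) (intro nn_integral_cong nn_integral_cmult, measurable)
    finally show ?thesis .
  next
    case False
    have "(\<integral>\<^sup>+w. g (pj a w) * ennreal (q w) \<partial>(mu0 \<Otimes>\<^sub>M (mu1 \<Otimes>\<^sub>M muZ)))
       = (\<integral>\<^sup>+x. (\<integral>\<^sup>+y1. g x * ennreal (q (fst x, y1, snd x)) \<partial>mu1) \<partial>nu False)"
      using T0[OF gm] False by (simp add: pj_def)
    also have "\<dots> = (\<integral>\<^sup>+x. g x * I x \<partial>nu a)"
      using False by (simp add: I_def) (intro nn_integral_cong nn_integral_cmult, measurable)
    finally show ?thesis .
  qed
  show "(\<integral>\<^sup>+x. g x * ennreal (qm q a x) \<partial>nu a) \<le> (\<integral>\<^sup>+w. g (pj a w) * ennreal (q w) \<partial>(mu0 \<Otimes>\<^sub>M (mu1 \<Otimes>\<^sub>M muZ)))"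
    unfolding RHS qmI by (intro nn_integral_mono mult_left_mono) (simp_all add: ennreal_enn2real_if)
  assume fin: "(\<integral>\<^sup>+w. ennreal (q w) \<partial>(mu0 \<Otimes>\<^sub>M (mu1 \<Otimes>\<^sub>M muZ))) \<noteq> \<infinity>"
  have "(\<integral>\<^sup>+x. I x \<partial>nu a) = (\<integral>\<^sup>+w. ennreal (q w) \<partial>(mu0 \<Otimes>\<^sub>M (mu1 \<Otimes>\<^sub>M muZ)))"
  proof (cases a)
    case True
    then show ?thesis using T1[of "\<lambda>w. ennreal (q w)"] by (simp add: I_def)
  next
    case False
    then show ?thesis using T0[of "\<lambda>w. ennreal (q w)"] by (simp add: I_def)
  qed
  then have "AE x in nu a. I x \<noteq> \<infinity>"
    using fin by (intro nn_integral_PInf_AE Imeas) simp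
  then have "(\<integral>\<^sup>+x. g x * ennreal (qm q a x) \<partial>nu a) = (\<integral>\<^sup>+x. g x * I x \<partial>nu a)"
    unfolding qmI by (intro nn_integral_cong_AE) (auto elim!: eventually_mono simp: ennreal_enn2real_if)
  then show "(\<integral>\<^sup>+x. g x * ennreal (qm q a x) \<partial>nu a) = (\<integral>\<^sup>+w. g (pj a w) * ennreal (q w) \<partial>(mu0 \<Otimes>\<^sub>M (mu1 \<Otimes>\<^sub>M muZ)))"
    using RHS by simp
qed

lemma compat:
  assumes q[measurable]: "q \<in> borel_measurable (mu0 \<Otimes>\<^sub>M (mu1 \<Otimes>\<^sub>M muZ))"
    and fin: "(\<integral>\<^sup>+w. ennreal (q w) \<partial>(mu0 \<Otimes>\<^sub>M (mu1 \<Otimes>\<^sub>M muZ))) \<noteq> \<infinity>"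
  shows "AE z in muZ. (\<integral>\<^sup>+y. ennreal (qm q True (y, z)) \<partial>mu1) = (\<integral>\<^sup>+y. ennreal (qm q False (y, z)) \<partial>mu0)
      \<and> (\<integral>\<^sup>+y. ennreal (qm q True (y, z)) \<partial>mu1) \<noteq> \<infinity>"
proof -
  interpret M0: sigma_finite_measure mu0 by (rule sf0)
  interpret M1: sigma_finite_measure mu1 by (rule sf1)
  interpret P01: pair_sigma_finite mu0 mu1 by (rule psf_intro[OF sf0 sf1])
  define J1 where "J1 z = (\<integral>\<^sup>+y1. (\<integral>\<^sup>+y0. ennreal (q (y0, y1, z)) \<partial>mu0) \<partial>mu1)" for z
  define J0 where "J0 z = (\<integral>\<^sup>+y0. (\<integral>\<^sup>+y1. ennreal (q (y0, y1, z)) \<partial>mu1) \<partial>mu0)" for z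
  have J: "J1 z = J0 z" for z
  proof -
    have "case_prod (\<lambda>y0 y1. ennreal (q (y0, y1, z))) \<in> borel_measurable (mu0 \<Otimes>\<^sub>M mu1)"
      by measurable
    then show ?thesis unfolding J1_def J0_def by (rule P01.Fubini')
  qed
  have J1m: "J1 \<in> borel_measurable muZ" unfolding J1_def by measurable
  have "(\<integral>\<^sup>+z. J1 z \<partial>muZ) = (\<integral>\<^sup>+w. ennreal (q w) \<partial>(mu0 \<Otimes>\<^sub>M (mu1 \<Otimes>\<^sub>M muZ)))"
  proof -
    have m: "(\<lambda>x. \<integral>\<^sup>+y0. ennreal (q (y0, fst x, snd x)) \<partial>mu0) \<in> borel_measurable (nu True)"
      by (simp add: nu_eq MM_def) measurable
    show ?thesis using T1[of "\<lambda>w. ennreal (q w)"] Tz[OF m] by (simp add: J1_def MM_def)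
  qed
  then have AEf: "AE z in muZ. J1 z \<noteq> \<infinity>"
    using fin by (intro nn_integral_PInf_AE J1m) simp
  have e1: "(\<integral>\<^sup>+y. ennreal (qm q True (y, z)) \<partial>mu1) = J1 z" if "J1 z \<noteq> \<infinity>" for z
  proof -
    have m: "(\<lambda>y1. \<integral>\<^sup>+y0. ennreal (q (y0, y1, z)) \<partial>mu0) \<in> borel_measurable mu1" by measurable
    have "AE y1 in mu1. (\<integral>\<^sup>+y0. ennreal (q (y0, y1, z)) \<partial>mu0) \<noteq> \<infinity>"
      using that unfolding J1_def by (intro nn_integral_PInf_AE m) simp
    then show ?thesis unfolding J1_def qm_True
      by (intro nn_integral_cong_AE) (auto elim!: eventually_mono simp: ennreal_enn2real_if)
  qed
  have e0: "(\<integral>\<^sup>+y. ennreal (qm q False (y, z)) \<partial>mu0) = J0 z" if "J0 z \<noteq> \<infinity>" for z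
  proof -
    have m: "(\<lambda>y0. \<integral>\<^sup>+y1. ennreal (q (y0, y1, z)) \<partial>mu1) \<in> borel_measurable mu0" by measurable
    have "AE y0 in mu0. (\<integral>\<^sup>+y1. ennreal (q (y0, y1, z)) \<partial>mu1) \<noteq> \<infinity>"
      using that unfolding J0_def by (intro nn_integral_PInf_AE m) simp
    then show ?thesis unfolding J0_def qm_False
      by (intro nn_integral_cong_AE) (auto elim!: eventually_mono simp: ennreal_enn2real_if)
  qed
  show ?thesis using AEf
  proof eventually_elim
    case (elim z)
    then show ?case using e1[of z] e0[of z] J[of z] by simp
  qed
qed

lemma QfamD:
  assumes "q \<in> Qfam mu0 mu1 muZ"
  shows "q \<in> borel_measurable (mu0 \<Otimes>\<^sub>M (mu1 \<Otimes>\<^sub>M muZ))" "\<And>w. 0 \<le> q w"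
    "(\<integral>\<^sup>+w. ennreal (q w) \<partial>(mu0 \<Otimes>\<^sub>M (mu1 \<Otimes>\<^sub>M muZ))) = 1"
  using assms by (auto simp: Qfam_def)

lemma Qfam_int:
  assumes "q \<in> Qfam mu0 mu1 muZ"
  shows "(\<integral>\<^sup>+x. ennreal (qm q a x) \<partial>nu a) = 1"
  using marg_gen(2)[OF QfamD(1)[OF assms], of "\<lambda>_. 1" a] QfamD(3)[OF assms] by simp

lemma Qfam_integrable:
  assumes "q \<in> Qfam mu0 mu1 muZ"
  shows "integrable (nu a) (qm q a)" "(\<integral>x. qm q a x \<partial>nu a) = 1"
proof -
  have m: "qm q a \<in> borel_measurable (nu a)" by (rule qm_meas[OF QfamD(1)[OF assms]])
  show "integrable (nu a) (qm q a)"
    using Qfam_int[OF assms, of a] m by (intro integrableI_nonneg) (auto simp: qm_nonneg)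
  then show "(\<integral>x. qm q a x \<partial>nu a) = 1"
    using Qfam_int[OF assms, of a] by (subst (asm) nn_integral_eq_integral) (auto simp: qm_nonneg)
qed

lemma Qfam_compat:
  assumes "q \<in> Qfam mu0 mu1 muZ"
  shows "AE z in muZ. (\<integral>\<^sup>+y. ennreal (qm q True (y, z)) \<partial>mu1) = (\<integral>\<^sup>+y. ennreal (qm q False (y, z)) \<partial>mu0)
      \<and> (\<integral>\<^sup>+y. ennreal (qm q True (y, z)) \<partial>mu1) \<noteq> \<infinity>"
  using compat[OF QfamD(1)[OF assms]] QfamD(3)[OF assms] by simp

end

lemma quad_nonneg_imp:
  fixes A B C :: real
  assumes "C \<ge> 0" "\<And>c. 0 \<le> A - 2 * c * B + c^2 * C"
  shows "B^2 \<le> A * C"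
proof (cases "C = 0")
  case True
  have "B = 0"
  proof (rule ccontr)
    assume "B \<noteq> 0"
    have "0 \<le> A - 2 * ((A + 1) / (2 * B)) * B + ((A + 1) / (2 * B))^2 * C" by (rule assms(2))
    with True \<open>B \<noteq> 0\<close> show False by (simp add: field_simps)
  qed
  then show ?thesis using True by simp
next
  case False
  then have Cp: "C > 0" using assms(1) by simp
  have "0 \<le> A - 2 * (B / C) * B + (B / C)^2 * C" by (rule assms(2))
  then have "0 \<le> A - B^2 / C" using Cp by (simp add: field_simps power2_eq_square)
  then have "B^2 / C \<le> A" by simp
  then show ?thesis using Cp by (simp add: field_simps)
qed

lemma abs_le_sq: "\<bar>t::real\<bar> \<le> t^2 / 2 + 1 / 2"
proof -
  have "0 \<le> (\<bar>t\<bar> - 1)^2" by simp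
  also have "(\<bar>t\<bar> - 1)^2 = t^2 - 2 * \<bar>t\<bar> + 1" by (simp add: power2_diff)
  finally show ?thesis by simp
qed

lemma CS_real:
  fixes f w :: "'a \<Rightarrow> real"
  assumes f[measurable]: "f \<in> borel_measurable M" and w0: "\<And>x. 0 \<le> w x"
    and iw: "integrable M w" and ifw: "integrable M (\<lambda>x. (f x)^2 * w x)"
  shows "integrable M (\<lambda>x. f x * w x)" "(\<integral>x. f x * w x \<partial>M)^2 \<le> (\<integral>x. (f x)^2 * w x \<partial>M) * (\<integral>x. w x \<partial>M)"
proof -
  have wm[measurable]: "w \<in> borel_measurable M" using iw by auto
  have bnd: "\<bar>f x * w x\<bar> \<le> \<bar>(f x)^2 * w x / 2 + w x / 2\<bar>" for x
  proof -
    have "\<bar>f x\<bar> * w x \<le> ((f x)^2 / 2 + 1/2) * w x" using w0 abs_le_sq by (intro mult_right_mono) auto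
    moreover have "0 \<le> ((f x)^2 / 2 + 1/2) * w x" using w0[of x] by simp
    ultimately show ?thesis using w0[of x] by (simp add: abs_mult distrib_right)
  qed
  have i3: "integrable M (\<lambda>x. (f x)^2 * w x / 2 + w x / 2)" using ifw iw by simp
  show ifw1: "integrable M (\<lambda>x. f x * w x)"
    by (rule Bochner_Integration.integrable_bound[OF i3]) (simp_all add: bnd)
  let ?A = "(\<integral>x. (f x)^2 * w x \<partial>M)" and ?B = "(\<integral>x. f x * w x \<partial>M)" and ?C = "(\<integral>x. w x \<partial>M)"
  show "?B^2 \<le> ?A * ?C"
  proof (rule quad_nonneg_imp)
    show "0 \<le> ?C" using w0 by simp
    fix c :: real
    have "0 \<le> (\<integral>x. (f x - c)^2 * w x \<partial>M)" using w0 by simp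
    also have "(\<integral>x. (f x - c)^2 * w x \<partial>M) = (\<integral>x. (f x)^2 * w x - 2 * c * (f x * w x) + c^2 * w x \<partial>M)"
      by (rule Bochner_Integration.integral_cong) (auto simp: power2_eq_square algebra_simps)
    also have "\<dots> = ?A - 2 * c * ?B + c^2 * ?C"
      using ifw ifw1 iw by simp
    finally show "0 \<le> ?A - 2 * c * ?B + c^2 * ?C" .
  qed
qed

context L4 begin

definition pmin :: real where
  "pmin = Min ((\<lambda>s. min (ppi s) (1 - ppi s)) ` {1..nS})"

lemma nS_pos: "1 \<le> nS" using Srange by auto

lemma pmin_pos: "0 < pmin"
  unfolding pmin_def using nS_pos ppi_bd by (subst Min_gr_iff) auto

lemma pw_ge: "pmin \<le> pwz a z"
proof -
  have s: "S z \<in> {1..nS}" using Srange by auto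
  then have "pmin \<le> min (ppi (S z)) (1 - ppi (S z))" unfolding pmin_def by (intro Min_le) auto
  then show ?thesis by (auto simp: pw_def)
qed

lemma pw_le1: "pwz a z \<le> 1"
proof -
  have s: "S z \<in> {1..nS}" using Srange by auto
  then have "0 < ppi (S z) \<and> ppi (S z) < 1" using ppi_bd by blast
  then show ?thesis by (auto simp: pw_def)
qed

lemma pw_pos: "0 < pwz a z" using pw_ge[of a z] pmin_pos by linarith

lemma pw_measZ[measurable]: "pwz a \<in> borel_measurable muZ"
proof -
  have "(\<lambda>z. (\<lambda>s. if a then ppi s else 1 - ppi s) (S z)) \<in> borel_measurable muZ"
    by (rule measurable_compose[OF Smeas]) simp
  then show ?thesis by (simp add: pw_def[abs_def])
qed

lemma pw_meas: "(\<lambda>x. pwz a (snd x)) \<in> borel_measurable (nu a)"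
  by (simp add: nu_eq) measurable

lemma q0m: "qm q0 a \<in> borel_measurable (nu a)" by (rule qm_meas[OF QfamD(1)[OF q0Q]])
lemma q0int: "integrable (nu a) (qm q0 a)" "(\<integral>x. qm q0 a x \<partial>nu a) = 1"
  using Qfam_integrable[OF q0Q] by auto

definition Pa :: "bool \<Rightarrow> (real \<times> bool \<times> (real^'k) \<Rightarrow> real) \<Rightarrow> ennreal" where
  "Pa a f = (\<integral>\<^sup>+ x. ennreal (f (fst x, a, snd x) * qm q0 a x * pwz a (snd x)) \<partial>nu a)"

lemma Pnn_split: "Pnn mu0 mu1 muZ ppi S q0 f = Pa False f + Pa True f"
  by (simp add: Pnn_def Pa_def UNIV_bool)

lemma Pa_le: "Pa a f \<le> Pnn mu0 mu1 muZ ppi S q0 f"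
  by (cases a) (simp_all add: Pnn_split)

lemma Pa_lower:
  assumes "\<And>w. 0 \<le> f w" and fm[measurable]: "(\<lambda>x. f (fst x, a, snd x)) \<in> borel_measurable (nu a)"
  shows "ennreal pmin * (\<integral>\<^sup>+ x. ennreal (f (fst x, a, snd x) * qm q0 a x) \<partial>nu a) \<le> Pa a f"
proof -
  have "ennreal pmin * (\<integral>\<^sup>+ x. ennreal (f (fst x, a, snd x) * qm q0 a x) \<partial>nu a)
      = (\<integral>\<^sup>+ x. ennreal (pmin * (f (fst x, a, snd x) * qm q0 a x)) \<partial>nu a)"
  proof -
    have F0: "0 \<le> f (fst x, a, snd x) * qm q0 a x" for x by (intro mult_nonneg_nonneg assms(1) qm_nonneg)
    show ?thesis
      using pmin_pos q0m[of a] F0 by (subst nn_integral_cmult[symmetric]) (auto simp: ennreal_mult)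
  qed
  also have "\<dots> \<le> Pa a f" unfolding Pa_def
  proof (intro nn_integral_mono ennreal_leI)
    fix x
    have "0 \<le> f (fst x, a, snd x) * qm q0 a x" by (intro mult_nonneg_nonneg assms(1) qm_nonneg)
    then show "pmin * (f (fst x, a, snd x) * qm q0 a x) \<le> f (fst x, a, snd x) * qm q0 a x * pwz a (snd x)"
      using pw_ge[of a "snd x"] by (simp add: mult_right_mono mult.commute)
  qed
  finally show ?thesis .
qed

abbreviation hc :: "(real \<times> bool \<times> (real^'k) \<Rightarrow> real) \<Rightarrow> bool \<Rightarrow> real \<times> (real^'k) \<Rightarrow> real" where
  "hc h a \<equiv> (\<lambda>x. h (fst x, a, snd x))"

lemma L2_int:
  assumes f[measurable]: "f \<in> borel_measurable (nu a)"
    and fin: "(\<integral>\<^sup>+ x. ennreal ((f x)^2 * qm q0 a x) \<partial>nu a) < \<infinity>"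
  shows "integrable (nu a) (\<lambda>x. (f x)^2 * qm q0 a x)"
    "integrable (nu a) (\<lambda>x. f x * qm q0 a x)"
    "integrable (nu a) (\<lambda>x. \<bar>f x\<bar> * qm q0 a x)"
    "(\<integral>x. f x * qm q0 a x \<partial>nu a)^2 \<le> (\<integral>x. (f x)^2 * qm q0 a x \<partial>nu a)"
    "(\<integral>x. \<bar>f x\<bar> * qm q0 a x \<partial>nu a)^2 \<le> (\<integral>x. (f x)^2 * qm q0 a x \<partial>nu a)"
proof -
  note q0m[measurable]
  show i2: "integrable (nu a) (\<lambda>x. (f x)^2 * qm q0 a x)"
    using fin by (intro integrableI_nonneg) (auto simp: qm_nonneg)
  show "integrable (nu a) (\<lambda>x. f x * qm q0 a x)"
    using CS_real[OF f qm_nonneg q0int(1) i2] by simp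
  show "(\<integral>x. f x * qm q0 a x \<partial>nu a)^2 \<le> (\<integral>x. (f x)^2 * qm q0 a x \<partial>nu a)"
    using CS_real[OF f qm_nonneg q0int(1) i2] q0int(2) by simp
  have fa: "(\<lambda>x. \<bar>f x\<bar>) \<in> borel_measurable (nu a)" by measurable
  have i2': "integrable (nu a) (\<lambda>x. (\<bar>f x\<bar>)^2 * qm q0 a x)" using i2 by simp
  show "integrable (nu a) (\<lambda>x. \<bar>f x\<bar> * qm q0 a x)"
    using CS_real[OF fa qm_nonneg q0int(1) i2'] by simp
  show "(\<integral>x. \<bar>f x\<bar> * qm q0 a x \<partial>nu a)^2 \<le> (\<integral>x. (f x)^2 * qm q0 a x \<partial>nu a)"
    using CS_real[OF fa qm_nonneg q0int(1) i2'] q0int(2) by simp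
qed

lemma L2P_D:
  assumes "h \<in> L2P mu0 mu1 muZ ppi S q0"
  shows "hc h a \<in> borel_measurable (nu a)"
    "(\<integral>\<^sup>+ x. ennreal ((hc h a x)^2 * qm q0 a x) \<partial>nu a) < \<infinity>"
proof -
  show hm: "hc h a \<in> borel_measurable (nu a)" using assms by (simp add: L2P_def)
  have hm2: "(\<lambda>x. (h (fst x, a, snd x))^2) \<in> borel_measurable (nu a)" using hm by measurable
  have P: "Pnn mu0 mu1 muZ ppi S q0 (\<lambda>w. (h w)^2) < \<infinity>" using assms by (simp add: L2P_def)
  have "ennreal pmin * (\<integral>\<^sup>+ x. ennreal ((hc h a x)^2 * qm q0 a x) \<partial>nu a) < \<infinity>"
    using Pa_lower[of "\<lambda>w. (h w)^2" a, OF _ hm2] Pa_le[of a "\<lambda>w. (h w)^2"] P by simp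
  then show "(\<integral>\<^sup>+ x. ennreal ((hc h a x)^2 * qm q0 a x) \<partial>nu a) < \<infinity>"
    using pmin_pos by (auto simp add: ennreal_mult_less_top)
qed

end

lemma abs_int_le_nn:
  fixes f :: "'a \<Rightarrow> real"
  shows "ennreal \<bar>\<integral>x. f x \<partial>M\<bar> \<le> (\<integral>\<^sup>+x. ennreal \<bar>f x\<bar> \<partial>M)"
proof (cases "integrable M f")
  case True
  then show ?thesis using integral_norm_bound_ennreal[OF True] by simp
next
  case False
  then show ?thesis by (simp add: not_integrable_integral_eq)
qed

context L4 begin

definition RHS where
  "RHS = {h \<in> L2P mu0 mu1 muZ ppi S q0.
       (\<forall>a. (\<integral> x. h (fst x, a, snd x) * qmarg mu0 mu1 q0 a x \<partial>nuM mu0 mu1 muZ a) = 0) \<and>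
       (AE z in muZ. (\<integral> y. h (y, True, z) * qmarg mu0 mu1 q0 True (y, z) \<partial>mu1)
                   = (\<integral> y. h (y, False, z) * qmarg mu0 mu1 q0 False (y, z) \<partial>mu0))}"

lemma L2P_iff:
  "h \<in> L2P mu0 mu1 muZ ppi S q0 \<longleftrightarrow>
     (\<forall>a. hc h a \<in> borel_measurable (nu a) \<and> integrable (nu a) (\<lambda>x. (hc h a x)^2 * qm q0 a x))"
proof
  assume h: "h \<in> L2P mu0 mu1 muZ ppi S q0"
  show "\<forall>a. hc h a \<in> borel_measurable (nu a) \<and> integrable (nu a) (\<lambda>x. (hc h a x)^2 * qm q0 a x)"
    using L2P_D[OF h] L2_int by blast
next
  assume A: "\<forall>a. hc h a \<in> borel_measurable (nu a) \<and> integrable (nu a) (\<lambda>x. (hc h a x)^2 * qm q0 a x)"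
  have "Pa a (\<lambda>w. (h w)^2) < \<infinity>" for a
  proof -
    have "Pa a (\<lambda>w. (h w)^2) \<le> (\<integral>\<^sup>+ x. ennreal ((hc h a x)^2 * qm q0 a x) \<partial>nu a)"
      unfolding Pa_def
    proof (intro nn_integral_mono ennreal_leI)
      fix x
      have "0 \<le> (hc h a x)^2 * qm q0 a x" by (intro mult_nonneg_nonneg zero_le_power2 qm_nonneg)
      then show "(h (fst x, a, snd x))^2 * qm q0 a x * pwz a (snd x) \<le> (hc h a x)^2 * qm q0 a x"
        using pw_le1[of a "snd x"] by (simp add: mult_left_le)
    qed
    also have "\<dots> = ennreal (\<integral>x. (hc h a x)^2 * qm q0 a x \<partial>nu a)"
      using A by (intro nn_integral_eq_integral) (auto intro!: mult_nonneg_nonneg qm_nonneg)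
    also have "\<dots> < \<infinity>" by simp
    finally show ?thesis .
  qed
  then show "h \<in> L2P mu0 mu1 muZ ppi S q0"
    using A by (simp add: L2P_def Pnn_split)
qed

lemma L2P_lin:
  assumes f: "f \<in> L2P mu0 mu1 muZ ppi S q0" and g: "g \<in> L2P mu0 mu1 muZ ppi S q0"
  shows "(\<lambda>w. c * f w + d * g w) \<in> L2P mu0 mu1 muZ ppi S q0"
  unfolding L2P_iff
proof
  fix a
  have fm[measurable]: "hc f a \<in> borel_measurable (nu a)" and gm[measurable]: "hc g a \<in> borel_measurable (nu a)"
    using f g by (auto simp: L2P_iff)
  have fi: "integrable (nu a) (\<lambda>x. (hc f a x)^2 * qm q0 a x)"
    and gi: "integrable (nu a) (\<lambda>x. (hc g a x)^2 * qm q0 a x)" using f g by (auto simp: L2P_iff)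
  note q0m[measurable]
  show "hc (\<lambda>w. c * f w + d * g w) a \<in> borel_measurable (nu a) \<and>
        integrable (nu a) (\<lambda>x. (hc (\<lambda>w. c * f w + d * g w) a x)^2 * qm q0 a x)"
  proof
    show "hc (\<lambda>w. c * f w + d * g w) a \<in> borel_measurable (nu a)" by measurable
    have bi: "integrable (nu a) (\<lambda>x. 2 * c^2 * ((hc f a x)^2 * qm q0 a x) + 2 * d^2 * ((hc g a x)^2 * qm q0 a x))"
      using fi gi by simp
    show "integrable (nu a) (\<lambda>x. (hc (\<lambda>w. c * f w + d * g w) a x)^2 * qm q0 a x)"
    proof (rule Bochner_Integration.integrable_bound[OF bi])
      show "(\<lambda>x. (hc (\<lambda>w. c * f w + d * g w) a x)^2 * qm q0 a x) \<in> borel_measurable (nu a)" by measurable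
      show "AE x in nu a. norm ((hc (\<lambda>w. c * f w + d * g w) a x)^2 * qm q0 a x)
          \<le> norm (2 * c^2 * ((hc f a x)^2 * qm q0 a x) + 2 * d^2 * ((hc g a x)^2 * qm q0 a x))"
      proof (intro AE_I2)
        fix x
        let ?u = "hc f a x" and ?v = "hc g a x" and ?q = "qm q0 a x"
        have q: "0 \<le> ?q" by (rule qm_nonneg)
        have "(c * ?u + d * ?v)^2 \<le> 2 * c^2 * ?u^2 + 2 * d^2 * ?v^2"
        proof -
          have "0 \<le> (c * ?u - d * ?v)^2" by simp
          then show ?thesis by (simp add: power2_eq_square algebra_simps)
        qed
        then have "(c * ?u + d * ?v)^2 * ?q \<le> (2 * c^2 * ?u^2 + 2 * d^2 * ?v^2) * ?q"
          using q by (rule mult_right_mono)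
        then show "norm ((hc (\<lambda>w. c * f w + d * g w) a x)^2 * ?q) \<le> norm (2 * c^2 * (?u^2 * ?q) + 2 * d^2 * (?v^2 * ?q))"
          using q by (simp add: algebra_simps)
      qed
    qed
  qed
qed

lemma L2P_hint:
  assumes h: "h \<in> L2P mu0 mu1 muZ ppi S q0"
  shows "integrable (nu a) (\<lambda>x. hc h a x * qm q0 a x)"
  using L2P_D[OF h] L2_int by blast

lemma sec_meas:
  fixes F :: "real \<times> (real^'k) \<Rightarrow> real"
  assumes F: "F \<in> borel_measurable (nu a)"
  shows "(\<lambda>z. \<integral>y. F (y, z) \<partial>MM a) \<in> borel_measurable muZ"
proof -
  interpret P: pair_sigma_finite "MM a" muZ by (rule psf)
  have F'[measurable]: "F \<in> borel_measurable (MM a \<Otimes>\<^sub>M muZ)" using F by (simp add: nu_eq)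
  have "case_prod (\<lambda>z y. F (y, z)) \<in> borel_measurable (muZ \<Otimes>\<^sub>M MM a)" by measurable
  then show ?thesis by (rule P.M1.borel_measurable_lebesgue_integral)
qed

lemma sec_integrable:
  fixes F :: "real \<times> (real^'k) \<Rightarrow> real"
  assumes F: "integrable (nu a) F"
  shows "AE z in muZ. integrable (MM a) (\<lambda>y. F (y, z))"
proof -
  interpret P: pair_sigma_finite "MM a" muZ by (rule psf)
  have "integrable (MM a \<Otimes>\<^sub>M muZ) (case_prod (\<lambda>y z. F (y, z)))" using F by (simp add: nu_eq)
  then show ?thesis by (rule P.AE_integrable_snd)
qed

lemma L2P_sec:
  assumes h: "h \<in> L2P mu0 mu1 muZ ppi S q0"
  shows "AE z in muZ. integrable (MM a) (\<lambda>y. h (y, a, z) * qm q0 a (y, z))"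
  using sec_integrable[OF L2P_hint[OF h, of a]] by simp

lemma RHS_lin:
  assumes f: "f \<in> RHS" and g: "g \<in> RHS"
  shows "(\<lambda>w. c * f w + d * g w) \<in> RHS"
proof -
  have fL: "f \<in> L2P mu0 mu1 muZ ppi S q0" and gL: "g \<in> L2P mu0 mu1 muZ ppi S q0"
    using f g by (auto simp: RHS_def)
  have A: "(\<integral> x. (c * f (fst x, a, snd x) + d * g (fst x, a, snd x)) * qm q0 a x \<partial>nu a) = 0" for a
  proof -
    have "(\<integral> x. (c * f (fst x, a, snd x) + d * g (fst x, a, snd x)) * qm q0 a x \<partial>nu a)
        = (\<integral> x. c * (hc f a x * qm q0 a x) + d * (hc g a x * qm q0 a x) \<partial>nu a)"
      by (simp add: algebra_simps)
    also have "\<dots> = c * (\<integral> x. hc f a x * qm q0 a x \<partial>nu a) + d * (\<integral> x. hc g a x * qm q0 a x \<partial>nu a)"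
      using L2P_hint[OF fL, of a] L2P_hint[OF gL, of a] by simp
    also have "\<dots> = 0" using f g by (simp add: RHS_def)
    finally show ?thesis .
  qed
  have "AE z in muZ. integrable (MM a) (\<lambda>y. f (y, a, z) * qm q0 a (y, z))
      \<and> integrable (MM a) (\<lambda>y. g (y, a, z) * qm q0 a (y, z))" for a
    using L2P_sec[OF fL, of a] L2P_sec[OF gL, of a] by eventually_elim simp
  note sec = this
  have fb: "AE z in muZ. (\<integral> y. f (y, True, z) * qm q0 True (y, z) \<partial>mu1) = (\<integral> y. f (y, False, z) * qm q0 False (y, z) \<partial>mu0)"
    using f by (simp add: RHS_def)
  have gb: "AE z in muZ. (\<integral> y. g (y, True, z) * qm q0 True (y, z) \<partial>mu1) = (\<integral> y. g (y, False, z) * qm q0 False (y, z) \<partial>mu0)"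
    using g by (simp add: RHS_def)
  have B: "AE z in muZ. (\<integral> y. (c * f (y, True, z) + d * g (y, True, z)) * qm q0 True (y, z) \<partial>mu1)
       = (\<integral> y. (c * f (y, False, z) + d * g (y, False, z)) * qm q0 False (y, z) \<partial>mu0)"
    using sec[of True] sec[of False] fb gb
  proof eventually_elim
    case (elim z)
    then show ?case by (simp add: MM_def algebra_simps)
  qed
  show ?thesis using L2P_lin[OF fL gL] A B by (simp add: RHS_def)
qed

lemma RHS_zero: "(\<lambda>w. 0) \<in> RHS"
proof -
  have "(\<lambda>w. 0) \<in> L2P mu0 mu1 muZ ppi S q0" by (simp add: L2P_iff)
  then show ?thesis by (simp add: RHS_def)
qed

lemma lin_span_RHS:
  assumes A: "A \<subseteq> RHS"
  shows "lin_span A \<subseteq> RHS"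
proof
  fix g assume "g \<in> lin_span A"
  then have "\<exists>(n::nat) c f. (\<forall>i<n. f i \<in> A) \<and> g = (\<lambda>w. \<Sum>i<n. c i * f i w)" by (simp add: lin_span_def)
  then obtain n :: nat and c f where f: "\<forall>i<n. f i \<in> A" and g: "g = (\<lambda>w. \<Sum>i<n. c i * f i w)"
    by blast
  have "(\<lambda>w. \<Sum>i<m. c i * f i w) \<in> RHS" if "m \<le> n" for m
    using that
  proof (induction m)
    case 0
    then show ?case using RHS_zero by simp
  next
    case (Suc m)
    have "(\<lambda>w. 1 * (\<Sum>i<m. c i * f i w) + c m * f m w) \<in> RHS"
      using Suc f A by (intro RHS_lin) auto
    then show ?case by simp
  qed
  then show "g \<in> RHS" using g by simp
qed

lemma err_bound:
  assumes f: "f \<in> L2P mu0 mu1 muZ ppi S q0" and P: "Pnn mu0 mu1 muZ ppi S q0 (\<lambda>w. (f w)^2) < ennreal e"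
  shows "(\<integral>x. (hc f a x)^2 * qm q0 a x \<partial>nu a) \<le> e / pmin"
proof -
  have fm[measurable]: "hc f a \<in> borel_measurable (nu a)" using L2P_D[OF f] by simp
  have i: "integrable (nu a) (\<lambda>x. (hc f a x)^2 * qm q0 a x)" using L2P_iff f by blast
  have "ennreal pmin * (\<integral>\<^sup>+ x. ennreal ((hc f a x)^2 * qm q0 a x) \<partial>nu a) < ennreal e"
    using Pa_lower[of "\<lambda>w. (f w)^2" a] Pa_le[of a "\<lambda>w. (f w)^2"] P by (auto intro: order.strict_trans1)
  also have "(\<integral>\<^sup>+ x. ennreal ((hc f a x)^2 * qm q0 a x) \<partial>nu a) = ennreal (\<integral>x. (hc f a x)^2 * qm q0 a x \<partial>nu a)"
    using i by (intro nn_integral_eq_integral) (auto intro!: mult_nonneg_nonneg qm_nonneg)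
  moreover have I0: "0 \<le> (\<integral>x. (hc f a x)^2 * qm q0 a x \<partial>nu a)"
    by (intro Bochner_Integration.integral_nonneg mult_nonneg_nonneg zero_le_power2 qm_nonneg)
  ultimately have "ennreal (pmin * (\<integral>x. (hc f a x)^2 * qm q0 a x \<partial>nu a)) < ennreal e"
    using pmin_pos by (subst ennreal_mult) auto
  then have "pmin * (\<integral>x. (hc f a x)^2 * qm q0 a x \<partial>nu a) < e"
    using I0 pmin_pos by (subst (asm) ennreal_less_iff) auto
  then show ?thesis using pmin_pos by (simp add: field_simps)
qed

definition Delta :: "(real \<times> bool \<times> (real^'k) \<Rightarrow> real) \<Rightarrow> (real^'k) \<Rightarrow> real" where
  "Delta f z = (\<integral> y. f (y, True, z) * qm q0 True (y, z) \<partial>mu1) - (\<integral> y. f (y, False, z) * qm q0 False (y, z) \<partial>mu0)"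

lemma Delta_meas:
  assumes f: "f \<in> L2P mu0 mu1 muZ ppi S q0"
  shows "Delta f \<in> borel_measurable muZ"
proof -
  have "(\<lambda>z. \<integral>y. hc f a (y, z) * qm q0 a (y, z) \<partial>MM a) \<in> borel_measurable muZ" for a
    using L2P_hint[OF f, of a] by (intro sec_meas) auto
  from this[of True] this[of False] show ?thesis
    unfolding Delta_def[abs_def] by (simp add: MM_def)
qed

lemma Delta_bound:
  assumes f: "f \<in> L2P mu0 mu1 muZ ppi S q0"
  shows "(\<integral>\<^sup>+z. ennreal \<bar>Delta f z\<bar> \<partial>muZ) \<le>
      ennreal (\<integral>x. \<bar>hc f True x\<bar> * qm q0 True x \<partial>nu True) + ennreal (\<integral>x. \<bar>hc f False x\<bar> * qm q0 False x \<partial>nu False)"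
proof -
  note q0m[measurable]
  have fm[measurable]: "hc f a \<in> borel_measurable (nu a)" for a using L2P_D[OF f] by simp
  have I: "(\<integral>\<^sup>+x. ennreal (\<bar>hc f a x\<bar> * qm q0 a x) \<partial>nu a) = ennreal (\<integral>x. \<bar>hc f a x\<bar> * qm q0 a x \<partial>nu a)" for a
    using L2_int(3)[OF L2P_D[OF f]] by (intro nn_integral_eq_integral) (auto intro!: mult_nonneg_nonneg qm_nonneg)
  have m: "(\<lambda>x. ennreal (\<bar>hc f a x\<bar> * qm q0 a x)) \<in> borel_measurable (nu a)" for a by measurable
  have Tza: "(\<integral>\<^sup>+x. ennreal (\<bar>hc f a x\<bar> * qm q0 a x) \<partial>nu a)
      = (\<integral>\<^sup>+z. (\<integral>\<^sup>+y. ennreal (\<bar>f (y, a, z)\<bar> * qm q0 a (y, z)) \<partial>MM a) \<partial>muZ)" for a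
    using Tz[OF m[of a]] by simp
  have mz: "(\<lambda>z. \<integral>\<^sup>+y. ennreal (\<bar>f (y, a, z)\<bar> * qm q0 a (y, z)) \<partial>MM a) \<in> borel_measurable muZ" for a
  proof -
    interpret P: pair_sigma_finite "MM a" muZ by (rule psf)
    define G where "G = (\<lambda>x. ennreal (\<bar>hc f a x\<bar> * qm q0 a x))"
    have G[measurable]: "G \<in> borel_measurable (MM a \<Otimes>\<^sub>M muZ)"
      using m[of a] by (simp add: nu_eq G_def)
    have "(\<lambda>x. G (snd x, fst x)) \<in> borel_measurable (muZ \<Otimes>\<^sub>M MM a)" by measurable
    then have "case_prod (\<lambda>z y. ennreal (\<bar>f (y, a, z)\<bar> * qm q0 a (y, z))) \<in> borel_measurable (muZ \<Otimes>\<^sub>M MM a)"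
      by (simp add: split_beta' G_def)
    then show ?thesis by (rule P.M1.borel_measurable_nn_integral)
  qed
  have "(\<integral>\<^sup>+z. ennreal \<bar>Delta f z\<bar> \<partial>muZ) \<le>
     (\<integral>\<^sup>+z. (\<integral>\<^sup>+y. ennreal (\<bar>f (y, True, z)\<bar> * qm q0 True (y, z)) \<partial>MM True)
            + (\<integral>\<^sup>+y. ennreal (\<bar>f (y, False, z)\<bar> * qm q0 False (y, z)) \<partial>MM False) \<partial>muZ)"
  proof (intro nn_integral_mono)
    fix z
    let ?A = "(\<integral> y. f (y, True, z) * qm q0 True (y, z) \<partial>mu1)"
    let ?B = "(\<integral> y. f (y, False, z) * qm q0 False (y, z) \<partial>mu0)"
    have "ennreal \<bar>Delta f z\<bar> \<le> ennreal (\<bar>?A\<bar> + \<bar>?B\<bar>)"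
      unfolding Delta_def by (intro ennreal_leI) simp
    also have "\<dots> = ennreal \<bar>?A\<bar> + ennreal \<bar>?B\<bar>" by (simp add: ennreal_plus)
    also have "\<dots> \<le> (\<integral>\<^sup>+y. ennreal \<bar>f (y, True, z) * qm q0 True (y, z)\<bar> \<partial>mu1)
        + (\<integral>\<^sup>+y. ennreal \<bar>f (y, False, z) * qm q0 False (y, z)\<bar> \<partial>mu0)"
      by (intro add_mono abs_int_le_nn)
    also have "\<dots> = (\<integral>\<^sup>+y. ennreal (\<bar>f (y, True, z)\<bar> * qm q0 True (y, z)) \<partial>MM True)
            + (\<integral>\<^sup>+y. ennreal (\<bar>f (y, False, z)\<bar> * qm q0 False (y, z)) \<partial>MM False)"
      by (simp add: MM_def abs_mult qm_nonneg)
    finally show "ennreal \<bar>Delta f z\<bar> \<le> \<dots>" .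
  qed
  also have "\<dots> = (\<integral>\<^sup>+x. ennreal (\<bar>hc f True x\<bar> * qm q0 True x) \<partial>nu True)
      + (\<integral>\<^sup>+x. ennreal (\<bar>hc f False x\<bar> * qm q0 False x) \<partial>nu False)"
    unfolding Tza using mz by (intro nn_integral_add) auto
  finally show ?thesis unfolding I .
qed

end

context L4 begin

lemma L2P_diff:
  assumes "f \<in> L2P mu0 mu1 muZ ppi S q0" "g \<in> L2P mu0 mu1 muZ ppi S q0"
  shows "(\<lambda>w. f w - g w) \<in> L2P mu0 mu1 muZ ppi S q0"
  using L2P_lin[OF assms, of 1 "-1"] by simp

lemma L1_small:
  assumes d: "d \<in> L2P mu0 mu1 muZ ppi S q0" and P: "Pnn mu0 mu1 muZ ppi S q0 (\<lambda>w. (d w)^2) < ennreal e"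
  shows "(\<integral>x. \<bar>hc d a x\<bar> * qm q0 a x \<partial>nu a) \<le> sqrt (e / pmin)"
    "\<bar>\<integral>x. hc d a x * qm q0 a x \<partial>nu a\<bar> \<le> sqrt (e / pmin)"
proof -
  have e2: "(\<integral>x. (hc d a x)^2 * qm q0 a x \<partial>nu a) \<le> e / pmin" by (rule err_bound[OF d P])
  have "(\<integral>x. \<bar>hc d a x\<bar> * qm q0 a x \<partial>nu a)^2 \<le> e / pmin"
    using L2_int(5)[OF L2P_D[OF d, of a]] e2 by linarith
  then show "(\<integral>x. \<bar>hc d a x\<bar> * qm q0 a x \<partial>nu a) \<le> sqrt (e / pmin)"
    using real_le_rsqrt by blast
  have "(\<integral>x. hc d a x * qm q0 a x \<partial>nu a)^2 \<le> e / pmin"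
    using L2_int(4)[OF L2P_D[OF d, of a]] e2 by linarith
  then show "\<bar>\<integral>x. hc d a x * qm q0 a x \<partial>nu a\<bar> \<le> sqrt (e / pmin)"
    using real_sqrt_le_mono by fastforce
qed

lemma RHS_closed:
  assumes h: "h \<in> L2P mu0 mu1 muZ ppi S q0"
    and approx: "\<And>e. e > 0 \<Longrightarrow> \<exists>g\<in>RHS. Pnn mu0 mu1 muZ ppi S q0 (\<lambda>w. (h w - g w)^2) < ennreal e"
  shows "h \<in> RHS"
proof -
  have gL: "g \<in> RHS \<Longrightarrow> g \<in> L2P mu0 mu1 muZ ppi S q0" for g by (simp add: RHS_def)
  have A: "(\<integral> x. hc h a x * qm q0 a x \<partial>nu a) = 0" for a
  proof (rule ccontr)
    define I where "I = (\<integral> x. hc h a x * qm q0 a x \<partial>nu a)"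
    assume "\<not> ?thesis"
    then have I0: "I \<noteq> 0" by (simp add: I_def)
    define e where "e = pmin * (I / 2)^2"
    have ep: "e > 0" using I0 pmin_pos by (simp add: e_def)
    obtain g where g: "g \<in> RHS" and P: "Pnn mu0 mu1 muZ ppi S q0 (\<lambda>w. (h w - g w)^2) < ennreal e"
      using approx[OF ep] by blast
    have dL: "(\<lambda>w. h w - g w) \<in> L2P mu0 mu1 muZ ppi S q0" by (rule L2P_diff[OF h gL[OF g]])
    have "(\<integral> x. hc (\<lambda>w. h w - g w) a x * qm q0 a x \<partial>nu a)
        = (\<integral> x. hc h a x * qm q0 a x - hc g a x * qm q0 a x \<partial>nu a)"
      by (simp add: left_diff_distrib)
    also have "\<dots> = I - (\<integral> x. hc g a x * qm q0 a x \<partial>nu a)"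
      unfolding I_def using L2P_hint[OF h, of a] L2P_hint[OF gL[OF g], of a] by simp
    also have "(\<integral> x. hc g a x * qm q0 a x \<partial>nu a) = 0" using g by (simp add: RHS_def)
    finally have "\<bar>I\<bar> \<le> sqrt (e / pmin)" using L1_small(2)[OF dL P, of a] by simp
    also have "sqrt (e / pmin) = \<bar>I\<bar> / 2" using pmin_pos by (simp add: e_def real_sqrt_divide)
    finally show False using I0 by simp
  qed
  have Dm: "Delta h \<in> borel_measurable muZ" by (rule Delta_meas[OF h])
  have "(\<integral>\<^sup>+z. ennreal \<bar>Delta h z\<bar> \<partial>muZ) \<le> 0"
  proof (rule ennreal_le_epsilon)
    fix eps :: real assume epsp: "0 < eps"
    define e where "e = pmin * (eps / 2)^2"
    have ep: "e > 0" using epsp pmin_pos by (simp add: e_def)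
    obtain g where g: "g \<in> RHS" and P: "Pnn mu0 mu1 muZ ppi S q0 (\<lambda>w. (h w - g w)^2) < ennreal e"
      using approx[OF ep] by blast
    have dL: "(\<lambda>w. h w - g w) \<in> L2P mu0 mu1 muZ ppi S q0" by (rule L2P_diff[OF h gL[OF g]])
    have gb: "AE z in muZ. (\<integral> y. g (y, True, z) * qm q0 True (y, z) \<partial>mu1) = (\<integral> y. g (y, False, z) * qm q0 False (y, z) \<partial>mu0)"
      using g by (simp add: RHS_def)
    have "AE z in muZ. Delta h z = Delta (\<lambda>w. h w - g w) z"
      using L2P_sec[OF h, of True] L2P_sec[OF h, of False] L2P_sec[OF gL[OF g], of True]
        L2P_sec[OF gL[OF g], of False] gb
    proof eventually_elim
      case (elim z)
      then show ?case by (simp add: Delta_def MM_def left_diff_distrib)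
    qed
    then have "(\<integral>\<^sup>+z. ennreal \<bar>Delta h z\<bar> \<partial>muZ) = (\<integral>\<^sup>+z. ennreal \<bar>Delta (\<lambda>w. h w - g w) z\<bar> \<partial>muZ)"
      by (intro nn_integral_cong_AE) (auto elim!: eventually_mono)
    also have "\<dots> \<le> ennreal (\<integral>x. \<bar>hc (\<lambda>w. h w - g w) True x\<bar> * qm q0 True x \<partial>nu True)
        + ennreal (\<integral>x. \<bar>hc (\<lambda>w. h w - g w) False x\<bar> * qm q0 False x \<partial>nu False)"
      by (rule Delta_bound[OF dL])
    also have "\<dots> \<le> ennreal (sqrt (e / pmin)) + ennreal (sqrt (e / pmin))"
      by (intro add_mono ennreal_leI L1_small(1)[OF dL P])
    also have "\<dots> = ennreal eps" using pmin_pos epsp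
      by (simp add: e_def real_sqrt_divide ennreal_plus[symmetric] del: ennreal_plus)
    finally show "(\<integral>\<^sup>+z. ennreal \<bar>Delta h z\<bar> \<partial>muZ) \<le> 0 + ennreal eps" by simp
  qed
  then have "(\<integral>\<^sup>+z. ennreal \<bar>Delta h z\<bar> \<partial>muZ) = 0" by simp
  then have "AE z in muZ. ennreal \<bar>Delta h z\<bar> = 0"
    using Dm by (subst (asm) nn_integral_0_iff_AE) auto
  then have B: "AE z in muZ. Delta h z = 0" by (auto elim!: eventually_mono)
  show ?thesis using h A B unfolding RHS_def Delta_def by simp
qed

end

lemma amgm_lam:
  fixes E X l :: real
  assumes "l > 0"
  shows "\<bar>E * X\<bar> \<le> E^2 / (2 * l) + l * X^2 / 2"
proof -
  have "0 \<le> (\<bar>E\<bar> - l * \<bar>X\<bar>)^2" by simp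
  then have "2 * l * (\<bar>E\<bar> * \<bar>X\<bar>) \<le> E^2 + l^2 * X^2"
    by (simp add: power2_eq_square algebra_simps)
  then have "\<bar>E\<bar> * \<bar>X\<bar> \<le> (E^2 + l^2 * X^2) / (2 * l)"
    using assms by (simp add: field_simps)
  also have "(E^2 + l^2 * X^2) / (2 * l) = E^2 / (2 * l) + l * X^2 / 2"
    using assms by (simp add: field_simps power2_eq_square)
  finally show ?thesis by (simp add: abs_mult)
qed

lemma sq3: "((a::real) + b + c)^2 \<le> 3 * (a^2 + b^2 + c^2)"
proof -
  have "0 \<le> (a - b)^2 + (b - c)^2 + (a - c)^2" by simp
  then show ?thesis by (simp add: power2_eq_square algebra_simps)
qed

lemma ptwise_bound:
  fixes R Q D t l :: real
  assumes "l > 0"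
  shows "\<bar>R^2 - Q^2 - 2 * t * D * Q\<bar> \<le> (R - Q - t * D)^2 / (2 * l) + 3 * l / 2 * (R^2 + Q^2 + t^2 * D^2) + t^2 * D^2"
proof -
  let ?E = "R - Q - t * D" and ?X = "R + Q + t * D"
  have id: "R^2 - Q^2 - 2 * t * D * Q = ?E * ?X + t^2 * D^2"
    by (simp add: power2_eq_square algebra_simps)
  have c1: "\<bar>?E * ?X\<bar> \<le> ?E^2 / (2 * l) + l * ?X^2 / 2" by (rule amgm_lam[OF assms])
  have "?X^2 \<le> 3 * (R^2 + Q^2 + (t * D)^2)" by (rule sq3)
  then have "l * ?X^2 \<le> l * (3 * (R^2 + Q^2 + t^2 * D^2))"
    using assms by (intro mult_left_mono) (auto simp: power_mult_distrib)
  then have c2: "l * ?X^2 / 2 \<le> 3 * l / 2 * (R^2 + Q^2 + t^2 * D^2)" by (simp add: algebra_simps)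
  have "\<bar>?E * ?X\<bar> \<le> ?E^2 / (2 * l) + 3 * l / 2 * (R^2 + Q^2 + t^2 * D^2)"
    using c1 c2 by linarith
  moreover have "\<bar>?E * ?X + t^2 * D^2\<bar> \<le> \<bar>?E * ?X\<bar> + t^2 * D^2"
    by (rule order.trans[OF abs_triangle_ineq]) simp
  ultimately show ?thesis unfolding id by linarith
qed

lemma DQM_core:
  fixes R Q Dd :: "'a \<Rightarrow> real"
  assumes Rm[measurable]: "R \<in> borel_measurable N" and Qm[measurable]: "Q \<in> borel_measurable N"
    and Dm[measurable]: "Dd \<in> borel_measurable N"
    and iR: "integrable N (\<lambda>x. (R x)^2)" and iQ: "integrable N (\<lambda>x. (Q x)^2)"
    and iD: "integrable N (\<lambda>x. (Dd x)^2)"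
    and R1: "(\<integral>x. (R x)^2 \<partial>N) = 1" and Q1: "(\<integral>x. (Q x)^2 \<partial>N) = 1"
    and DK: "(\<integral>x. (Dd x)^2 \<partial>N) \<le> K" and Kp: "0 < K" and ep: "0 < eps"
    and tp: "0 < t" and t1: "t \<le> 1" and tK: "t * (4 * K) \<le> eps"
    and nnE: "(\<integral>\<^sup>+x. ennreal ((R x - Q x - t * Dd x)^2) \<partial>N) \<le> ennreal (eps / (3 * (2 + K)) * eps / 2 * t^2)"
  shows "integrable N (\<lambda>x. \<bar>(R x)^2 - (Q x)^2 - 2 * t * Dd x * Q x\<bar>)"
    "(\<integral>x. \<bar>(R x)^2 - (Q x)^2 - 2 * t * Dd x * Q x\<bar> \<partial>N) \<le> t * eps"
proof -
  define mu where "mu = eps / (3 * (2 + K))"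
  define e0 where "e0 = mu * eps / 2"
  define l where "l = t * mu"
  have mup: "mu > 0" using ep Kp by (simp add: mu_def)
  have lp: "l > 0" using tp mup by (simp add: l_def)
  have iE: "integrable N (\<lambda>x. (R x - Q x - t * Dd x)^2)"
  proof (rule integrableI_nonneg)
    show "(\<integral>\<^sup>+x. ennreal ((R x - Q x - t * Dd x)^2) \<partial>N) < \<infinity>"
      using nnE by (simp add: order.strict_trans1)
  qed auto
  have E2: "(\<integral>x. (R x - Q x - t * Dd x)^2 \<partial>N) \<le> e0 * t^2"
  proof -
    have "ennreal (\<integral>x. (R x - Q x - t * Dd x)^2 \<partial>N) = (\<integral>\<^sup>+x. ennreal ((R x - Q x - t * Dd x)^2) \<partial>N)"
      using iE by (intro nn_integral_eq_integral[symmetric]) auto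
    also have "\<dots> \<le> ennreal (e0 * t^2)" using nnE by (simp add: e0_def mu_def)
    finally show ?thesis using ep mup tp by (subst (asm) ennreal_le_iff) (auto simp: e0_def)
  qed
  define B where "B x = (R x - Q x - t * Dd x)^2 / (2 * l) + 3 * l / 2 * ((R x)^2 + (Q x)^2 + t^2 * (Dd x)^2) + t^2 * (Dd x)^2" for x
  have iB: "integrable N B" unfolding B_def using iE iR iQ iD by simp
  have Bint: "(\<integral>x. B x \<partial>N) = (\<integral>x. (R x - Q x - t * Dd x)^2 \<partial>N) / (2 * l)
      + 3 * l / 2 * (1 + 1 + t^2 * (\<integral>x. (Dd x)^2 \<partial>N)) + t^2 * (\<integral>x. (Dd x)^2 \<partial>N)"
    unfolding B_def using iE iR iQ iD R1 Q1 by simp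
  have pw: "\<bar>(R x)^2 - (Q x)^2 - 2 * t * Dd x * Q x\<bar> \<le> B x" for x
    unfolding B_def by (rule ptwise_bound[OF lp])
  show iG: "integrable N (\<lambda>x. \<bar>(R x)^2 - (Q x)^2 - 2 * t * Dd x * Q x\<bar>)"
  proof (rule Bochner_Integration.integrable_bound[OF iB])
    show "(\<lambda>x. \<bar>(R x)^2 - (Q x)^2 - 2 * t * Dd x * Q x\<bar>) \<in> borel_measurable N" by measurable
    have "norm (\<bar>(R x)^2 - (Q x)^2 - 2 * t * Dd x * Q x\<bar>) \<le> norm (B x)" for x
      using order.trans[OF pw abs_ge_self] by simp
    then show "AE x in N. norm (\<bar>(R x)^2 - (Q x)^2 - 2 * t * Dd x * Q x\<bar>) \<le> norm (B x)" by simp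
  qed
  have "(\<integral>x. \<bar>(R x)^2 - (Q x)^2 - 2 * t * Dd x * Q x\<bar> \<partial>N) \<le> (\<integral>x. B x \<partial>N)"
    by (rule integral_mono[OF iG iB pw])
  also have "\<dots> \<le> e0 * t^2 / (2 * l) + 3 * l / 2 * (2 + t^2 * K) + t^2 * K"
  proof -
    have D0: "0 \<le> (\<integral>x. (Dd x)^2 \<partial>N)" by simp
    have a1: "(\<integral>x. (R x - Q x - t * Dd x)^2 \<partial>N) / (2 * l) \<le> e0 * t^2 / (2 * l)"
      using E2 lp by (simp add: divide_right_mono)
    have a2: "3 * l / 2 * (1 + 1 + t^2 * (\<integral>x. (Dd x)^2 \<partial>N)) \<le> 3 * l / 2 * (2 + t^2 * K)"
      using DK lp by (intro mult_left_mono) (auto intro: mult_left_mono)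
    have a3: "t^2 * (\<integral>x. (Dd x)^2 \<partial>N) \<le> t^2 * K" using DK by (intro mult_left_mono) auto
    show ?thesis unfolding Bint using a1 a2 a3 by linarith
  qed
  also have "\<dots> \<le> t * eps"
  proof -
    have b1: "e0 * t^2 / (2 * l) = t * (eps / 4)"
      using tp mup by (simp add: e0_def l_def power2_eq_square field_simps)
    have t2: "t^2 \<le> 1" using tp t1 by (simp add: power_le_one)
    have "3 * l / 2 * (2 + t^2 * K) \<le> 3 * l / 2 * (2 + K)"
      using lp Kp t2 by (intro mult_left_mono) (auto simp: mult_left_le_one_le)
    also have "3 * l / 2 * (2 + K) = t * (eps / 2)"
      using Kp by (simp add: l_def mu_def field_simps)
    finally have b2: "3 * l / 2 * (2 + t^2 * K) \<le> t * (eps / 2)" .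
    have "t^2 * K = t * (t * K)" by (simp add: power2_eq_square)
    also have "\<dots> \<le> t * (eps / 4)" using tp tK by (intro mult_left_mono) auto
    finally have b3: "t^2 * K \<le> t * (eps / 4)" .
    have "t * (eps / 4) + t * (eps / 2) + t * (eps / 4) = t * eps" by (simp add: field_simps)
    then show ?thesis using b1 b2 b3 by linarith
  qed
  finally show "(\<integral>x. \<bar>(R x)^2 - (Q x)^2 - 2 * t * Dd x * Q x\<bar> \<partial>N) \<le> t * eps" .
qed


context L4 begin

lemma sec_meas_y:
  fixes F :: "real \<times> (real^'k) \<Rightarrow> 'b::topological_space"
  assumes F: "F \<in> borel_measurable (nu a)"
  shows "(\<lambda>y. F (y, z)) \<in> borel_measurable (MM a)"
proof -
  have F': "F \<in> borel_measurable (MM a \<Otimes>\<^sub>M muZ)" using F by (simp add: nu_eq)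
  show ?thesis by (rule measurable_Pair1[OF F']) simp
qed

lemma Qfam_compat_int:
  assumes q: "q \<in> Qfam mu0 mu1 muZ"
  shows "AE z in muZ. integrable mu1 (\<lambda>y. qm q True (y, z)) \<and> integrable mu0 (\<lambda>y. qm q False (y, z))
     \<and> (\<integral>y. qm q True (y, z) \<partial>mu1) = (\<integral>y. qm q False (y, z) \<partial>mu0)"
  using Qfam_compat[OF q]
proof eventually_elim
  case (elim z)
  have m1: "(\<lambda>y. qm q True (y, z)) \<in> borel_measurable mu1"
    using sec_meas_y[OF qm_meas[OF QfamD(1)[OF q]], of True z] by (simp add: MM_def)
  have m0: "(\<lambda>y. qm q False (y, z)) \<in> borel_measurable mu0"
    using sec_meas_y[OF qm_meas[OF QfamD(1)[OF q]], of False z] by (simp add: MM_def)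
  have i1: "integrable mu1 (\<lambda>y. qm q True (y, z))"
    using elim m1 by (intro integrableI_nonneg) (auto simp: qm_nonneg less_top)
  have i0: "integrable mu0 (\<lambda>y. qm q False (y, z))"
    using elim m0 by (intro integrableI_nonneg) (auto simp: qm_nonneg less_top)
  have "ennreal (\<integral>y. qm q True (y, z) \<partial>mu1) = ennreal (\<integral>y. qm q False (y, z) \<partial>mu0)"
    using elim i1 i0 by (subst (1 2) nn_integral_eq_integral[symmetric]) (auto simp: qm_nonneg)
  then have "(\<integral>y. qm q True (y, z) \<partial>mu1) = (\<integral>y. qm q False (y, z) \<partial>mu0)"
    by (subst (asm) ennreal_inj) (auto simp: qm_nonneg)
  then show ?case using i1 i0 by simp
qed

lemma score_q: "score mu0 mu1 q0 D j (y, a, z) * qm q0 a (y, z) = 2 * D a j (y, z) * sqrt (qm q0 a (y, z))"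
proof (cases "0 < qm q0 a (y, z)")
  case True
  then show ?thesis by (simp add: score_def field_simps)
next
  case False
  then have "qm q0 a (y, z) = 0" using qm_nonneg[of q0 a "(y, z)"] by simp
  then show ?thesis by (simp add: score_def)
qed

lemma score_sq: "(score mu0 mu1 q0 D j (y, a, z))^2 * qm q0 a (y, z) \<le> 4 * (D a j (y, z))^2"
proof (cases "0 < qm q0 a (y, z)")
  case True
  then have "(score mu0 mu1 q0 D j (y, a, z))^2 * qm q0 a (y, z) = 4 * (D a j (y, z))^2"
    by (simp add: score_def power_divide power_mult_distrib)
  then show ?thesis by simp
next
  case False
  then show ?thesis by (simp add: score_def)
qed

lemma score_L2P:
  assumes Dm: "\<And>a. D a j \<in> borel_measurable (nu a)" and Di: "\<And>a. integrable (nu a) (\<lambda>x. (D a j x)^2)"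
  shows "score mu0 mu1 q0 D j \<in> L2P mu0 mu1 muZ ppi S q0"
  unfolding L2P_iff
proof
  fix a
  note q0m[measurable] Dm[measurable]
  have e: "hc (score mu0 mu1 q0 D j) a = (\<lambda>x. if 0 < qm q0 a x then 2 * D a j x / sqrt (qm q0 a x) else 0)"
    by (auto simp: score_def)
  have m: "hc (score mu0 mu1 q0 D j) a \<in> borel_measurable (nu a)" unfolding e by measurable
  have "integrable (nu a) (\<lambda>x. (hc (score mu0 mu1 q0 D j) a x)^2 * qm q0 a x)"
  proof (rule Bochner_Integration.integrable_bound[where f="\<lambda>x. 4 * (D a j x)^2"])
    show "integrable (nu a) (\<lambda>x. 4 * (D a j x)^2)" using Di by simp
    show "(\<lambda>x. (hc (score mu0 mu1 q0 D j) a x)^2 * qm q0 a x) \<in> borel_measurable (nu a)"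
      using m by measurable
    show "AE x in nu a. norm ((hc (score mu0 mu1 q0 D j) a x)^2 * qm q0 a x) \<le> norm (4 * (D a j x)^2)"
    proof (intro AE_I2)
      fix x :: "real \<times> (real^'k)"
      obtain y z where x: "x = (y, z)" by (cases x)
      have "0 \<le> (hc (score mu0 mu1 q0 D j) a x)^2 * qm q0 a x" by (simp add: qm_nonneg)
      then show "norm ((hc (score mu0 mu1 q0 D j) a x)^2 * qm q0 a x) \<le> norm (4 * (D a j x)^2)"
        using score_sq[of D j y a z] by (simp add: x)
    qed
  qed
  then show "hc (score mu0 mu1 q0 D j) a \<in> borel_measurable (nu a) \<and>
      integrable (nu a) (\<lambda>x. (hc (score mu0 mu1 q0 D j) a x)^2 * qm q0 a x)" using m by simp
qed

end

context L4 begin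

lemma RS_D:
  assumes RS: "regular_submodel mu0 mu1 muZ ppi S q0 d Theta th0 qth D" and j: "j < d"
  shows "D a j \<in> borel_measurable (nu a)" "integrable (nu a) (\<lambda>x. (D a j x)^2)"
proof -
  have m: "D a j \<in> borel_measurable (nu a)" and f: "(\<integral>\<^sup>+ x. ennreal ((D a j x)\<^sup>2) \<partial>nu a) < \<infinity>"
    using RS j unfolding regular_submodel_def by blast+
  show "D a j \<in> borel_measurable (nu a)" by (rule m)
  show "integrable (nu a) (\<lambda>x. (D a j x)^2)" using m f by (intro integrableI_nonneg) auto
qed

lemma dqm_step:
  assumes RS: "regular_submodel mu0 mu1 muZ ppi S q0 d Theta th0 qth D" and j: "j < d" and ep: "eps > 0"
  shows "\<exists>t>0. \<exists>q\<in>Qfam mu0 mu1 muZ. \<forall>a.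
     integrable (nu a) (\<lambda>x. \<bar>qm q a x - qm q0 a x - 2 * t * D a j x * sqrt (qm q0 a x)\<bar>) \<and>
     (\<integral>x. \<bar>qm q a x - qm q0 a x - 2 * t * D a j x * sqrt (qm q0 a x)\<bar> \<partial>nu a) \<le> t * eps"
proof -
  have Th: "Theta \<subseteq> Rd d" and th0T: "th0 \<in> Theta"
    and opn: "\<forall>th\<in>Theta. \<exists>r>0. \<forall>th'\<in>Rd d. normd d (\<lambda>i. th' i - th i) < r \<longrightarrow> th' \<in> Theta"
    and QF: "\<forall>th\<in>Theta. qth th \<in> Qfam mu0 mu1 muZ"
    and idf: "\<forall>th\<in>Theta.
        (\<forall>a. AE x in nu a.
           qm (qth th) a x * pwz a (snd x) = qm q0 a x * pwz a (snd x)) \<longleftrightarrow> th = th0"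
    and dqm: "\<forall>a. \<forall>e>0. \<exists>del>0. \<forall>th\<in>Theta. normd d (\<lambda>i. th i - th0 i) < del \<longrightarrow>
        (\<integral>\<^sup>+ x. ennreal ((sqrt (qm (qth th) a x) - sqrt (qm (qth th0) a x)
              - (\<Sum>j<d. (th j - th0 j) * D a j x))\<^sup>2) \<partial>nu a)
        \<le> ennreal (e * (normd d (\<lambda>i. th i - th0 i))\<^sup>2)"
    using RS unfolding regular_submodel_def by blast+
  note Dm = RS_D(1)[OF RS j] and Di = RS_D(2)[OF RS j]
  define K where "K = 1 + (\<integral>x. (D True j x)^2 \<partial>nu True) + (\<integral>x. (D False j x)^2 \<partial>nu False)"
  have DK: "(\<integral>x. (D a j x)^2 \<partial>nu a) \<le> K" for a
  proof -
    have "0 \<le> (\<integral>x. (D b j x)^2 \<partial>nu b)" for b by simp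
    then show ?thesis by (cases a) (auto simp: K_def add_increasing2)
  qed
  have Kp: "0 < K"
  proof -
    have "0 \<le> (\<integral>x. (D b j x)^2 \<partial>nu b)" for b by simp
    from this[of True] this[of False] show ?thesis unfolding K_def by linarith
  qed
  have ae0: "AE x in nu a. qm (qth th0) a x = qm q0 a x" for a
  proof -
    have "AE x in nu a. qm (qth th0) a x * pwz a (snd x) = qm q0 a x * pwz a (snd x)"
      using idf th0T by blast
    then show ?thesis by eventually_elim (use pw_pos in \<open>auto simp: less_le\<close>)
  qed
  have th0R: "\<forall>i\<ge>d. th0 i = 0" using Th th0T by (auto simp: Rd_def)
  define tht where "tht t = (\<lambda>i. th0 i + (if i = j then t else 0))" for t :: real
  have thtR: "tht t \<in> Rd d" for t using th0R j by (auto simp: Rd_def tht_def)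
  have dif: "(\<lambda>i. tht t i - th0 i) = (\<lambda>i. if i = j then t else 0)" for t by (auto simp: tht_def)
  have nrm: "normd d (\<lambda>i. tht t i - th0 i) = \<bar>t\<bar>" for t
  proof -
    have "(\<Sum>i<d. (if i = j then t else 0)^2) = (\<Sum>i<d. if i = j then t^2 else 0)"
      by (intro sum.cong) auto
    also have "\<dots> = t^2" using j by simp
    finally show ?thesis unfolding normd_def dif by simp
  qed
  have sD: "(\<Sum>i<d. (tht t i - th0 i) * D a i x) = t * D a j x" for t a x
  proof -
    have "(\<Sum>i<d. (tht t i - th0 i) * D a i x) = (\<Sum>i<d. if i = j then t * D a j x else 0)"
      by (intro sum.cong) (auto simp: tht_def)
    also have "\<dots> = t * D a j x" using j by simp
    finally show ?thesis .
  qed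
  obtain r where rp: "r > 0" and rT: "\<forall>th'\<in>Rd d. normd d (\<lambda>i. th' i - th0 i) < r \<longrightarrow> th' \<in> Theta"
    using opn th0T by blast
  define e0 where "e0 = eps / (3 * (2 + K)) * eps / 2"
  have e0p: "e0 > 0" using ep Kp by (simp add: e0_def)
  obtain del1 where del1: "del1 > 0" "\<forall>th\<in>Theta. normd d (\<lambda>i. th i - th0 i) < del1 \<longrightarrow>
        (\<integral>\<^sup>+ x. ennreal ((sqrt (qm (qth th) True x) - sqrt (qm (qth th0) True x)
              - (\<Sum>j<d. (th j - th0 j) * D True j x))\<^sup>2) \<partial>nu True)
        \<le> ennreal (e0 * (normd d (\<lambda>i. th i - th0 i))\<^sup>2)"
    using dqm e0p by blast
  obtain del0 where del0: "del0 > 0" "\<forall>th\<in>Theta. normd d (\<lambda>i. th i - th0 i) < del0 \<longrightarrow>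
        (\<integral>\<^sup>+ x. ennreal ((sqrt (qm (qth th) False x) - sqrt (qm (qth th0) False x)
              - (\<Sum>j<d. (th j - th0 j) * D False j x))\<^sup>2) \<partial>nu False)
        \<le> ennreal (e0 * (normd d (\<lambda>i. th i - th0 i))\<^sup>2)"
    using dqm e0p by blast
  define t where "t = min (min (del1 / 2) (del0 / 2)) (min (r / 2) (min 1 (eps / (4 * K))))"
  have tp: "t > 0" using del1 del0 rp ep Kp by (simp add: t_def)
  have t1: "t \<le> 1" by (simp add: t_def)
  have tK: "t * (4 * K) \<le> eps"
  proof -
    have "t \<le> eps / (4 * K)" by (simp add: t_def)
    then show ?thesis using Kp by (simp add: field_simps)
  qed
  have tdel1: "t < del1" and tdel0: "t < del0" and tr: "t < r"
    using del1 del0 rp by (auto simp: t_def)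
  have thT: "tht t \<in> Theta" using rT thtR nrm tr tp by auto
  define q where "q = qth (tht t)"
  have qQ: "q \<in> Qfam mu0 mu1 muZ" using QF thT by (simp add: q_def)
  have dqa: "(\<integral>\<^sup>+ x. ennreal ((sqrt (qm q a x) - sqrt (qm (qth th0) a x) - t * D a j x)\<^sup>2) \<partial>nu a)
        \<le> ennreal (e0 * t^2)" for a
  proof (cases a)
    case True
    have "normd d (\<lambda>i. tht t i - th0 i) < del1" using tdel1 nrm[of t] tp by simp
    from del1(2)[rule_format, OF thT this]
    show ?thesis using True tp by (simp add: sD nrm q_def)
  next
    case False
    have "normd d (\<lambda>i. tht t i - th0 i) < del0" using tdel0 nrm[of t] tp by simp
    from del0(2)[rule_format, OF thT this]
    show ?thesis using False tp by (simp add: sD nrm q_def)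
  qed
  have "integrable (nu a) (\<lambda>x. \<bar>qm q a x - qm q0 a x - 2 * t * D a j x * sqrt (qm q0 a x)\<bar>) \<and>
     (\<integral>x. \<bar>qm q a x - qm q0 a x - 2 * t * D a j x * sqrt (qm q0 a x)\<bar> \<partial>nu a) \<le> t * eps" for a
  proof -
    note qmm = qm_meas[OF QfamD(1)[OF qQ], of a] and q0mm = q0m[of a]
    have Rm: "(\<lambda>x. sqrt (qm q a x)) \<in> borel_measurable (nu a)" using qmm by measurable
    have Qm: "(\<lambda>x. sqrt (qm q0 a x)) \<in> borel_measurable (nu a)" using q0mm by measurable
    have iR: "integrable (nu a) (\<lambda>x. (sqrt (qm q a x))^2)" using Qfam_integrable(1)[OF qQ, of a] by (simp add: qm_nonneg)
    have iQ: "integrable (nu a) (\<lambda>x. (sqrt (qm q0 a x))^2)" using q0int(1)[of a] by (simp add: qm_nonneg)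
    have R1: "(\<integral>x. (sqrt (qm q a x))^2 \<partial>nu a) = 1" using Qfam_integrable(2)[OF qQ, of a] by (simp add: qm_nonneg)
    have Q1: "(\<integral>x. (sqrt (qm q0 a x))^2 \<partial>nu a) = 1" using q0int(2)[of a] by (simp add: qm_nonneg)
    have nnE: "(\<integral>\<^sup>+ x. ennreal ((sqrt (qm q a x) - sqrt (qm q0 a x) - t * D a j x)\<^sup>2) \<partial>nu a)
        \<le> ennreal (eps / (3 * (2 + K)) * eps / 2 * t^2)"
    proof -
      have "(\<integral>\<^sup>+ x. ennreal ((sqrt (qm q a x) - sqrt (qm q0 a x) - t * D a j x)\<^sup>2) \<partial>nu a)
          = (\<integral>\<^sup>+ x. ennreal ((sqrt (qm q a x) - sqrt (qm (qth th0) a x) - t * D a j x)\<^sup>2) \<partial>nu a)"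
        using ae0[of a] by (intro nn_integral_cong_AE) (auto elim!: eventually_mono)
      also have "\<dots> \<le> ennreal (e0 * t^2)" by (rule dqa)
      finally show ?thesis by (simp add: e0_def)
    qed
    from DQM_core[OF Rm Qm Dm iR iQ Di R1 Q1 DK Kp ep tp t1 tK nnE]
    show ?thesis by (simp add: qm_nonneg)
  qed
  then show ?thesis using tp qQ by blast
qed

end

context L4 begin

lemma nnsec_meas:
  fixes F :: "real \<times> (real^'k) \<Rightarrow> ennreal"
  assumes F: "F \<in> borel_measurable (nu a)"
  shows "(\<lambda>z. \<integral>\<^sup>+y. F (y, z) \<partial>MM a) \<in> borel_measurable muZ"
proof -
  interpret P: pair_sigma_finite "MM a" muZ by (rule psf)
  have F'[measurable]: "F \<in> borel_measurable (MM a \<Otimes>\<^sub>M muZ)" using F by (simp add: nu_eq)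
  have "(\<lambda>x. F (snd x, fst x)) \<in> borel_measurable (muZ \<Otimes>\<^sub>M MM a)" by measurable
  then have "case_prod (\<lambda>z y. F (y, z)) \<in> borel_measurable (muZ \<Otimes>\<^sub>M MM a)"
    by (simp add: split_beta')
  then show ?thesis by (rule P.M1.borel_measurable_nn_integral)
qed

lemma DQ_int:
  assumes Dm: "Dd \<in> borel_measurable (nu a)" and Di: "integrable (nu a) (\<lambda>x. (Dd x)^2)"
  shows "integrable (nu a) (\<lambda>x. Dd x * sqrt (qm q0 a x))"
proof (rule Bochner_Integration.integrable_bound[where f="\<lambda>x. (Dd x)^2 / 2 + qm q0 a x / 2"])
  note q0m[measurable] Dm[measurable]
  show "integrable (nu a) (\<lambda>x. (Dd x)^2 / 2 + qm q0 a x / 2)" using Di q0int(1)[of a] by simp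
  show "(\<lambda>x. Dd x * sqrt (qm q0 a x)) \<in> borel_measurable (nu a)" by measurable
  show "AE x in nu a. norm (Dd x * sqrt (qm q0 a x)) \<le> norm ((Dd x)^2 / 2 + qm q0 a x / 2)"
  proof (intro AE_I2)
    fix x
    let ?s = "sqrt (qm q0 a x)"
    have s2: "?s^2 = qm q0 a x" by (simp add: qm_nonneg)
    have "0 \<le> (\<bar>Dd x\<bar> - ?s)^2" by simp
    then have "2 * (\<bar>Dd x\<bar> * ?s) \<le> (Dd x)^2 + ?s^2" by (simp add: power2_eq_square algebra_simps)
    then have "\<bar>Dd x * ?s\<bar> \<le> (Dd x)^2 / 2 + qm q0 a x / 2" using s2 by (simp add: abs_mult)
    moreover have "0 \<le> (Dd x)^2 / 2 + qm q0 a x / 2" by (simp add: qm_nonneg)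
    ultimately show "norm (Dd x * sqrt (qm q0 a x)) \<le> norm ((Dd x)^2 / 2 + qm q0 a x / 2)" by simp
  qed
qed

lemma score_mean0:
  assumes RS: "regular_submodel mu0 mu1 muZ ppi S q0 d Theta th0 qth D" and j: "j < d"
  shows "(\<integral>x. 2 * D a j x * sqrt (qm q0 a x) \<partial>nu a) = 0"
proof -
  note Dm = RS_D(1)[OF RS j] and Di = RS_D(2)[OF RS j]
  define I where "I = (\<integral>x. 2 * D a j x * sqrt (qm q0 a x) \<partial>nu a)"
  have iDQ: "integrable (nu a) (\<lambda>x. D a j x * sqrt (qm q0 a x))" by (rule DQ_int[OF Dm Di])
  have b: "\<bar>I\<bar> \<le> eps" if ep: "eps > 0" for eps
  proof -
    obtain t q where tp: "t > 0" and qQ: "q \<in> Qfam mu0 mu1 muZ" and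
      G: "\<forall>a. integrable (nu a) (\<lambda>x. \<bar>qm q a x - qm q0 a x - 2 * t * D a j x * sqrt (qm q0 a x)\<bar>) \<and>
     (\<integral>x. \<bar>qm q a x - qm q0 a x - 2 * t * D a j x * sqrt (qm q0 a x)\<bar> \<partial>nu a) \<le> t * eps"
      using dqm_step[OF RS j ep] by blast
    have iq: "integrable (nu a) (qm q a)" and q1: "(\<integral>x. qm q a x \<partial>nu a) = 1"
      using Qfam_integrable[OF qQ] by auto
    have "(\<integral>x. qm q a x - qm q0 a x - 2 * t * D a j x * sqrt (qm q0 a x) \<partial>nu a)
        = (\<integral>x. qm q a x \<partial>nu a) - (\<integral>x. qm q0 a x \<partial>nu a) - 2 * t * (\<integral>x. D a j x * sqrt (qm q0 a x) \<partial>nu a)"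
    proof -
      have "(\<integral>x. qm q a x - qm q0 a x - 2 * t * D a j x * sqrt (qm q0 a x) \<partial>nu a)
         = (\<integral>x. qm q a x - qm q0 a x - (2 * t) * (D a j x * sqrt (qm q0 a x)) \<partial>nu a)"
        by (simp add: mult.assoc)
      also have "\<dots> = (\<integral>x. qm q a x \<partial>nu a) - (\<integral>x. qm q0 a x \<partial>nu a) - 2 * t * (\<integral>x. D a j x * sqrt (qm q0 a x) \<partial>nu a)"
        using iq q0int(1)[of a] iDQ by simp
      finally show ?thesis .
    qed
    also have "\<dots> = - (t * I)" using q1 q0int(2)[of a] by (simp add: I_def mult.assoc)
    finally have e: "(\<integral>x. qm q a x - qm q0 a x - 2 * t * D a j x * sqrt (qm q0 a x) \<partial>nu a) = - (t * I)" .
    have "\<bar>- (t * I)\<bar> \<le> (\<integral>x. \<bar>qm q a x - qm q0 a x - 2 * t * D a j x * sqrt (qm q0 a x)\<bar> \<partial>nu a)"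
      unfolding e[symmetric] by (rule integral_abs_bound)
    also have "\<dots> \<le> t * eps" using G by blast
    finally have "t * \<bar>I\<bar> \<le> t * eps" using tp by (simp add: abs_mult)
    then show ?thesis using tp by simp
  qed
  have "I = 0"
  proof (rule ccontr)
    assume "I \<noteq> 0"
    then have "\<bar>I\<bar> \<le> \<bar>I\<bar> / 2" using b[of "\<bar>I\<bar> / 2"] by simp
    with \<open>I \<noteq> 0\<close> show False by simp
  qed
  then show ?thesis by (simp add: I_def)
qed

lemma score_compat:
  assumes RS: "regular_submodel mu0 mu1 muZ ppi S q0 d Theta th0 qth D" and j: "j < d"
  shows "AE z in muZ. (\<integral> y. 2 * D True j (y, z) * sqrt (qm q0 True (y, z)) \<partial>mu1)
     = (\<integral> y. 2 * D False j (y, z) * sqrt (qm q0 False (y, z)) \<partial>mu0)"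
proof -
  note Dm = RS_D(1)[OF RS j] and Di = RS_D(2)[OF RS j]
  note q0m[measurable]
  define Phi where "Phi z = (\<integral> y. 2 * D True j (y, z) * sqrt (qm q0 True (y, z)) \<partial>mu1)
     - (\<integral> y. 2 * D False j (y, z) * sqrt (qm q0 False (y, z)) \<partial>mu0)" for z
  have Phim: "Phi \<in> borel_measurable muZ"
  proof -
    have "(\<lambda>z. \<integral>y. 2 * D a j (y, z) * sqrt (qm q0 a (y, z)) \<partial>MM a) \<in> borel_measurable muZ" for a
    proof -
      note Dm[of a, measurable]
      have "(\<lambda>x. 2 * D a j x * sqrt (qm q0 a x)) \<in> borel_measurable (nu a)" by measurable
      from sec_meas[OF this] show ?thesis by simp
    qed
    from this[of True] this[of False] show ?thesis unfolding Phi_def[abs_def] by (simp add: MM_def)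
  qed
  have "(\<integral>\<^sup>+z. ennreal \<bar>Phi z\<bar> \<partial>muZ) \<le> 0"
  proof (rule ennreal_le_epsilon)
    fix eps' :: real assume ep': "0 < eps'"
    define eps where "eps = eps' / 2"
    have ep: "eps > 0" using ep' by (simp add: eps_def)
    obtain t q where tp: "t > 0" and qQ: "q \<in> Qfam mu0 mu1 muZ" and
      G: "\<forall>a. integrable (nu a) (\<lambda>x. \<bar>qm q a x - qm q0 a x - 2 * t * D a j x * sqrt (qm q0 a x)\<bar>) \<and>
     (\<integral>x. \<bar>qm q a x - qm q0 a x - 2 * t * D a j x * sqrt (qm q0 a x)\<bar> \<partial>nu a) \<le> t * eps"
      using dqm_step[OF RS j ep] by blast
    define F where "F a x = ennreal \<bar>qm q a x - qm q0 a x - 2 * t * D a j x * sqrt (qm q0 a x)\<bar>" for a x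
    have Fm: "F a \<in> borel_measurable (nu a)" for a
    proof -
      note Dm[of a, measurable] qm_meas[OF QfamD(1)[OF qQ], of a, measurable]
      show ?thesis unfolding F_def[abs_def] by measurable
    qed
    have Fint: "(\<integral>\<^sup>+x. F a x \<partial>nu a) \<le> ennreal (t * eps)" for a
    proof -
      have "(\<integral>\<^sup>+x. F a x \<partial>nu a) = ennreal (\<integral>x. \<bar>qm q a x - qm q0 a x - 2 * t * D a j x * sqrt (qm q0 a x)\<bar> \<partial>nu a)"
        unfolding F_def using G by (intro nn_integral_eq_integral) auto
      then show ?thesis using G by (auto intro: ennreal_leI)
    qed
    have sec: "AE z in muZ. integrable (MM a) (\<lambda>y. D a j (y, z) * sqrt (qm q0 a (y, z)))" for a
      using sec_integrable[OF DQ_int[OF Dm Di, of a]] by simp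
    have AEb: "AE z in muZ. ennreal (t * \<bar>Phi z\<bar>) \<le> (\<integral>\<^sup>+y. F True (y, z) \<partial>MM True) + (\<integral>\<^sup>+y. F False (y, z) \<partial>MM False)"
      using Qfam_compat_int[OF qQ] Qfam_compat_int[OF q0Q] sec[of True] sec[of False]
    proof eventually_elim
      case (elim z)
      let ?A1 = "\<integral>y. qm q True (y, z) \<partial>mu1" and ?A0 = "\<integral>y. qm q False (y, z) \<partial>mu0"
      let ?B1 = "\<integral>y. qm q0 True (y, z) \<partial>mu1" and ?B0 = "\<integral>y. qm q0 False (y, z) \<partial>mu0"
      let ?J1 = "\<integral>y. D True j (y, z) * sqrt (qm q0 True (y, z)) \<partial>mu1"
      let ?J0 = "\<integral>y. D False j (y, z) * sqrt (qm q0 False (y, z)) \<partial>mu0"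
      let ?f1 = "\<lambda>y. qm q True (y, z) - qm q0 True (y, z) - 2 * t * D True j (y, z) * sqrt (qm q0 True (y, z))"
      let ?f0 = "\<lambda>y. qm q False (y, z) - qm q0 False (y, z) - 2 * t * D False j (y, z) * sqrt (qm q0 False (y, z))"
      have i1: "integrable mu1 (\<lambda>y. D True j (y, z) * sqrt (qm q0 True (y, z)))"
        and i0: "integrable mu0 (\<lambda>y. D False j (y, z) * sqrt (qm q0 False (y, z)))"
        using elim by (auto simp: MM_def)
      have f1: "(\<integral>y. ?f1 y \<partial>mu1) = ?A1 - ?B1 - 2 * t * ?J1"
      proof -
        have "(\<integral>y. ?f1 y \<partial>mu1) = (\<integral>y. qm q True (y, z) - qm q0 True (y, z) - (2 * t) * (D True j (y, z) * sqrt (qm q0 True (y, z))) \<partial>mu1)"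
          by (simp add: mult.assoc)
        also have "\<dots> = ?A1 - ?B1 - 2 * t * ?J1" using elim i1 by simp
        finally show ?thesis .
      qed
      have f0: "(\<integral>y. ?f0 y \<partial>mu0) = ?A0 - ?B0 - 2 * t * ?J0"
      proof -
        have "(\<integral>y. ?f0 y \<partial>mu0) = (\<integral>y. qm q False (y, z) - qm q0 False (y, z) - (2 * t) * (D False j (y, z) * sqrt (qm q0 False (y, z))) \<partial>mu0)"
          by (simp add: mult.assoc)
        also have "\<dots> = ?A0 - ?B0 - 2 * t * ?J0" using elim i0 by simp
        finally show ?thesis .
      qed
      have Ph: "Phi z = 2 * ?J1 - 2 * ?J0"
        unfolding Phi_def by (simp add: mult.assoc)
      have "t * Phi z = (\<integral>y. ?f0 y \<partial>mu0) - (\<integral>y. ?f1 y \<partial>mu1)"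
        unfolding f1 f0 Ph using elim by (simp add: algebra_simps)
      then have "t * \<bar>Phi z\<bar> \<le> \<bar>\<integral>y. ?f1 y \<partial>mu1\<bar> + \<bar>\<integral>y. ?f0 y \<partial>mu0\<bar>"
        using tp by (simp add: abs_mult[symmetric])
      then have "ennreal (t * \<bar>Phi z\<bar>) \<le> ennreal \<bar>\<integral>y. ?f1 y \<partial>mu1\<bar> + ennreal \<bar>\<integral>y. ?f0 y \<partial>mu0\<bar>"
        by (simp add: ennreal_plus[symmetric] del: ennreal_plus)
      also have "\<dots> \<le> (\<integral>\<^sup>+y. ennreal \<bar>?f1 y\<bar> \<partial>mu1) + (\<integral>\<^sup>+y. ennreal \<bar>?f0 y\<bar> \<partial>mu0)"
        by (intro add_mono abs_int_le_nn)
      finally show ?case by (simp add: F_def MM_def)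
    qed
    have "ennreal t * (\<integral>\<^sup>+z. ennreal \<bar>Phi z\<bar> \<partial>muZ) = (\<integral>\<^sup>+z. ennreal (t * \<bar>Phi z\<bar>) \<partial>muZ)"
      using tp Phim by (subst nn_integral_cmult[symmetric]) (auto simp: ennreal_mult)
    also have "\<dots> \<le> (\<integral>\<^sup>+z. (\<integral>\<^sup>+y. F True (y, z) \<partial>MM True) + (\<integral>\<^sup>+y. F False (y, z) \<partial>MM False) \<partial>muZ)"
      using AEb by (rule nn_integral_mono_AE)
    also have "\<dots> = (\<integral>\<^sup>+x. F True x \<partial>nu True) + (\<integral>\<^sup>+x. F False x \<partial>nu False)"
      using nnsec_meas[OF Fm[of True]] nnsec_meas[OF Fm[of False]]
      by (simp add: nn_integral_add Tz[OF Fm[of True]] Tz[OF Fm[of False]])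
    also have "\<dots> \<le> ennreal (t * eps) + ennreal (t * eps)" by (intro add_mono Fint)
    also have "\<dots> = ennreal t * ennreal eps'"
      using tp ep' by (simp add: eps_def ennreal_plus[symmetric] ennreal_mult[symmetric] del: ennreal_plus)
    finally have "ennreal t * (\<integral>\<^sup>+z. ennreal \<bar>Phi z\<bar> \<partial>muZ) \<le> ennreal t * ennreal eps'" .
    then have "(\<integral>\<^sup>+z. ennreal \<bar>Phi z\<bar> \<partial>muZ) \<le> ennreal eps'"
      using tp by (subst (asm) ennreal_mult_le_mult_iff) auto
    then show "(\<integral>\<^sup>+z. ennreal \<bar>Phi z\<bar> \<partial>muZ) \<le> 0 + ennreal eps'" by simp
  qed
  then have "(\<integral>\<^sup>+z. ennreal \<bar>Phi z\<bar> \<partial>muZ) = 0" by simp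
  then have "AE z in muZ. ennreal \<bar>Phi z\<bar> = 0"
    using Phim by (subst (asm) nn_integral_0_iff_AE) auto
  then show ?thesis by (auto elim!: eventually_mono simp: Phi_def)
qed

lemma score_RHS:
  assumes RS: "regular_submodel mu0 mu1 muZ ppi S q0 d Theta th0 qth D" and j: "j < d"
  shows "score mu0 mu1 q0 D j \<in> RHS"
proof -
  note Dm = RS_D(1)[OF RS j] and Di = RS_D(2)[OF RS j]
  have L: "score mu0 mu1 q0 D j \<in> L2P mu0 mu1 muZ ppi S q0" by (rule score_L2P[of D j, OF Dm Di])
  have sq: "score mu0 mu1 q0 D j (fst x, a, snd x) * qm q0 a x = 2 * D a j x * sqrt (qm q0 a x)" for a x
    using score_q[of D j "fst x" a "snd x"] by simp
  have A: "(\<integral>x. score mu0 mu1 q0 D j (fst x, a, snd x) * qm q0 a x \<partial>nu a) = 0" for a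
    unfolding sq using score_mean0[OF RS j] by simp
  have B: "AE z in muZ. (\<integral> y. score mu0 mu1 q0 D j (y, True, z) * qm q0 True (y, z) \<partial>mu1)
        = (\<integral> y. score mu0 mu1 q0 D j (y, False, z) * qm q0 False (y, z) \<partial>mu0)"
    using score_compat[OF RS j] by (simp add: score_q)
  show ?thesis using L A B by (simp add: RHS_def)
qed

end

context L4 begin

lemma MM_TF: "MM True = mu1" "MM False = mu0" by (simp_all add: MM_def)

lemma AE_nu:
  assumes P: "{x \<in> space (nu a). P x} \<in> sets (nu a)"
    and ae: "AE z in muZ. AE y in MM a. P (y, z)"
  shows "AE x in nu a. P x"
proof -
  interpret PS: pair_sigma_finite "MM a" muZ by (rule psf)
  have P': "{x \<in> space (MM a \<Otimes>\<^sub>M muZ). P x} \<in> sets (MM a \<Otimes>\<^sub>M muZ)" using P by (simp add: nu_eq)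
  have P'': "{x \<in> space (MM a \<Otimes>\<^sub>M muZ). (\<lambda>y z. P (y, z)) (fst x) (snd x)} \<in> sets (MM a \<Otimes>\<^sub>M muZ)"
    using P' by simp
  have "AE y in MM a. AE z in muZ. P (y, z)"
    using PS.AE_commute[OF P''] ae by simp
  then have "AE x in MM a \<Otimes>\<^sub>M muZ. P x" by (intro PS.AE_pair_measure P')
  then show ?thesis unfolding nu_eq .
qed

end

locale L4c = L4 +
  fixes h and C :: real
  assumes hm: "\<And>a. (\<lambda>x. h (fst x, a, snd x) :: real) \<in> borel_measurable (nu a)"
    and hbd: "\<And>w. \<bar>h w\<bar> \<le> C" and Cpos: "0 < C"
    and hA: "\<And>a. (\<integral>x. h (fst x, a, snd x) * qm q0 a x \<partial>nu a) = 0"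
    and hB: "AE z in muZ. (\<integral> y. h (y, True, z) * qm q0 True (y, z) \<partial>mu1)
                   = (\<integral> y. h (y, False, z) * qm q0 False (y, z) \<partial>mu0)"
    and hnz: "Pnn mu0 mu1 muZ ppi S q0 (\<lambda>w. (h w)^2) \<noteq> 0"
begin

definition qat :: "real \<Rightarrow> bool \<Rightarrow> real \<times> (real^'a) \<Rightarrow> real" where
  "qat th a x = qm q0 a x * (1 + th * h (fst x, a, snd x))"

definition gt :: "real \<Rightarrow> (real^'a) \<Rightarrow> real" where
  "gt th z = enn2real (\<integral>\<^sup>+ y. ennreal (qat th True (y, z)) \<partial>mu1)"

definition qt :: "real \<Rightarrow> real \<times> real \<times> (real^'a) \<Rightarrow> real" where
  "qt th w = qat th False (fst w, snd (snd w)) * qat th True (fst (snd w), snd (snd w)) / gt th (snd (snd w))"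

lemma one_plus_pos:
  assumes "\<bar>th\<bar> \<le> 1 / (2 * C)"
  shows "1 / 2 \<le> 1 + th * h w"
proof -
  have "\<bar>th * h w\<bar> \<le> 1 / (2 * C) * C"
    unfolding abs_mult using assms hbd[of w] by (intro mult_mono) auto
  also have "\<dots> = 1 / 2" using Cpos by simp
  finally show ?thesis by linarith
qed

lemma qat_nonneg: "\<bar>th\<bar> \<le> 1 / (2 * C) \<Longrightarrow> 0 \<le> qat th a x"
  using one_plus_pos[of th "(fst x, a, snd x)"] qm_nonneg[of q0 a x] by (simp add: qat_def)

lemma gt_nonneg: "0 \<le> gt th z" by (simp add: gt_def enn2real_nonneg)

lemma qt_nonneg: "\<bar>th\<bar> \<le> 1 / (2 * C) \<Longrightarrow> 0 \<le> qt th w"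
  by (simp add: qt_def qat_nonneg gt_nonneg)

lemma qat_meas[measurable]: "qat th a \<in> borel_measurable (nu a)"
proof -
  note hm[measurable] q0m[measurable]
  show ?thesis unfolding qat_def[abs_def] by measurable
qed

lemma qat_meas': "qat th True \<in> borel_measurable (mu1 \<Otimes>\<^sub>M muZ)" "qat th False \<in> borel_measurable (mu0 \<Otimes>\<^sub>M muZ)"
  using qat_meas[of th True] qat_meas[of th False] by (simp_all add: nu_eq MM_def)

lemma gt_meas[measurable]: "gt th \<in> borel_measurable muZ"
proof -
  have "(\<lambda>x. ennreal (qat th True x)) \<in> borel_measurable (nu True)" by measurable
  from nnsec_meas[OF this] show ?thesis unfolding gt_def[abs_def] by (simp add: MM_def)
qed

lemma qt_meas[measurable]: "qt th \<in> borel_measurable (mu0 \<Otimes>\<^sub>M (mu1 \<Otimes>\<^sub>M muZ))"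
proof -
  note qat_meas'[measurable]
  show ?thesis unfolding qt_def[abs_def] by measurable
qed

lemma qat_int:
  assumes th: "\<bar>th\<bar> \<le> 1 / (2 * C)"
  shows "integrable (nu a) (qat th a)" "(\<integral>x. qat th a x \<partial>nu a) = 1"
proof -
  note hm[measurable] q0m[measurable]
  have ih: "integrable (nu a) (\<lambda>x. hc h a x * qm q0 a x)"
  proof (rule Bochner_Integration.integrable_bound[where f="\<lambda>x. C * qm q0 a x"])
    show "integrable (nu a) (\<lambda>x. C * qm q0 a x)" using q0int(1)[of a] by simp
    show "(\<lambda>x. hc h a x * qm q0 a x) \<in> borel_measurable (nu a)" by measurable
    show "AE x in nu a. norm (hc h a x * qm q0 a x) \<le> norm (C * qm q0 a x)"
      using hbd Cpos qm_nonneg by (intro AE_I2) (auto simp: abs_mult intro!: mult_right_mono)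
  qed
  have e: "qat th a = (\<lambda>x. qm q0 a x + th * (hc h a x * qm q0 a x))"
    by (auto simp: qat_def algebra_simps)
  show "integrable (nu a) (qat th a)" unfolding e using ih q0int(1)[of a] by simp
  show "(\<integral>x. qat th a x \<partial>nu a) = 1" unfolding e using ih q0int[of a] hA[of a] by simp
qed

lemma hq_int: "integrable (nu a) (\<lambda>x. h (fst x, a, snd x) * qm q0 a x)"
proof (rule Bochner_Integration.integrable_bound[where f="\<lambda>x. C * qm q0 a x"])
  note hm[measurable] q0m[measurable]
  show "integrable (nu a) (\<lambda>x. C * qm q0 a x)" using q0int(1)[of a] by simp
  show "(\<lambda>x. h (fst x, a, snd x) * qm q0 a x) \<in> borel_measurable (nu a)" by measurable
  show "AE x in nu a. norm (h (fst x, a, snd x) * qm q0 a x) \<le> norm (C * qm q0 a x)"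
    using hbd Cpos qm_nonneg by (intro AE_I2) (auto simp: abs_mult intro!: mult_right_mono)
qed

lemma Z1:
  assumes th: "\<bar>th\<bar> \<le> 1 / (2 * C)"
  shows "AE z in muZ. (\<integral>\<^sup>+ y. ennreal (qat th True (y, z)) \<partial>mu1) = ennreal (gt th z)
     \<and> (\<integral>\<^sup>+ y. ennreal (qat th False (y, z)) \<partial>mu0) = ennreal (gt th z)"
proof -
  have sec: "AE z in muZ. integrable (MM a) (\<lambda>y. h (y, a, z) * qm q0 a (y, z))" for a
    using sec_integrable[OF hq_int[of a]] by simp
  show ?thesis using Qfam_compat_int[OF q0Q] hB sec[of True] sec[of False]
  proof eventually_elim
    case (elim z)
    have eq: "(\<lambda>y. qat th a (y, z)) = (\<lambda>y. qm q0 a (y, z) + th * (h (y, a, z) * qm q0 a (y, z)))" for a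
      by (auto simp: qat_def algebra_simps)
    have i: "integrable (MM a) (\<lambda>y. qat th a (y, z))" for a
      unfolding eq using elim by (cases a) (auto simp: MM_def)
    have m: "(\<lambda>y. qat th a (y, z)) \<in> borel_measurable (MM a)" for a
      by (rule sec_meas_y[OF qat_meas])
    have v: "(\<integral>\<^sup>+ y. ennreal (qat th a (y, z)) \<partial>MM a)
        = ennreal ((\<integral> y. qm q0 a (y, z) \<partial>MM a) + th * (\<integral> y. h (y, a, z) * qm q0 a (y, z) \<partial>MM a))" for a
    proof -
      have "(\<integral>\<^sup>+ y. ennreal (qat th a (y, z)) \<partial>MM a) = ennreal (\<integral> y. qat th a (y, z) \<partial>MM a)"
        using i[of a] qat_nonneg[OF th] by (intro nn_integral_eq_integral) auto
      also have "(\<integral> y. qat th a (y, z) \<partial>MM a)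
          = (\<integral> y. qm q0 a (y, z) \<partial>MM a) + th * (\<integral> y. h (y, a, z) * qm q0 a (y, z) \<partial>MM a)"
        unfolding eq using elim by (cases a) (auto simp: MM_def)
      finally show ?thesis .
    qed
    have vv: "(\<integral>\<^sup>+ y. ennreal (qat th True (y, z)) \<partial>mu1) = (\<integral>\<^sup>+ y. ennreal (qat th False (y, z)) \<partial>mu0)"
      using v[of True] v[of False] elim by (simp add: MM_def)
    have "(\<integral>\<^sup>+ y. ennreal (qat th True (y, z)) \<partial>mu1) = ennreal (gt th z)"
      using v[of True] unfolding gt_def by (simp add: MM_def)
    then show ?case using vv by simp
  qed
qed

lemma I1:
  assumes th: "\<bar>th\<bar> \<le> 1 / (2 * C)"
  shows "AE x in nu True. (\<integral>\<^sup>+ y0. ennreal (qt th (y0, fst x, snd x)) \<partial>mu0) = ennreal (qat th True x)"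
proof (rule AE_nu)
  interpret M0: sigma_finite_measure mu0 by (rule sf0)
  have m1: "(\<lambda>x. \<integral>\<^sup>+ y0. ennreal (qt th (y0, fst x, snd x)) \<partial>mu0) \<in> borel_measurable (nu True)"
    by (simp add: nu_eq MM_def) measurable
  have m2: "(\<lambda>x. ennreal (qat th True x)) \<in> borel_measurable (nu True)" by measurable
  show "{x \<in> space (nu True). (\<integral>\<^sup>+ y0. ennreal (qt th (y0, fst x, snd x)) \<partial>mu0) = ennreal (qat th True x)} \<in> sets (nu True)"
    using m1 m2 by measurable
  show "AE z in muZ. AE y in MM True. (\<integral>\<^sup>+ y0. ennreal (qt th (y0, fst (y, z), snd (y, z))) \<partial>mu0) = ennreal (qat th True (y, z))"
    using Z1[OF th]
  proof eventually_elim
    case (elim z)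
    have "(\<integral>\<^sup>+ y0. ennreal (qt th (y0, y, z)) \<partial>mu0) = ennreal (gt th z * (qat th True (y, z) / gt th z))" for y
    proof -
      have "(\<integral>\<^sup>+ y0. ennreal (qt th (y0, y, z)) \<partial>mu0)
          = (\<integral>\<^sup>+ y0. ennreal (qat th False (y0, z)) * ennreal (qat th True (y, z) / gt th z) \<partial>mu0)"
        using qat_nonneg[OF th] gt_nonneg
        by (intro nn_integral_cong) (simp add: qt_def ennreal_mult[symmetric])
      also have "\<dots> = (\<integral>\<^sup>+ y0. ennreal (qat th False (y0, z)) \<partial>mu0) * ennreal (qat th True (y, z) / gt th z)"
        using sec_meas_y[OF qat_meas[of th False], of z] by (intro nn_integral_multc) (simp add: MM_def)
      also have "\<dots> = ennreal (gt th z) * ennreal (qat th True (y, z) / gt th z)"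
        using elim by simp
      also have "\<dots> = ennreal (gt th z * (qat th True (y, z) / gt th z))"
        by (rule ennreal_mult[symmetric]) (simp_all add: gt_nonneg qat_nonneg[OF th])
      finally show ?thesis .
    qed
    moreover have "AE y in mu1. ennreal (gt th z * (qat th True (y, z) / gt th z)) = ennreal (qat th True (y, z))"
    proof (cases "gt th z = 0")
      case True
      then have "(\<integral>\<^sup>+ y. ennreal (qat th True (y, z)) \<partial>mu1) = 0" using elim by simp
      then have "AE y in mu1. ennreal (qat th True (y, z)) = 0"
        using sec_meas_y[OF qat_meas[of th True], of z] by (subst (asm) nn_integral_0_iff_AE) (auto simp: MM_def)
      then show ?thesis using True by (auto elim!: eventually_mono)
    next
      case False
      then show ?thesis by simp
    qed
    ultimately show ?case unfolding MM_TF by (auto elim!: eventually_mono)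
  qed
qed

lemma I0:
  assumes th: "\<bar>th\<bar> \<le> 1 / (2 * C)"
  shows "AE x in nu False. (\<integral>\<^sup>+ y1. ennreal (qt th (fst x, y1, snd x)) \<partial>mu1) = ennreal (qat th False x)"
proof (rule AE_nu)
  interpret M1: sigma_finite_measure mu1 by (rule sf1)
  have m1: "(\<lambda>x. \<integral>\<^sup>+ y1. ennreal (qt th (fst x, y1, snd x)) \<partial>mu1) \<in> borel_measurable (nu False)"
    by (simp add: nu_eq MM_def) measurable
  have m2: "(\<lambda>x. ennreal (qat th False x)) \<in> borel_measurable (nu False)" by measurable
  show "{x \<in> space (nu False). (\<integral>\<^sup>+ y1. ennreal (qt th (fst x, y1, snd x)) \<partial>mu1) = ennreal (qat th False x)} \<in> sets (nu False)"
    using m1 m2 by measurable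
  show "AE z in muZ. AE y in MM False. (\<integral>\<^sup>+ y1. ennreal (qt th (fst (y, z), y1, snd (y, z))) \<partial>mu1) = ennreal (qat th False (y, z))"
    using Z1[OF th]
  proof eventually_elim
    case (elim z)
    have "(\<integral>\<^sup>+ y1. ennreal (qt th (y, y1, z)) \<partial>mu1) = ennreal (qat th False (y, z) / gt th z * gt th z)" for y
    proof -
      have "(\<integral>\<^sup>+ y1. ennreal (qt th (y, y1, z)) \<partial>mu1)
          = (\<integral>\<^sup>+ y1. ennreal (qat th False (y, z) / gt th z) * ennreal (qat th True (y1, z)) \<partial>mu1)"
        using qat_nonneg[OF th] gt_nonneg
        by (intro nn_integral_cong) (simp add: qt_def ennreal_mult[symmetric])
      also have "\<dots> = ennreal (qat th False (y, z) / gt th z) * (\<integral>\<^sup>+ y1. ennreal (qat th True (y1, z)) \<partial>mu1)"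
        using sec_meas_y[OF qat_meas[of th True], of z] by (intro nn_integral_cmult) (simp add: MM_def)
      also have "\<dots> = ennreal (qat th False (y, z) / gt th z) * ennreal (gt th z)"
        using elim by simp
      also have "\<dots> = ennreal (qat th False (y, z) / gt th z * gt th z)"
        by (rule ennreal_mult[symmetric]) (simp_all add: gt_nonneg qat_nonneg[OF th])
      finally show ?thesis .
    qed
    moreover have "AE y in mu0. ennreal (qat th False (y, z) / gt th z * gt th z) = ennreal (qat th False (y, z))"
    proof (cases "gt th z = 0")
      case True
      then have "(\<integral>\<^sup>+ y. ennreal (qat th False (y, z)) \<partial>mu0) = 0" using elim by simp
      then have "AE y in mu0. ennreal (qat th False (y, z)) = 0"
        using sec_meas_y[OF qat_meas[of th False], of z] by (subst (asm) nn_integral_0_iff_AE) (auto simp: MM_def)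
      then show ?thesis using True by (auto elim!: eventually_mono)
    next
      case False
      then show ?thesis by simp
    qed
    ultimately show ?case unfolding MM_TF by (auto elim!: eventually_mono)
  qed
qed

end

context L4 begin

lemma fst_nu[measurable]: "fst \<in> borel_measurable (nu a)"
proof -
  have "fst \<in> measurable (MM a \<Otimes>\<^sub>M muZ) (MM a)" by simp
  then show ?thesis by (simp add: nu_eq measurable_cong_sets[OF refl sM])
qed

lemma fst_big[measurable]: "fst \<in> borel_measurable (mu0 \<Otimes>\<^sub>M (mu1 \<Otimes>\<^sub>M muZ))"
proof -
  have "fst \<in> measurable (mu0 \<Otimes>\<^sub>M (mu1 \<Otimes>\<^sub>M muZ)) mu0" by simp
  then show ?thesis by (simp add: measurable_cong_sets[OF refl s0])
qed

lemma fstsnd_big[measurable]: "(\<lambda>w. fst (snd w)) \<in> borel_measurable (mu0 \<Otimes>\<^sub>M (mu1 \<Otimes>\<^sub>M muZ))"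
proof -
  have "(\<lambda>w. fst (snd w)) \<in> measurable (mu0 \<Otimes>\<^sub>M (mu1 \<Otimes>\<^sub>M muZ)) mu1" by simp
  then show ?thesis by (simp add: measurable_cong_sets[OF refl s1])
qed

end

context L4c begin

lemma one_plus_le:
  assumes "\<bar>th\<bar> \<le> 1 / (2 * C)"
  shows "1 + th * h w \<le> 3 / 2"
proof -
  have "\<bar>th * h w\<bar> \<le> 1 / (2 * C) * C"
    unfolding abs_mult using assms hbd[of w] by (intro mult_mono) auto
  also have "\<dots> = 1 / 2" using Cpos by simp
  finally show ?thesis by linarith
qed

lemma qat_le:
  assumes "\<bar>th\<bar> \<le> 1 / (2 * C)"
  shows "qat th a x \<le> 3 / 2 * qm q0 a x"
proof -
  have "qm q0 a x * (1 + th * h (fst x, a, snd x)) \<le> qm q0 a x * (3 / 2)"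
    by (rule mult_left_mono[OF one_plus_le[OF assms] qm_nonneg])
  then show ?thesis by (simp add: qat_def mult.commute)
qed

lemma marg_qt:
  assumes th: "\<bar>th\<bar> \<le> 1 / (2 * C)"
  shows "AE x in nu a. qm (qt th) a x = qat th a x"
proof -
  have T: "AE x in nu True. qm (qt th) True x = qat th True x"
    using I1[OF th] by eventually_elim (simp add: qm_True qat_nonneg[OF th])
  have F: "AE x in nu False. qm (qt th) False x = qat th False x"
    using I0[OF th] by eventually_elim (simp add: qm_False qat_nonneg[OF th])
  show ?thesis using T F by (induct a) auto
qed

lemma qt_int1:
  assumes th: "\<bar>th\<bar> \<le> 1 / (2 * C)"
  shows "(\<integral>\<^sup>+ w. ennreal (qt th w) \<partial>(mu0 \<Otimes>\<^sub>M (mu1 \<Otimes>\<^sub>M muZ))) = 1"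
proof -
  have "(\<integral>\<^sup>+ w. ennreal (qt th w) \<partial>(mu0 \<Otimes>\<^sub>M (mu1 \<Otimes>\<^sub>M muZ)))
      = (\<integral>\<^sup>+ x. (\<integral>\<^sup>+ y0. ennreal (qt th (y0, fst x, snd x)) \<partial>mu0) \<partial>nu True)"
  proof -
    have mf: "(\<lambda>w. ennreal (qt th w)) \<in> borel_measurable (mu0 \<Otimes>\<^sub>M (mu1 \<Otimes>\<^sub>M muZ))" by measurable
    show ?thesis using T1[OF mf] by simp
  qed
  also have "\<dots> = (\<integral>\<^sup>+ x. ennreal (qat th True x) \<partial>nu True)"
    using I1[OF th] by (rule nn_integral_cong_AE)
  also have "\<dots> = ennreal (\<integral> x. qat th True x \<partial>nu True)"
    using qat_int(1)[OF th] qat_nonneg[OF th] by (intro nn_integral_eq_integral) auto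
  also have "\<dots> = 1" using qat_int(2)[OF th] by simp
  finally show ?thesis .
qed

lemma q0mom: "(\<integral>\<^sup>+ w. ennreal ((fst w)^2 * q0 w) \<partial>(mu0 \<Otimes>\<^sub>M (mu1 \<Otimes>\<^sub>M muZ))) < \<infinity>"
  "(\<integral>\<^sup>+ w. ennreal ((fst (snd w))^2 * q0 w) \<partial>(mu0 \<Otimes>\<^sub>M (mu1 \<Otimes>\<^sub>M muZ))) < \<infinity>"
  using q0Q by (auto simp: Qfam_def)

lemma qt_mom:
  assumes th: "\<bar>th\<bar> \<le> 1 / (2 * C)"
  shows "(\<integral>\<^sup>+ w. ennreal ((fst w)^2 * qt th w) \<partial>(mu0 \<Otimes>\<^sub>M (mu1 \<Otimes>\<^sub>M muZ))) < \<infinity>"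
    "(\<integral>\<^sup>+ w. ennreal ((fst (snd w))^2 * qt th w) \<partial>(mu0 \<Otimes>\<^sub>M (mu1 \<Otimes>\<^sub>M muZ))) < \<infinity>"
proof -
  interpret M0: sigma_finite_measure mu0 by (rule sf0)
  interpret M1: sigma_finite_measure mu1 by (rule sf1)
  note q0meas = QfamD(1)[OF q0Q]
  have q0n: "0 \<le> q0 w" for w using QfamD(2)[OF q0Q] by blast
  have key: "(\<integral>\<^sup>+ x. ennreal ((fst x)^2) * ennreal (qat th a x) \<partial>nu a)
      \<le> ennreal (3 / 2) * (\<integral>\<^sup>+ w. ennreal ((fst (pj a w))^2) * ennreal (q0 w) \<partial>(mu0 \<Otimes>\<^sub>M (mu1 \<Otimes>\<^sub>M muZ)))" for a
  proof -
    have "(\<integral>\<^sup>+ x. ennreal ((fst x)^2) * ennreal (qat th a x) \<partial>nu a)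
        \<le> (\<integral>\<^sup>+ x. ennreal (3 / 2) * (ennreal ((fst x)^2) * ennreal (qm q0 a x)) \<partial>nu a)"
    proof (intro nn_integral_mono)
      fix x
      have "ennreal (qat th a x) \<le> ennreal (3 / 2 * qm q0 a x)" by (intro ennreal_leI qat_le[OF th])
      also have "\<dots> = ennreal (3 / 2) * ennreal (qm q0 a x)" by (rule ennreal_mult) (auto simp: qm_nonneg)
      finally show "ennreal ((fst x)^2) * ennreal (qat th a x) \<le> ennreal (3 / 2) * (ennreal ((fst x)^2) * ennreal (qm q0 a x))"
        by (simp add: mult_left_mono mult.left_commute)
    qed
    also have "\<dots> = ennreal (3 / 2) * (\<integral>\<^sup>+ x. ennreal ((fst x)^2) * ennreal (qm q0 a x) \<partial>nu a)"
    proof -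
      note q0m[measurable]
      have "(\<lambda>x. ennreal ((fst x)^2) * ennreal (qm q0 a x)) \<in> borel_measurable (nu a)"
        by measurable
      then show ?thesis by (rule nn_integral_cmult)
    qed
    also have "\<dots> \<le> ennreal (3 / 2) * (\<integral>\<^sup>+ w. ennreal ((fst (pj a w))^2) * ennreal (q0 w) \<partial>(mu0 \<Otimes>\<^sub>M (mu1 \<Otimes>\<^sub>M muZ)))"
    proof (intro mult_left_mono marg_gen(1)[OF q0meas]) 
      show "(\<lambda>x. ennreal ((fst x)^2)) \<in> borel_measurable (nu a)" by measurable
    qed simp
    finally show ?thesis .
  qed
  have fin: "(\<integral>\<^sup>+ w. ennreal ((fst (pj a w))^2) * ennreal (q0 w) \<partial>(mu0 \<Otimes>\<^sub>M (mu1 \<Otimes>\<^sub>M muZ))) < \<infinity>" for a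
  proof (cases a)
    case True
    then show ?thesis using q0mom(2) q0n by (simp add: pj_def ennreal_mult[symmetric])
  next
    case False
    then show ?thesis using q0mom(1) q0n by (simp add: pj_def ennreal_mult[symmetric])
  qed
  have "(\<integral>\<^sup>+ w. ennreal ((fst w)^2 * qt th w) \<partial>(mu0 \<Otimes>\<^sub>M (mu1 \<Otimes>\<^sub>M muZ)))
      = (\<integral>\<^sup>+ x. (\<integral>\<^sup>+ y1. ennreal ((fst x)^2 * qt th (fst x, y1, snd x)) \<partial>mu1) \<partial>nu False)"
  proof -
    note qt_meas[measurable]
    have mf: "(\<lambda>w. ennreal ((fst w)^2 * qt th w)) \<in> borel_measurable (mu0 \<Otimes>\<^sub>M (mu1 \<Otimes>\<^sub>M muZ))" by measurable
    show ?thesis using T0[OF mf] by simp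
  qed
  also have "\<dots> = (\<integral>\<^sup>+ x. ennreal ((fst x)^2) * (\<integral>\<^sup>+ y1. ennreal (qt th (fst x, y1, snd x)) \<partial>mu1) \<partial>nu False)"
  proof (intro nn_integral_cong)
    fix x :: "real \<times> (real^'a)"
    have "(\<integral>\<^sup>+ y1. ennreal ((fst x)^2 * qt th (fst x, y1, snd x)) \<partial>mu1)
        = (\<integral>\<^sup>+ y1. ennreal ((fst x)^2) * ennreal (qt th (fst x, y1, snd x)) \<partial>mu1)"
      using qt_nonneg[OF th] by (intro nn_integral_cong) (simp add: ennreal_mult)
    also have "\<dots> = ennreal ((fst x)^2) * (\<integral>\<^sup>+ y1. ennreal (qt th (fst x, y1, snd x)) \<partial>mu1)"
      by (rule nn_integral_cmult) measurable
    finally show "(\<integral>\<^sup>+ y1. ennreal ((fst x)^2 * qt th (fst x, y1, snd x)) \<partial>mu1)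
        = ennreal ((fst x)^2) * (\<integral>\<^sup>+ y1. ennreal (qt th (fst x, y1, snd x)) \<partial>mu1)" .
  qed
  also have "\<dots> = (\<integral>\<^sup>+ x. ennreal ((fst x)^2) * ennreal (qat th False x) \<partial>nu False)"
    using I0[OF th] by (intro nn_integral_cong_AE) (auto elim!: eventually_mono)
  also have "\<dots> < \<infinity>" using key[of False] fin[of False]
    by (simp add: order.strict_trans1 ennreal_mult_less_top)
  finally show "(\<integral>\<^sup>+ w. ennreal ((fst w)^2 * qt th w) \<partial>(mu0 \<Otimes>\<^sub>M (mu1 \<Otimes>\<^sub>M muZ))) < \<infinity>" .
  have "(\<integral>\<^sup>+ w. ennreal ((fst (snd w))^2 * qt th w) \<partial>(mu0 \<Otimes>\<^sub>M (mu1 \<Otimes>\<^sub>M muZ)))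
      = (\<integral>\<^sup>+ x. (\<integral>\<^sup>+ y0. ennreal ((fst x)^2 * qt th (y0, fst x, snd x)) \<partial>mu0) \<partial>nu True)"
  proof -
    note qt_meas[measurable]
    have mf: "(\<lambda>w. ennreal ((fst (snd w))^2 * qt th w)) \<in> borel_measurable (mu0 \<Otimes>\<^sub>M (mu1 \<Otimes>\<^sub>M muZ))" by measurable
    show ?thesis using T1[OF mf] by simp
  qed
  also have "\<dots> = (\<integral>\<^sup>+ x. ennreal ((fst x)^2) * (\<integral>\<^sup>+ y0. ennreal (qt th (y0, fst x, snd x)) \<partial>mu0) \<partial>nu True)"
  proof (intro nn_integral_cong)
    fix x :: "real \<times> (real^'a)"
    have "(\<integral>\<^sup>+ y0. ennreal ((fst x)^2 * qt th (y0, fst x, snd x)) \<partial>mu0)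
        = (\<integral>\<^sup>+ y0. ennreal ((fst x)^2) * ennreal (qt th (y0, fst x, snd x)) \<partial>mu0)"
      using qt_nonneg[OF th] by (intro nn_integral_cong) (simp add: ennreal_mult)
    also have "\<dots> = ennreal ((fst x)^2) * (\<integral>\<^sup>+ y0. ennreal (qt th (y0, fst x, snd x)) \<partial>mu0)"
      by (rule nn_integral_cmult) measurable
    finally show "(\<integral>\<^sup>+ y0. ennreal ((fst x)^2 * qt th (y0, fst x, snd x)) \<partial>mu0)
        = ennreal ((fst x)^2) * (\<integral>\<^sup>+ y0. ennreal (qt th (y0, fst x, snd x)) \<partial>mu0)" .
  qed
  also have "\<dots> = (\<integral>\<^sup>+ x. ennreal ((fst x)^2) * ennreal (qat th True x) \<partial>nu True)"
    using I1[OF th] by (intro nn_integral_cong_AE) (auto elim!: eventually_mono)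
  also have "\<dots> < \<infinity>" using key[of True] fin[of True]
    by (simp add: order.strict_trans1 ennreal_mult_less_top)
  finally show "(\<integral>\<^sup>+ w. ennreal ((fst (snd w))^2 * qt th w) \<partial>(mu0 \<Otimes>\<^sub>M (mu1 \<Otimes>\<^sub>M muZ))) < \<infinity>" .
qed

lemma qt_Qfam:
  assumes th: "\<bar>th\<bar> \<le> 1 / (2 * C)"
  shows "qt th \<in> Qfam mu0 mu1 muZ"
  using qt_meas qt_nonneg[OF th] qt_int1[OF th] qt_mom[OF th] by (simp add: Qfam_def)

end

lemma sqrt_taylor:
  fixes x :: real
  assumes "-1 \<le> x"
  shows "\<bar>sqrt (1 + x) - 1 - x / 2\<bar> \<le> x^2 / 2"
proof -
  define s where "s = sqrt (1 + x)"
  have x1: "0 \<le> 1 + x" using assms by simp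
  have s0: "0 \<le> s" using x1 by (simp add: s_def)
  have s2: "s^2 = 1 + x" using x1 by (simp add: s_def)
  have e: "s - 1 - x / 2 = - ((s - 1)^2 / 2)" using s2 by (simp add: power2_eq_square field_simps)
  have "(s - 1) * (s + 1) = x" using s2 by (simp add: power2_eq_square algebra_simps)
  then have "\<bar>x\<bar> = \<bar>s - 1\<bar> * \<bar>s + 1\<bar>" by (metis abs_mult)
  then have ax: "\<bar>x\<bar> = \<bar>s - 1\<bar> * (s + 1)" using s0 by simp
  have "\<bar>s - 1\<bar> * 1 \<le> \<bar>s - 1\<bar> * (s + 1)" using s0 by (intro mult_left_mono) auto
  then have le: "\<bar>s - 1\<bar> \<le> \<bar>x\<bar>" using ax by simp
  have "\<bar>s - 1\<bar>^2 \<le> \<bar>x\<bar>^2" by (rule power_mono[OF le]) simp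
  then have "(s - 1)^2 \<le> x^2" by simp
  then show ?thesis unfolding s_def[symmetric] e by simp
qed

lemma normd1: "normd 1 f = \<bar>f 0\<bar>" by (simp add: normd_def)

context L4c begin

definition Th :: "(nat \<Rightarrow> real) set" where "Th = {th \<in> Rd 1. \<bar>th 0\<bar> < 1 / (2 * C)}"
definition qth :: "(nat \<Rightarrow> real) \<Rightarrow> real \<times> real \<times> (real^'a) \<Rightarrow> real" where "qth th = qt (th 0)"
definition Dc :: "bool \<Rightarrow> nat \<Rightarrow> real \<times> (real^'a) \<Rightarrow> real" where
  "Dc a j x = (if j = 0 then h (fst x, a, snd x) * sqrt (qm q0 a x) / 2 else 0)"

lemma qat0: "qat 0 a x = qm q0 a x" by (simp add: qat_def)

lemma score_Dc: "score mu0 mu1 q0 Dc 0 (y, a, z) = (if 0 < qm q0 a (y, z) then h (y, a, z) else 0)"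
  by (simp add: score_def Dc_def)

lemma score_Dc_q: "score mu0 mu1 q0 Dc 0 (y, a, z) * qm q0 a (y, z) = h (y, a, z) * qm q0 a (y, z)"
  using qm_nonneg[of q0 a "(y, z)"] by (auto simp: score_Dc)

lemma Pa_h_pos: "\<exists>a. Pa a (\<lambda>w. (h w)^2) \<noteq> 0"
  using hnz by (auto simp: Pnn_split)

lemma hsq_int: "integrable (nu a) (\<lambda>x. (h (fst x, a, snd x))^2 * qm q0 a x * pwz a (snd x))"
proof (rule Bochner_Integration.integrable_bound[where f="\<lambda>x. C^2 * qm q0 a x"])
  note hm[measurable] q0m[measurable] pw_meas[measurable]
  show "integrable (nu a) (\<lambda>x. C^2 * qm q0 a x)" using q0int(1)[of a] by simp
  show "(\<lambda>x. (h (fst x, a, snd x))^2 * qm q0 a x * pwz a (snd x)) \<in> borel_measurable (nu a)" by measurable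
  show "AE x in nu a. norm ((h (fst x, a, snd x))^2 * qm q0 a x * pwz a (snd x)) \<le> norm (C^2 * qm q0 a x)"
  proof (intro AE_I2)
    fix x
    have h2: "(h (fst x, a, snd x))^2 \<le> C^2" using hbd[of "(fst x, a, snd x)"]
      by (metis abs_ge_zero power2_abs power_mono)
    have p: "0 \<le> pwz a (snd x)" "pwz a (snd x) \<le> 1" using pw_pos[of a "snd x"] pw_le1[of a "snd x"] by auto
    have "(h (fst x, a, snd x))^2 * qm q0 a x * pwz a (snd x) \<le> (h (fst x, a, snd x))^2 * qm q0 a x"
      using p qm_nonneg[of q0 a x] by (simp add: mult_left_le)
    also have "\<dots> \<le> C^2 * qm q0 a x" using h2 qm_nonneg[of q0 a x] by (rule mult_right_mono)
    finally show "norm ((h (fst x, a, snd x))^2 * qm q0 a x * pwz a (snd x)) \<le> norm (C^2 * qm q0 a x)"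
      using p qm_nonneg[of q0 a x] by simp
  qed
qed

lemma Pa_h_eq: "Pa a (\<lambda>w. (h w)^2) = ennreal (\<integral>x. (h (fst x, a, snd x))^2 * qm q0 a x * pwz a (snd x) \<partial>nu a)"
proof -
  have "0 \<le> (h (fst x, a, snd x))^2 * qm q0 a x * pwz a (snd x)" for x
    using pw_pos[of a "snd x"] qm_nonneg[of q0 a x] by simp
  then show ?thesis unfolding Pa_def using hsq_int[of a]
    by (intro nn_integral_eq_integral) auto
qed

end

lemma dqm_ptwise:
  fixes q x :: real
  assumes q: "0 \<le> q" and x: "-1 \<le> x"
  shows "(sqrt (q * (1 + x)) - sqrt q - x * sqrt q / 2)^2 \<le> q * x^4 / 4"
proof -
  have "sqrt (q * (1 + x)) = sqrt q * sqrt (1 + x)" by (rule real_sqrt_mult)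
  then have "sqrt (q * (1 + x)) - sqrt q - x * sqrt q / 2 = sqrt q * (sqrt (1 + x) - 1 - x / 2)"
    by (simp add: algebra_simps)
  then have "(sqrt (q * (1 + x)) - sqrt q - x * sqrt q / 2)^2 = q * (sqrt (1 + x) - 1 - x / 2)^2"
    using q by (simp add: power_mult_distrib)
  also have "(sqrt (1 + x) - 1 - x / 2)^2 \<le> (x^2 / 2)^2"
  proof -
    have "\<bar>sqrt (1 + x) - 1 - x / 2\<bar>^2 \<le> (x^2 / 2)^2"
      by (rule power_mono[OF sqrt_taylor[OF x]]) simp
    then show ?thesis by simp
  qed
  then have "q * (sqrt (1 + x) - 1 - x / 2)^2 \<le> q * (x^2 / 2)^2" using q by (rule mult_left_mono)
  also have "q * (x^2 / 2)^2 = q * x^4 / 4" by (simp add: power2_eq_square power4_eq_xxxx)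
  finally show ?thesis .
qed

context L4c begin

lemma Th_sub: "Th \<subseteq> Rd 1" by (auto simp: Th_def)

lemma th0_in: "(\<lambda>_. 0) \<in> Th" using Cpos by (simp add: Th_def Rd_def)

lemma Th_bd: "th \<in> Th \<Longrightarrow> \<bar>th 0\<bar> \<le> 1 / (2 * C)" by (simp add: Th_def)

lemma Th_open: "\<forall>th\<in>Th. \<exists>r>0. \<forall>th'\<in>Rd 1. normd 1 (\<lambda>i. th' i - th i) < r \<longrightarrow> th' \<in> Th"
proof
  fix th assume th: "th \<in> Th"
  define r where "r = 1 / (2 * C) - \<bar>th 0\<bar>"
  have rp: "r > 0" using th by (simp add: Th_def r_def)
  have "\<forall>th'\<in>Rd 1. normd 1 (\<lambda>i. th' i - th i) < r \<longrightarrow> th' \<in> Th"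
  proof (intro ballI impI)
    fix th' assume "th' \<in> Rd 1" and n: "normd 1 (\<lambda>i. th' i - th i) < r"
    then have "\<bar>th' 0 - th 0\<bar> < r" unfolding normd1 by simp
    then have "\<bar>th' 0\<bar> < 1 / (2 * C)" unfolding r_def by linarith
    then show "th' \<in> Th" using \<open>th' \<in> Rd 1\<close> by (simp add: Th_def)
  qed
  then show "\<exists>r>0. \<forall>th'\<in>Rd 1. normd 1 (\<lambda>i. th' i - th i) < r \<longrightarrow> th' \<in> Th" using rp by blast
qed

lemma Th_Q: "\<forall>th\<in>Th. qth th \<in> Qfam mu0 mu1 muZ"
  using qt_Qfam Th_bd by (simp add: qth_def)

lemma Th_ident:
  "\<forall>th\<in>Th. (\<forall>a. AE x in nu a. qm (qth th) a x * pwz a (snd x) = qm q0 a x * pwz a (snd x))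
      \<longleftrightarrow> th = (\<lambda>_. 0)"
proof (intro ballI iffI)
  fix th assume th: "th \<in> Th"
  assume "th = (\<lambda>_. 0)"
  then show "\<forall>a. AE x in nu a. qm (qth th) a x * pwz a (snd x) = qm q0 a x * pwz a (snd x)"
  proof (intro allI)
    fix a
    have "AE x in nu a. qm (qt 0) a x = qat 0 a x" using Cpos by (intro marg_qt) simp
    then show "AE x in nu a. qm (qth th) a x * pwz a (snd x) = qm q0 a x * pwz a (snd x)"
      using \<open>th = (\<lambda>_. 0)\<close> by (auto simp: qth_def qat0 elim!: eventually_mono)
  qed
next
  fix th assume th: "th \<in> Th"
  assume A: "\<forall>a. AE x in nu a. qm (qth th) a x * pwz a (snd x) = qm q0 a x * pwz a (snd x)"
  have "th 0 = 0"
  proof (rule ccontr)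
    assume t0: "th 0 \<noteq> 0"
    have "Pa a (\<lambda>w. (h w)^2) = 0" for a
    proof -
      have "AE x in nu a. (h (fst x, a, snd x))^2 * qm q0 a x * pwz a (snd x) = 0"
        using A[rule_format, of a] marg_qt[OF Th_bd[OF th], of a]
      proof eventually_elim
        case (elim x)
        have "qat (th 0) a x = qm q0 a x" using elim pw_pos[of a "snd x"] by (simp add: qth_def)
        then have "th 0 * (h (fst x, a, snd x) * qm q0 a x) = 0" by (simp add: qat_def algebra_simps)
        then have "h (fst x, a, snd x) * qm q0 a x = 0" using t0 by simp
        then show ?case by (simp add: power2_eq_square)
      qed
      then show ?thesis unfolding Pa_def by (subst nn_integral_cong_AE[where v="\<lambda>_. 0"]) (auto elim!: eventually_mono)
    qed
    then show False using Pa_h_pos by blast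
  qed
  moreover have "\<forall>i\<ge>1. th i = 0" using th by (auto simp: Th_def Rd_def)
  ultimately show "th = (\<lambda>_. 0)"
    by (intro ext) (metis less_one not_le)
qed

lemma Dc_L2: "\<forall>a. \<forall>j<1. Dc a j \<in> borel_measurable (nu a) \<and> (\<integral>\<^sup>+ x. ennreal ((Dc a j x)^2) \<partial>nu a) < \<infinity>"
proof (intro allI impI)
  fix a and j :: nat assume "j < 1"
  then have j0: "j = 0" by simp
  note hm[measurable] q0m[measurable]
  have m: "Dc a j \<in> borel_measurable (nu a)" unfolding j0 Dc_def[abs_def] by simp measurable
  have "(\<integral>\<^sup>+ x. ennreal ((Dc a j x)^2) \<partial>nu a) \<le> (\<integral>\<^sup>+ x. ennreal (C^2 / 4) * ennreal (qm q0 a x) \<partial>nu a)"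
  proof (intro nn_integral_mono)
    fix x
    have h2: "(h (fst x, a, snd x))^2 \<le> C^2" using hbd[of "(fst x, a, snd x)"]
      by (metis abs_ge_zero power2_abs power_mono)
    have "(Dc a j x)^2 = (h (fst x, a, snd x))^2 * qm q0 a x / 4"
      unfolding j0 Dc_def using qm_nonneg[of q0 a x] by (simp add: power_mult_distrib power_divide)
    also have "\<dots> \<le> C^2 * qm q0 a x / 4"
      using h2 qm_nonneg[of q0 a x] by (intro divide_right_mono mult_right_mono) auto
    finally have "ennreal ((Dc a j x)^2) \<le> ennreal (C^2 / 4 * qm q0 a x)" by (intro ennreal_leI) simp
    also have "\<dots> = ennreal (C^2 / 4) * ennreal (qm q0 a x)" by (rule ennreal_mult) (auto simp: qm_nonneg)
    finally show "ennreal ((Dc a j x)^2) \<le> ennreal (C^2 / 4) * ennreal (qm q0 a x)" .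
  qed
  also have "\<dots> = ennreal (C^2 / 4) * (\<integral>\<^sup>+ x. ennreal (qm q0 a x) \<partial>nu a)"
    by (rule nn_integral_cmult) measurable
  also have "\<dots> = ennreal (C^2 / 4)" using Qfam_int[OF q0Q, of a] by simp
  also have "\<dots> < \<infinity>" by simp
  finally show "Dc a j \<in> borel_measurable (nu a) \<and> (\<integral>\<^sup>+ x. ennreal ((Dc a j x)^2) \<partial>nu a) < \<infinity>"
    using m by simp
qed

end

context L4c begin

lemma Dc_dqm: "\<forall>a. \<forall>e>0. \<exists>del>0. \<forall>th\<in>Th. \<bar>th 0\<bar> < del \<longrightarrow>
   (\<integral>\<^sup>+ x. ennreal ((sqrt (qm (qth th) a x) - sqrt (qm (qth (\<lambda>_. 0)) a x) - th 0 * Dc a 0 x)^2) \<partial>nu a)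
      \<le> ennreal (e * (th 0)^2)"
proof (intro allI impI)
  fix a and e :: real assume ep: "e > 0"
  define del where "del = 2 * sqrt e / C^2"
  have delp: "del > 0" using ep Cpos by (simp add: del_def)
  have "\<forall>th\<in>Th. \<bar>th 0\<bar> < del \<longrightarrow>
   (\<integral>\<^sup>+ x. ennreal ((sqrt (qm (qth th) a x) - sqrt (qm (qth (\<lambda>_. 0)) a x) - th 0 * Dc a 0 x)^2) \<partial>nu a)
      \<le> ennreal (e * (th 0)^2)"
  proof (intro ballI impI)
    fix th assume th: "th \<in> Th" and small: "\<bar>th 0\<bar> < del"
    define t where "t = th 0"
    have tb: "\<bar>t\<bar> \<le> 1 / (2 * C)" using Th_bd[OF th] by (simp add: t_def)
    have c1: "t^4 * C^4 / 4 \<le> e * t^2"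
    proof -
      have "\<bar>t\<bar>^2 \<le> del^2" using small by (intro power_mono) (auto simp: t_def)
      also have "del^2 = 4 * e / C^4" using ep Cpos by (simp add: del_def power_divide power_mult_distrib)
      finally have "t^2 \<le> 4 * e / C^4" by simp
      then have "t^2 * C^4 / 4 \<le> e" using Cpos by (simp add: field_simps)
      then have "t^2 * (t^2 * C^4 / 4) \<le> t^2 * e" by (intro mult_left_mono) auto
      then show ?thesis by (simp add: power4_eq_xxxx power2_eq_square algebra_simps)
    qed
    have "(\<integral>\<^sup>+ x. ennreal ((sqrt (qm (qth th) a x) - sqrt (qm (qth (\<lambda>_. 0)) a x) - th 0 * Dc a 0 x)^2) \<partial>nu a)
      = (\<integral>\<^sup>+ x. ennreal ((sqrt (qm q0 a x * (1 + t * h (fst x, a, snd x))) - sqrt (qm q0 a x)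
            - (t * h (fst x, a, snd x)) * sqrt (qm q0 a x) / 2)^2) \<partial>nu a)"
    proof (rule nn_integral_cong_AE)
      have "AE x in nu a. qm (qt 0) a x = qat 0 a x" using Cpos by (intro marg_qt) simp
      then show "AE x in nu a. ennreal ((sqrt (qm (qth th) a x) - sqrt (qm (qth (\<lambda>_. 0)) a x) - th 0 * Dc a 0 x)^2)
         = ennreal ((sqrt (qm q0 a x * (1 + t * h (fst x, a, snd x))) - sqrt (qm q0 a x)
            - (t * h (fst x, a, snd x)) * sqrt (qm q0 a x) / 2)^2)"
        using marg_qt[OF tb, of a]
        by eventually_elim (simp add: qth_def t_def qat0 qat_def Dc_def algebra_simps)
    qed
    also have "\<dots> \<le> (\<integral>\<^sup>+ x. ennreal (t^4 * C^4 / 4) * ennreal (qm q0 a x) \<partial>nu a)"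
    proof (intro nn_integral_mono)
      fix x
      let ?u = "t * h (fst x, a, snd x)"
      have u1: "-1 \<le> ?u" using one_plus_pos[OF tb, of "(fst x, a, snd x)"] by simp
      have "(sqrt (qm q0 a x * (1 + ?u)) - sqrt (qm q0 a x) - ?u * sqrt (qm q0 a x) / 2)^2 \<le> qm q0 a x * ?u^4 / 4"
        by (rule dqm_ptwise[OF qm_nonneg u1])
      also have "\<dots> \<le> qm q0 a x * (t^4 * C^4) / 4"
      proof -
        have "\<bar>?u\<bar> \<le> \<bar>t\<bar> * C" unfolding abs_mult using hbd by (intro mult_left_mono) auto
        then have "\<bar>?u\<bar>^4 \<le> (\<bar>t\<bar> * C)^4" by (intro power_mono) auto
        then have "?u^4 \<le> t^4 * C^4" by (simp add: power_mult_distrib power_even_abs)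
        then show ?thesis using qm_nonneg[of q0 a x] by (intro divide_right_mono mult_left_mono) auto
      qed
      finally have "ennreal ((sqrt (qm q0 a x * (1 + ?u)) - sqrt (qm q0 a x) - ?u * sqrt (qm q0 a x) / 2)^2)
          \<le> ennreal (t^4 * C^4 / 4 * qm q0 a x)" by (intro ennreal_leI) (simp add: algebra_simps)
      also have "\<dots> = ennreal (t^4 * C^4 / 4) * ennreal (qm q0 a x)"
        by (rule ennreal_mult) (auto simp: qm_nonneg)
      finally show "ennreal ((sqrt (qm q0 a x * (1 + ?u)) - sqrt (qm q0 a x) - ?u * sqrt (qm q0 a x) / 2)^2)
          \<le> ennreal (t^4 * C^4 / 4) * ennreal (qm q0 a x)" .
    qed
    also have "\<dots> = ennreal (t^4 * C^4 / 4) * (\<integral>\<^sup>+ x. ennreal (qm q0 a x) \<partial>nu a)"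
      using q0m[of a] by (intro nn_integral_cmult) measurable
    also have "\<dots> = ennreal (t^4 * C^4 / 4)" using Qfam_int[OF q0Q, of a] by simp
    also have "\<dots> \<le> ennreal (e * (th 0)^2)" using c1 by (intro ennreal_leI) (simp add: t_def)
    finally show "(\<integral>\<^sup>+ x. ennreal ((sqrt (qm (qth th) a x) - sqrt (qm (qth (\<lambda>_. 0)) a x) - th 0 * Dc a 0 x)^2) \<partial>nu a)
      \<le> ennreal (e * (th 0)^2)" .
  qed
  then show "\<exists>del>0. \<forall>th\<in>Th. \<bar>th 0\<bar> < del \<longrightarrow>
   (\<integral>\<^sup>+ x. ennreal ((sqrt (qm (qth th) a x) - sqrt (qm (qth (\<lambda>_. 0)) a x) - th 0 * Dc a 0 x)^2) \<partial>nu a)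
      \<le> ennreal (e * (th 0)^2)" using delp by blast
qed

lemma Pint_pos: "Pint mu0 mu1 muZ ppi S q0 (\<lambda>w. score mu0 mu1 q0 Dc 0 w * score mu0 mu1 q0 Dc 0 w) \<noteq> 0"
proof -
  define I where "I a = (\<integral>x. (h (fst x, a, snd x))^2 * qm q0 a x * pwz a (snd x) \<partial>nu a)" for a
  have nn: "0 \<le> (h (fst x, a, snd x))^2 * qm q0 a x * pwz a (snd x)" for a x
    using pw_pos[of a "snd x"] qm_nonneg[of q0 a x] by simp
  have I0: "0 \<le> I a" for a
    unfolding I_def using nn by (intro Bochner_Integration.integral_nonneg) auto
  have eq: "score mu0 mu1 q0 Dc 0 (fst x, a, snd x) * score mu0 mu1 q0 Dc 0 (fst x, a, snd x) * qm q0 a x * pwz a (snd x)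
      = (h (fst x, a, snd x))^2 * qm q0 a x * pwz a (snd x)" for a x
  proof -
    have "score mu0 mu1 q0 Dc 0 (fst x, a, snd x) * qm q0 a x = h (fst x, a, snd x) * qm q0 a x"
      using score_Dc_q[of "fst x" a "snd x"] by simp
    moreover have "score mu0 mu1 q0 Dc 0 (fst x, a, snd x) * score mu0 mu1 q0 Dc 0 (fst x, a, snd x) * qm q0 a x
        = (if 0 < qm q0 a x then (h (fst x, a, snd x))^2 * qm q0 a x else 0)"
      using qm_nonneg[of q0 a x] by (auto simp: score_Dc power2_eq_square)
    ultimately show ?thesis using qm_nonneg[of q0 a x] by (auto simp: power2_eq_square)
  qed
  have P: "Pint mu0 mu1 muZ ppi S q0 (\<lambda>w. score mu0 mu1 q0 Dc 0 w * score mu0 mu1 q0 Dc 0 w) = I False + I True"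
    unfolding Pint_def I_def by (simp add: UNIV_bool eq)
  obtain a where "Pa a (\<lambda>w. (h w)^2) \<noteq> 0" using Pa_h_pos by blast
  then have "I a \<noteq> 0" using Pa_h_eq[of a] by (auto simp: I_def)
  then have "I a > 0" using I0[of a] by simp
  then show ?thesis unfolding P using I0[of True] I0[of False] by (cases a) auto
qed

end

lemma normd_Suc0: "normd (Suc 0) f = \<bar>f 0\<bar>" by (simp add: normd_def)

context L4c begin

lemma regsub: "regular_submodel mu0 mu1 muZ ppi S q0 1 Th (\<lambda>_. 0) qth Dc"
  unfolding regular_submodel_def
proof (intro conjI)
  show "Th \<subseteq> Rd 1" by (rule Th_sub)
  show "(\<lambda>_. 0) \<in> Th" by (rule th0_in)
  show "\<forall>th\<in>Th. \<exists>r>0. \<forall>th'\<in>Rd 1. normd 1 (\<lambda>i. th' i - th i) < r \<longrightarrow> th' \<in> Th" by (rule Th_open)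
  show "\<forall>th\<in>Th. qth th \<in> Qfam mu0 mu1 muZ" by (rule Th_Q)
  show "\<forall>th\<in>Th. (\<forall>a. AE x in nu a. qm (qth th) a x * pwz a (snd x) = qm (q0) a x * pwz a (snd x)) \<longleftrightarrow> th = (\<lambda>_. 0)"
    by (rule Th_ident)
  show "\<forall>a. \<forall>j<1. Dc a j \<in> borel_measurable (nu a) \<and> (\<integral>\<^sup>+ x. ennreal ((Dc a j x)\<^sup>2) \<partial>nu a) < \<infinity>"
    by (rule Dc_L2)
  show "\<forall>a. \<forall>e>0. \<exists>del>0. \<forall>th\<in>Th. normd 1 (\<lambda>i. th i - 0) < del \<longrightarrow>
        (\<integral>\<^sup>+ x. ennreal ((sqrt (qm (qth th) a x) - sqrt (qm (qth (\<lambda>_. 0)) a x)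
              - (\<Sum>j<1. (th j - 0) * Dc a j x))\<^sup>2) \<partial>nu a)
        \<le> ennreal (e * (normd 1 (\<lambda>i. th i - 0))\<^sup>2)"
    using Dc_dqm by (simp add: normd1 normd_Suc0)
  show "\<forall>c::nat \<Rightarrow> real.
        (\<forall>i<1. (\<Sum>j<1. Pint mu0 mu1 muZ ppi S q0 (\<lambda>w. score mu0 mu1 q0 Dc i w * score mu0 mu1 q0 Dc j w) * c j) = 0)
        \<longrightarrow> (\<forall>j<1. c j = 0)"
    using Pint_pos by simp
qed

lemma score_in: "score mu0 mu1 q0 Dc 0 \<in> scores mu0 mu1 muZ ppi S q0"
  unfolding scores_def using regsub by force

end

locale L4h = L4 +
  fixes h
  assumes hR: "h \<in> RHS"
begin

lemma hL: "h \<in> L2P mu0 mu1 muZ ppi S q0" using hR by (simp add: RHS_def)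
lemma hm[measurable]: "(\<lambda>x. h (fst x, a, snd x)) \<in> borel_measurable (nu a)" using L2P_D(1)[OF hL] by simp
lemma hA: "(\<integral>x. h (fst x, a, snd x) * qm q0 a x \<partial>nu a) = 0" using hR by (simp add: RHS_def)
lemma hB: "AE z in muZ. (\<integral> y. h (y, True, z) * qm q0 True (y, z) \<partial>mu1)
                   = (\<integral> y. h (y, False, z) * qm q0 False (y, z) \<partial>mu0)" using hR by (simp add: RHS_def)
lemma h2int: "integrable (nu a) (\<lambda>x. (h (fst x, a, snd x))^2 * qm q0 a x)"
  using hL unfolding L2P_iff by blast
lemma h1int: "integrable (nu a) (\<lambda>x. h (fst x, a, snd x) * qm q0 a x)" using L2P_hint[OF hL] by simp

definition tr where "tr N a x = max (- N) (min N (h (fst x, a, snd x)))"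
definition mz where "mz a z = enn2real (\<integral>\<^sup>+ y. ennreal (qm q0 a (y, z)) \<partial>MM a)"
definition cz where "cz N a z = (\<integral> y. tr N a (y, z) * qm q0 a (y, z) \<partial>MM a)"
definition kap where "kap N = (\<integral> x. tr N True x * qm q0 True x \<partial>nu True)"
definition hp where "hp N w = tr N (fst (snd w)) (fst w, snd (snd w))
   - cz N (fst (snd w)) (snd (snd w)) / mz (fst (snd w)) (snd (snd w))
   + cz N True (snd (snd w)) / mz True (snd (snd w)) - kap N"

lemma hp_hc: "hp N (fst x, a, snd x) = tr N a x - cz N a (snd x) / mz a (snd x) + cz N True (snd x) / mz True (snd x) - kap N"
  by (simp add: hp_def)

lemma tr_bd: "0 \<le> N \<Longrightarrow> \<bar>tr N a x\<bar> \<le> N" by (auto simp: tr_def)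

lemma tr_q_bd:
  assumes "0 \<le> N"
  shows "\<bar>tr N a x * qm q0 a x\<bar> \<le> N * qm q0 a x"
proof -
  have "\<bar>tr N a x * qm q0 a x\<bar> = \<bar>tr N a x\<bar> * qm q0 a x" by (simp add: abs_mult qm_nonneg)
  also have "\<dots> \<le> N * qm q0 a x" by (rule mult_right_mono[OF tr_bd[OF assms] qm_nonneg])
  finally show ?thesis .
qed

lemma tr_meas[measurable]: "tr N a \<in> borel_measurable (nu a)"
  unfolding tr_def[abs_def] by measurable

lemma mz_meas[measurable]: "mz a \<in> borel_measurable muZ"
proof -
  have "(\<lambda>x. ennreal (qm q0 a x)) \<in> borel_measurable (nu a)" using q0m[of a] by measurable
  from nnsec_meas[OF this] show ?thesis unfolding mz_def[abs_def] by simp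
qed

lemma cz_meas[measurable]: "cz N a \<in> borel_measurable muZ"
proof -
  have "(\<lambda>x. tr N a x * qm q0 a x) \<in> borel_measurable (nu a)" using q0m[of a] by measurable
  from sec_meas[OF this] show ?thesis unfolding cz_def[abs_def] by simp
qed

lemma snd_nu[measurable]: "snd \<in> measurable (nu a) muZ"
  by (simp add: nu_eq)

lemma hp_meas: "(\<lambda>x. hp N (fst x, a, snd x)) \<in> borel_measurable (nu a)"
  unfolding hp_hc by measurable

lemma tr_int: "0 \<le> N \<Longrightarrow> integrable (nu a) (\<lambda>x. tr N a x * qm q0 a x)"
proof (rule Bochner_Integration.integrable_bound[where f="\<lambda>x. N * qm q0 a x"])
  assume N: "0 \<le> N"
  show "integrable (nu a) (\<lambda>x. N * qm q0 a x)" using q0int(1)[of a] by simp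
  show "(\<lambda>x. tr N a x * qm q0 a x) \<in> borel_measurable (nu a)" using q0m[of a] by measurable
  show "AE x in nu a. norm (tr N a x * qm q0 a x) \<le> norm (N * qm q0 a x)"
    using tr_bd[OF N] qm_nonneg N by (intro AE_I2) (auto simp: abs_mult intro!: mult_right_mono)
qed

lemma cz_bd:
  assumes N: "0 \<le> N"
  shows "\<bar>cz N a z / mz a z\<bar> \<le> N"
proof (cases "mz a z = 0")
  case True
  then show ?thesis using N by simp
next
  case False
  then have fin: "(\<integral>\<^sup>+ y. ennreal (qm q0 a (y, z)) \<partial>MM a) \<noteq> \<infinity>" by (auto simp: mz_def)
  have qm': "(\<lambda>y. qm q0 a (y, z)) \<in> borel_measurable (MM a)" by (rule sec_meas_y[OF q0m])
  have iq: "integrable (MM a) (\<lambda>y. qm q0 a (y, z))"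
    using fin qm' by (intro integrableI_nonneg) (auto simp: qm_nonneg less_top)
  have mzv: "mz a z = (\<integral> y. qm q0 a (y, z) \<partial>MM a)"
    unfolding mz_def using iq by (subst nn_integral_eq_integral) (auto simp: qm_nonneg)
  have mp: "0 < mz a z" using False by (simp add: mz_def enn2real_nonneg less_le)
  have tm: "(\<lambda>y. tr N a (y, z)) \<in> borel_measurable (MM a)" by (rule sec_meas_y[OF tr_meas])
  have it: "integrable (MM a) (\<lambda>y. N * qm q0 a (y, z))" using iq by simp
  have "\<bar>cz N a z\<bar> \<le> (\<integral> y. N * qm q0 a (y, z) \<partial>MM a)"
    unfolding cz_def
  proof (rule integral_abs_bound_integral)
    show "integrable (MM a) (\<lambda>y. tr N a (y, z) * qm q0 a (y, z))"
      by (rule Bochner_Integration.integrable_bound[OF it])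
         (use tm qm' tr_bd[OF N] qm_nonneg N in \<open>auto simp: abs_mult intro!: AE_I2 mult_right_mono\<close>)
    show "integrable (MM a) (\<lambda>y. N * qm q0 a (y, z))" by (rule it)
    show "\<And>y. y \<in> space (MM a) \<Longrightarrow> \<bar>tr N a (y, z) * qm q0 a (y, z)\<bar> \<le> N * qm q0 a (y, z)"
      using tr_q_bd[OF N] by blast
  qed
  also have "\<dots> = N * mz a z" using mzv by simp
  finally show ?thesis using mp by (simp add: abs_div pos_divide_le_eq)
qed

lemma kap_bd:
  assumes N: "0 \<le> N"
  shows "\<bar>kap N\<bar> \<le> N"
proof -
  have "\<bar>kap N\<bar> \<le> (\<integral> x. N * qm q0 True x \<partial>nu True)"
    unfolding kap_def using tr_int[OF N, of True] q0int(1)[of True] tr_q_bd[OF N]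
    by (intro integral_abs_bound_integral) auto
  also have "\<dots> = N" using q0int(2)[of True] by simp
  finally show ?thesis .
qed

lemma hp_bd:
  assumes N: "0 \<le> N"
  shows "\<bar>hp N w\<bar> \<le> 4 * N"
proof -
  have "\<bar>hp N w\<bar> \<le> \<bar>tr N (fst (snd w)) (fst w, snd (snd w))\<bar>
      + \<bar>cz N (fst (snd w)) (snd (snd w)) / mz (fst (snd w)) (snd (snd w))\<bar>
      + \<bar>cz N True (snd (snd w)) / mz True (snd (snd w))\<bar> + \<bar>kap N\<bar>"
    unfolding hp_def by linarith
  also have "\<dots> \<le> N + N + N + N"
    using tr_bd[OF N] cz_bd[OF N] kap_bd[OF N] by (intro add_mono) auto
  finally show ?thesis by simp
qed

end

context L4 begin

lemma fub:
  fixes F :: "real \<times> (real^'k) \<Rightarrow> real"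
  assumes F: "integrable (nu a) F"
  shows "integrable muZ (\<lambda>z. \<integral>y. F (y, z) \<partial>MM a)" "(\<integral>z. (\<integral>y. F (y, z) \<partial>MM a) \<partial>muZ) = (\<integral>x. F x \<partial>nu a)"
proof -
  interpret P: pair_sigma_finite "MM a" muZ by (rule psf)
  have F': "integrable (MM a \<Otimes>\<^sub>M muZ) (case_prod (\<lambda>y z. F (y, z)))" using F by (simp add: nu_eq)
  show "integrable muZ (\<lambda>z. \<integral>y. F (y, z) \<partial>MM a)" using P.integrable_snd[OF F'] by simp
  show "(\<integral>z. (\<integral>y. F (y, z) \<partial>MM a) \<partial>muZ) = (\<integral>x. F x \<partial>nu a)" using P.integral_snd[OF F'] by (simp add: nu_eq)
qed

end

context L4h begin

definition good :: "real \<Rightarrow> (real^'a) \<Rightarrow> bool" where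
  "good N z \<longleftrightarrow> (\<forall>a. integrable (MM a) (\<lambda>y. qm q0 a (y, z)) \<and> integrable (MM a) (\<lambda>y. h (y, a, z) * qm q0 a (y, z))
       \<and> integrable (MM a) (\<lambda>y. tr N a (y, z) * qm q0 a (y, z))
       \<and> integrable (MM a) (\<lambda>y. (h (y, a, z))^2 * qm q0 a (y, z)))
     \<and> (\<integral>y. qm q0 True (y, z) \<partial>mu1) = (\<integral>y. qm q0 False (y, z) \<partial>mu0)
     \<and> (\<integral> y. h (y, True, z) * qm q0 True (y, z) \<partial>mu1) = (\<integral> y. h (y, False, z) * qm q0 False (y, z) \<partial>mu0)"

lemma AE_good: "0 \<le> N \<Longrightarrow> AE z in muZ. good N z"
proof -
  assume N: "0 \<le> N"
  have s1: "AE z in muZ. integrable (MM a) (\<lambda>y. h (y, a, z) * qm q0 a (y, z))" for a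
    using sec_integrable[OF h1int[of a]] by simp
  have s2: "AE z in muZ. integrable (MM a) (\<lambda>y. tr N a (y, z) * qm q0 a (y, z))" for a
    using sec_integrable[OF tr_int[OF N, of a]] by simp
  have s3: "AE z in muZ. integrable (MM a) (\<lambda>y. (h (y, a, z))^2 * qm q0 a (y, z))" for a
    using sec_integrable[OF h2int[of a]] by simp
  show ?thesis using Qfam_compat_int[OF q0Q] hB s1[of True] s1[of False] s2[of True] s2[of False]
    s3[of True] s3[of False]
  proof eventually_elim
    case (elim z)
    have "\<forall>a. integrable (MM a) (\<lambda>y. qm q0 a (y, z)) \<and> integrable (MM a) (\<lambda>y. h (y, a, z) * qm q0 a (y, z))
       \<and> integrable (MM a) (\<lambda>y. tr N a (y, z) * qm q0 a (y, z))
       \<and> integrable (MM a) (\<lambda>y. (h (y, a, z))^2 * qm q0 a (y, z))"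
    proof
      fix a show "integrable (MM a) (\<lambda>y. qm q0 a (y, z)) \<and> integrable (MM a) (\<lambda>y. h (y, a, z) * qm q0 a (y, z))
       \<and> integrable (MM a) (\<lambda>y. tr N a (y, z) * qm q0 a (y, z))
       \<and> integrable (MM a) (\<lambda>y. (h (y, a, z))^2 * qm q0 a (y, z))"
        using elim by (cases a) (simp_all add: MM_TF)
    qed
    then show ?case using elim unfolding good_def by blast
  qed
qed

lemma good_mz:
  assumes g: "good N z"
  shows "mz a z = (\<integral>y. qm q0 a (y, z) \<partial>MM a)" "mz True z = mz False z"
proof -
  have "mz b z = (\<integral>y. qm q0 b (y, z) \<partial>MM b)" for b
    using g unfolding mz_def good_def by (subst nn_integral_eq_integral) (auto simp: qm_nonneg)
  then show "mz a z = (\<integral>y. qm q0 a (y, z) \<partial>MM a)" "mz True z = mz False z"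
    using g by (auto simp: good_def MM_TF)
qed

lemma good_cancel:
  assumes g: "good N z"
  shows "cz N a z / mz a z * mz a z = cz N a z"
proof (cases "mz a z = 0")
  case False
  then show ?thesis by simp
next
  case True
  have iq: "integrable (MM a) (\<lambda>y. qm q0 a (y, z))" using g by (simp add: good_def)
  have "(\<integral>y. qm q0 a (y, z) \<partial>MM a) = 0" using True good_mz(1)[OF g, of a] by simp
  then have "AE y in MM a. qm q0 a (y, z) = 0"
    using iq by (subst (asm) integral_nonneg_eq_0_iff_AE) (auto simp: qm_nonneg)
  moreover have "(\<lambda>y. tr N a (y, z) * qm q0 a (y, z)) \<in> borel_measurable (MM a)"
    by (intro borel_measurable_times sec_meas_y[OF tr_meas] sec_meas_y[OF q0m])
  ultimately have "cz N a z = (\<integral>y. 0 \<partial>MM a)"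
    unfolding cz_def by (intro integral_cong_AE) (auto elim!: eventually_mono)
  then show ?thesis using True by simp
qed

lemma good_inner:
  assumes N: "0 \<le> N" and g: "good N z"
  shows "(\<integral>y. hp N (y, a, z) * qm q0 a (y, z) \<partial>MM a) = cz N True z - kap N * mz True z"
proof -
  have e: "(\<lambda>y. hp N (y, a, z) * qm q0 a (y, z)) = (\<lambda>y. tr N a (y, z) * qm q0 a (y, z)
      + (cz N True z / mz True z - cz N a z / mz a z - kap N) * qm q0 a (y, z))"
    by (auto simp: hp_def algebra_simps)
  have it: "integrable (MM a) (\<lambda>y. tr N a (y, z) * qm q0 a (y, z))"
    and iq: "integrable (MM a) (\<lambda>y. qm q0 a (y, z))" using g by (auto simp: good_def)
  have "(\<integral>y. hp N (y, a, z) * qm q0 a (y, z) \<partial>MM a)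
      = cz N a z + (cz N True z / mz True z - cz N a z / mz a z - kap N) * mz a z"
    unfolding e using it iq good_mz(1)[OF g, of a] by (simp add: cz_def)
  also have "\<dots> = cz N a z + cz N True z / mz True z * mz a z - cz N a z / mz a z * mz a z - kap N * mz a z"
    by (simp add: algebra_simps)
  also have "\<dots> = cz N True z - kap N * mz True z"
    using good_cancel[OF g, of a] good_cancel[OF g, of True] good_mz(2)[OF g] by (cases a) auto
  finally show ?thesis .
qed

end

context L4h begin

lemma hp_B:
  assumes N: "0 \<le> N"
  shows "AE z in muZ. (\<integral> y. hp N (y, True, z) * qm q0 True (y, z) \<partial>mu1)
                   = (\<integral> y. hp N (y, False, z) * qm q0 False (y, z) \<partial>mu0)"
  using AE_good[OF N]
proof eventually_elim
  case (elim z)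
  show ?case using good_inner[OF N elim, of True] good_inner[OF N elim, of False] by (simp add: MM_TF)
qed

lemma hp_int:
  assumes N: "0 \<le> N"
  shows "integrable (nu a) (\<lambda>x. hp N (fst x, a, snd x) * qm q0 a x)"
proof (rule Bochner_Integration.integrable_bound[where f="\<lambda>x. 4 * N * qm q0 a x"])
  show "integrable (nu a) (\<lambda>x. 4 * N * qm q0 a x)" using q0int(1)[of a] by simp
  show "(\<lambda>x. hp N (fst x, a, snd x) * qm q0 a x) \<in> borel_measurable (nu a)"
    using hp_meas[of N a] q0m[of a] by measurable
  show "AE x in nu a. norm (hp N (fst x, a, snd x) * qm q0 a x) \<le> norm (4 * N * qm q0 a x)"
  proof (intro AE_I2)
    fix x
    have "\<bar>hp N (fst x, a, snd x) * qm q0 a x\<bar> = \<bar>hp N (fst x, a, snd x)\<bar> * qm q0 a x" by (simp add: abs_mult qm_nonneg)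
    also have "\<dots> \<le> 4 * N * qm q0 a x" by (rule mult_right_mono[OF hp_bd[OF N] qm_nonneg])
    finally show "norm (hp N (fst x, a, snd x) * qm q0 a x) \<le> norm (4 * N * qm q0 a x)"
      using N qm_nonneg[of q0 a x] by simp
  qed
qed

lemma hp_A:
  assumes N: "0 \<le> N"
  shows "(\<integral>x. hp N (fst x, a, snd x) * qm q0 a x \<partial>nu a) = 0"
proof -
  have "(\<integral>x. hp N (fst x, a, snd x) * qm q0 a x \<partial>nu a) = (\<integral>z. (\<integral>y. hp N (y, a, z) * qm q0 a (y, z) \<partial>MM a) \<partial>muZ)"
    using fub(2)[OF hp_int[OF N, of a]] by simp
  also have "\<dots> = (\<integral>z. cz N True z - kap N * mz True z \<partial>muZ)"
  proof (rule integral_cong_AE)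
    have "(\<lambda>x. hp N (fst x, a, snd x) * qm q0 a x) \<in> borel_measurable (nu a)"
      using hp_meas[of N a] q0m[of a] by measurable
    from sec_meas[OF this]
    show "(\<lambda>z. \<integral>y. hp N (y, a, z) * qm q0 a (y, z) \<partial>MM a) \<in> borel_measurable muZ" by simp
    show "(\<lambda>z. cz N True z - kap N * mz True z) \<in> borel_measurable muZ" by measurable
    show "AE z in muZ. (\<integral>y. hp N (y, a, z) * qm q0 a (y, z) \<partial>MM a) = cz N True z - kap N * mz True z"
      using AE_good[OF N] by (auto elim!: eventually_mono simp: good_inner[OF N])
  qed
  finally have e1: "(\<integral>x. hp N (fst x, a, snd x) * qm q0 a x \<partial>nu a) = (\<integral>z. cz N True z - kap N * mz True z \<partial>muZ)" .
  have ic: "integrable muZ (cz N True)" and cint: "(\<integral>z. cz N True z \<partial>muZ) = kap N"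
    using fub[OF tr_int[OF N, of True]] by (simp_all add: cz_def[abs_def] kap_def)
  have mzae: "AE z in muZ. mz True z = (\<integral>y. qm q0 True (y, z) \<partial>MM True)"
    using AE_good[OF N] by eventually_elim (rule good_mz(1))
  have im: "integrable muZ (mz True)"
    using fub(1)[OF q0int(1)[of True]] mzae by (subst integrable_cong_AE) (auto elim!: eventually_mono)
  have mint: "(\<integral>z. mz True z \<partial>muZ) = 1"
  proof -
    have ms: "(\<lambda>z. \<integral>y. qm q0 True (y, z) \<partial>MM True) \<in> borel_measurable muZ"
      using sec_meas[OF q0m[of True]] by simp
    have "(\<integral>z. mz True z \<partial>muZ) = (\<integral>z. (\<integral>y. qm q0 True (y, z) \<partial>MM True) \<partial>muZ)"
      using mzae ms by (intro integral_cong_AE) (auto elim!: eventually_mono)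
    also have "\<dots> = 1" using fub(2)[OF q0int(1)[of True]] q0int(2)[of True] by simp
    finally show ?thesis .
  qed
  show ?thesis unfolding e1 using ic im cint mint by simp
qed

end

lemma clamp_sq: "0 \<le> (N::real) \<Longrightarrow> (x - max (- N) (min N x))^2 \<le> x^2"
proof -
  assume N: "0 \<le> N"
  have "\<bar>x - max (- N) (min N x)\<bar> \<le> \<bar>x\<bar>" using N by (auto simp: max_def min_def)
  then have "\<bar>x - max (- N) (min N x)\<bar>^2 \<le> \<bar>x\<bar>^2" by (intro power_mono) auto
  then show ?thesis by simp
qed

lemma abs_sq_mono:
  fixes A B q :: real
  assumes "A^2 \<le> B^2" "0 \<le> q"
  shows "\<bar>A^2 * q\<bar> \<le> \<bar>B^2 * q\<bar>"
proof -
  have "\<bar>A^2 * q\<bar> = A^2 * q" using assms(2) by simp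
  also have "\<dots> \<le> B^2 * q" by (rule mult_right_mono[OF assms])
  also have "\<dots> = \<bar>B^2 * q\<bar>" using assms(2) by simp
  finally show ?thesis .
qed

context L4h begin

lemma htr_sq: "0 \<le> N \<Longrightarrow> (h (fst x, a, snd x) - tr N a x)^2 \<le> (h (fst x, a, snd x))^2"
  unfolding tr_def by (rule clamp_sq)

lemma E_int:
  assumes N: "0 \<le> N"
  shows "integrable (nu a) (\<lambda>x. (h (fst x, a, snd x) - tr N a x)^2 * qm q0 a x)"
proof (rule Bochner_Integration.integrable_bound[OF h2int[of a]])
  show "(\<lambda>x. (h (fst x, a, snd x) - tr N a x)^2 * qm q0 a x) \<in> borel_measurable (nu a)"
    using q0m[of a] by measurable
  show "AE x in nu a. norm ((h (fst x, a, snd x) - tr N a x)^2 * qm q0 a x) \<le> norm ((h (fst x, a, snd x))^2 * qm q0 a x)"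
    by (intro AE_I2) (unfold real_norm_def, intro abs_sq_mono htr_sq[OF N] qm_nonneg)
qed

definition EE where "EE N a = (\<integral>x. (h (fst x, a, snd x) - tr N a x)^2 * qm q0 a x \<partial>nu a)"

lemma EE_nonneg: "0 \<le> EE N a"
  unfolding EE_def by (intro Bochner_Integration.integral_nonneg mult_nonneg_nonneg zero_le_power2 qm_nonneg)

lemma kap_sq:
  assumes N: "0 \<le> N"
  shows "(kap N)^2 \<le> EE N True"
proof -
  have "kap N = (\<integral>x. tr N True x * qm q0 True x \<partial>nu True) - (\<integral>x. h (fst x, True, snd x) * qm q0 True x \<partial>nu True)"
    using hA[of True] by (simp add: kap_def)
  also have "\<dots> = (\<integral>x. (tr N True x - h (fst x, True, snd x)) * qm q0 True x \<partial>nu True)"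
    using tr_int[OF N, of True] h1int[of True] by (simp add: left_diff_distrib)
  finally have k: "kap N = (\<integral>x. (tr N True x - h (fst x, True, snd x)) * qm q0 True x \<partial>nu True)" .
  have fm: "(\<lambda>x. tr N True x - h (fst x, True, snd x)) \<in> borel_measurable (nu True)" by measurable
  have i2: "integrable (nu True) (\<lambda>x. (tr N True x - h (fst x, True, snd x))^2 * qm q0 True x)"
    using E_int[OF N, of True] by (simp add: power2_commute)
  have "(kap N)^2 \<le> (\<integral>x. (tr N True x - h (fst x, True, snd x))^2 * qm q0 True x \<partial>nu True) * (\<integral>x. qm q0 True x \<partial>nu True)"
    unfolding k by (rule CS_real(2)[OF fm qm_nonneg q0int(1) i2])
  then show ?thesis using q0int(2)[of True] by (simp add: EE_def power2_commute)
qed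

definition ez where "ez N a z = (\<integral>y. (h (y, a, z) - tr N a (y, z))^2 * qm q0 a (y, z) \<partial>MM a)"

lemma ez_int: "0 \<le> N \<Longrightarrow> (\<integral>z. ez N a z \<partial>muZ) = EE N a" "0 \<le> N \<Longrightarrow> integrable muZ (ez N a)"
  using fub[OF E_int, of N a] by (simp_all add: ez_def[abs_def] EE_def)

lemma good_Dd:
  assumes N: "0 \<le> N" and g: "good N z"
  shows "(cz N a z / mz a z - cz N True z / mz True z)^2 * mz a z \<le> 2 * ez N a z + 2 * ez N True z"
proof -
  define m where "m = mz True z"
  have mam: "mz a z = m" using good_mz(2)[OF g] by (cases a) (auto simp: m_def)
  have m0: "0 \<le> m" by (simp add: m_def mz_def enn2real_nonneg)
  have ez0: "0 \<le> ez N b z" for b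
    unfolding ez_def by (intro Bochner_Integration.integral_nonneg mult_nonneg_nonneg zero_le_power2 qm_nonneg)
  define H where "H = (\<integral> y. h (y, True, z) * qm q0 True (y, z) \<partial>mu1)"
  define dl where "dl b = (\<integral>y. (tr N b (y, z) - h (y, b, z)) * qm q0 b (y, z) \<partial>MM b)" for b
  have cH: "cz N b z = dl b + H" for b
  proof -
    have iH: "integrable (MM b) (\<lambda>y. h (y, b, z) * qm q0 b (y, z))"
      and it: "integrable (MM b) (\<lambda>y. tr N b (y, z) * qm q0 b (y, z))" using g by (auto simp: good_def)
    have Hb: "(\<integral> y. h (y, b, z) * qm q0 b (y, z) \<partial>MM b) = H"
      using g by (cases b) (auto simp: good_def H_def MM_TF)
    have "dl b = cz N b z - (\<integral> y. h (y, b, z) * qm q0 b (y, z) \<partial>MM b)"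
      unfolding dl_def cz_def using iH it by (simp add: left_diff_distrib)
    then show ?thesis using Hb by simp
  qed
  have cs: "(dl b)^2 \<le> ez N b z * m" for b
  proof -
    have hs: "(\<lambda>y. h (y, b, z)) \<in> borel_measurable (MM b)" using sec_meas_y[OF hm[of b], of z] by simp
    have fm: "(\<lambda>y. tr N b (y, z) - h (y, b, z)) \<in> borel_measurable (MM b)"
      using sec_meas_y[OF tr_meas[of N b], of z] hs by measurable
    have iq: "integrable (MM b) (\<lambda>y. qm q0 b (y, z))" using g by (simp add: good_def)
    have i2: "integrable (MM b) (\<lambda>y. (tr N b (y, z) - h (y, b, z))^2 * qm q0 b (y, z))"
    proof (rule Bochner_Integration.integrable_bound[where f="\<lambda>y. (h (y, b, z))^2 * qm q0 b (y, z)"])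
      show "integrable (MM b) (\<lambda>y. (h (y, b, z))^2 * qm q0 b (y, z))" using g by (simp add: good_def)
      show "(\<lambda>y. (tr N b (y, z) - h (y, b, z))^2 * qm q0 b (y, z)) \<in> borel_measurable (MM b)"
        using fm sec_meas_y[OF q0m[of b], of z] by measurable
      show "AE y in MM b. norm ((tr N b (y, z) - h (y, b, z))^2 * qm q0 b (y, z)) \<le> norm ((h (y, b, z))^2 * qm q0 b (y, z))"
      proof (intro AE_I2)
        fix y
        have "(h (y, b, z) - tr N b (y, z))^2 \<le> (h (y, b, z))^2"
          using htr_sq[OF N, where x="(y, z)" and a=b] by simp
        then have "(tr N b (y, z) - h (y, b, z))^2 \<le> (h (y, b, z))^2" by (simp add: power2_commute)
        then show "norm ((tr N b (y, z) - h (y, b, z))^2 * qm q0 b (y, z)) \<le> norm ((h (y, b, z))^2 * qm q0 b (y, z))"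
          unfolding real_norm_def by (rule abs_sq_mono[OF _ qm_nonneg])
      qed
    qed
    have "(dl b)^2 \<le> (\<integral>y. (tr N b (y, z) - h (y, b, z))^2 * qm q0 b (y, z) \<partial>MM b) * (\<integral>y. qm q0 b (y, z) \<partial>MM b)"
      unfolding dl_def by (rule CS_real(2)[OF fm qm_nonneg iq i2])
    also have "(\<integral>y. qm q0 b (y, z) \<partial>MM b) = m"
      using good_mz(1)[OF g, of b] good_mz(2)[OF g] by (cases b) (auto simp: m_def)
    also have "(\<integral>y. (tr N b (y, z) - h (y, b, z))^2 * qm q0 b (y, z) \<partial>MM b) = ez N b z"
      by (simp add: ez_def power2_commute)
    finally show ?thesis .
  qed
  show ?thesis
  proof (cases "m = 0")
    case True
    then show ?thesis using mam ez0[of a] ez0[of True] by simp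
  next
    case False
    then have mp: "0 < m" using m0 by simp
    have "(cz N a z / mz a z - cz N True z / mz True z)^2 * mz a z = (dl a - dl True)^2 / m"
      unfolding mam m_def[symmetric] cH using mp by (simp add: power2_eq_square field_simps)
    also have "\<dots> \<le> (2 * (dl a)^2 + 2 * (dl True)^2) / m"
    proof (intro divide_right_mono)
      have "0 \<le> (dl a + dl True)^2" by simp
      then show "(dl a - dl True)^2 \<le> 2 * (dl a)^2 + 2 * (dl True)^2" by (simp add: power2_eq_square algebra_simps)
    qed (use m0 in simp)
    also have "\<dots> \<le> (2 * (ez N a z * m) + 2 * (ez N True z * m)) / m"
      using cs[of a] cs[of True] mp by (intro divide_right_mono add_mono mult_left_mono) auto
    also have "\<dots> = 2 * ez N a z + 2 * ez N True z" using mp by (simp add: field_simps)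
    finally show ?thesis .
  qed
qed

end

context L4 begin

lemma Pa_le_q:
  assumes "\<And>w. 0 \<le> f w"
  shows "Pa a f \<le> (\<integral>\<^sup>+ x. ennreal (f (fst x, a, snd x) * qm q0 a x) \<partial>nu a)"
  unfolding Pa_def
proof (intro nn_integral_mono ennreal_leI)
  fix x
  have "0 \<le> f (fst x, a, snd x) * qm q0 a x" by (intro mult_nonneg_nonneg assms qm_nonneg)
  then show "f (fst x, a, snd x) * qm q0 a x * pwz a (snd x) \<le> f (fst x, a, snd x) * qm q0 a x"
    using pw_le1[of a "snd x"] by (simp add: mult_left_le)
qed

end

context L4h begin

definition Dd where "Dd N a z = cz N a z / mz a z - cz N True z / mz True z"

lemma Dd_bd: "0 \<le> N \<Longrightarrow> \<bar>Dd N a z\<bar> \<le> 2 * N"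
  unfolding Dd_def using cz_bd[of N a z] cz_bd[of N True z] by linarith

lemma Dd_meas[measurable]: "Dd N a \<in> borel_measurable muZ"
  unfolding Dd_def[abs_def] by measurable

lemma Dd_term:
  assumes N: "0 \<le> N"
  shows "integrable (nu a) (\<lambda>x. (Dd N a (snd x))^2 * qm q0 a x)"
    "(\<integral>x. (Dd N a (snd x))^2 * qm q0 a x \<partial>nu a) \<le> 2 * EE N a + 2 * EE N True"
proof -
  show i: "integrable (nu a) (\<lambda>x. (Dd N a (snd x))^2 * qm q0 a x)"
  proof (rule Bochner_Integration.integrable_bound[where f="\<lambda>x. (2 * N)^2 * qm q0 a x"])
    show "integrable (nu a) (\<lambda>x. (2 * N)^2 * qm q0 a x)" using q0int(1)[of a] by simp
    show "(\<lambda>x. (Dd N a (snd x))^2 * qm q0 a x) \<in> borel_measurable (nu a)" using q0m[of a] by measurable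
    show "AE x in nu a. norm ((Dd N a (snd x))^2 * qm q0 a x) \<le> norm ((2 * N)^2 * qm q0 a x)"
    proof (intro AE_I2)
      fix x :: "real \<times> (real^'a)"
      have "(Dd N a (snd x))^2 \<le> (2 * N)^2"
        using Dd_bd[OF N, of a "snd x"] by (metis abs_ge_zero power2_abs power_mono)
      then show "norm ((Dd N a (snd x))^2 * qm q0 a x) \<le> norm ((2 * N)^2 * qm q0 a x)"
        unfolding real_norm_def by (rule abs_sq_mono[OF _ qm_nonneg])
    qed
  qed
  have "(\<integral>x. (Dd N a (snd x))^2 * qm q0 a x \<partial>nu a) = (\<integral>z. (\<integral>y. (Dd N a z)^2 * qm q0 a (y, z) \<partial>MM a) \<partial>muZ)"
    using fub(2)[OF i] by simp
  also have "\<dots> = (\<integral>z. (Dd N a z)^2 * mz a z \<partial>muZ)"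
  proof (rule integral_cong_AE)
    have "(\<lambda>x. (Dd N a (snd x))^2 * qm q0 a x) \<in> borel_measurable (nu a)" using q0m[of a] by measurable
    from sec_meas[OF this]
    show "(\<lambda>z. \<integral>y. (Dd N a z)^2 * qm q0 a (y, z) \<partial>MM a) \<in> borel_measurable muZ" by simp
    show "(\<lambda>z. (Dd N a z)^2 * mz a z) \<in> borel_measurable muZ" by measurable
    show "AE z in muZ. (\<integral>y. (Dd N a z)^2 * qm q0 a (y, z) \<partial>MM a) = (Dd N a z)^2 * mz a z"
      using AE_good[OF N] by eventually_elim (simp add: good_mz(1))
  qed
  also have "\<dots> \<le> (\<integral>z. 2 * ez N a z + 2 * ez N True z \<partial>muZ)"
  proof (rule integral_mono_AE)
    have ii: "integrable muZ (\<lambda>z. \<integral>y. (Dd N a z)^2 * qm q0 a (y, z) \<partial>MM a)" using fub(1)[OF i] by simp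
    show "integrable muZ (\<lambda>z. (Dd N a z)^2 * mz a z)"
    proof (subst integrable_cong_AE)
      show "(\<lambda>z. (Dd N a z)^2 * mz a z) \<in> borel_measurable muZ" by measurable
      have "(\<lambda>x. (Dd N a (snd x))^2 * qm q0 a x) \<in> borel_measurable (nu a)" using q0m[of a] by measurable
      from sec_meas[OF this]
      show "(\<lambda>z. \<integral>y. (Dd N a z)^2 * qm q0 a (y, z) \<partial>MM a) \<in> borel_measurable muZ" by simp
      show "AE z in muZ. (Dd N a z)^2 * mz a z = (\<integral>y. (Dd N a z)^2 * qm q0 a (y, z) \<partial>MM a)"
        using AE_good[OF N] by eventually_elim (simp add: good_mz(1))
    qed (rule ii)
    show "integrable muZ (\<lambda>z. 2 * ez N a z + 2 * ez N True z)" using ez_int(2)[OF N] by simp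
    show "AE z in muZ. (Dd N a z)^2 * mz a z \<le> 2 * ez N a z + 2 * ez N True z"
      using AE_good[OF N] by eventually_elim (simp add: good_Dd[OF N] Dd_def)
  qed
  also have "\<dots> = 2 * EE N a + 2 * EE N True" using ez_int[OF N] by simp
  finally show "(\<integral>x. (Dd N a (snd x))^2 * qm q0 a x \<partial>nu a) \<le> 2 * EE N a + 2 * EE N True" .
qed

end

context L4h begin

lemma err_a:
  assumes N: "0 \<le> N"
  shows "Pa a (\<lambda>w. (h w - hp N w)^2) \<le> ennreal (9 * EE N a + 9 * EE N True)"
proof -
  define B where "B x = 3 * ((h (fst x, a, snd x) - tr N a x)^2 * qm q0 a x) + 3 * ((Dd N a (snd x))^2 * qm q0 a x)
     + 3 * (kap N)^2 * qm q0 a x" for x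
  have iB: "integrable (nu a) B" unfolding B_def using E_int[OF N, of a] Dd_term(1)[OF N, of a] q0int(1)[of a] by simp
  have B0: "0 \<le> B x" for x unfolding B_def by (intro add_nonneg_nonneg mult_nonneg_nonneg) (auto simp: qm_nonneg)
  have intB: "(\<integral>x. B x \<partial>nu a) = 3 * EE N a + 3 * (\<integral>x. (Dd N a (snd x))^2 * qm q0 a x \<partial>nu a) + 3 * (kap N)^2"
    unfolding B_def EE_def using E_int[OF N, of a] Dd_term(1)[OF N, of a] q0int[of a] by simp
  have pt: "(h (fst x, a, snd x) - hp N (fst x, a, snd x))^2 * qm q0 a x \<le> B x" for x
  proof -
    have e: "h (fst x, a, snd x) - hp N (fst x, a, snd x) = (h (fst x, a, snd x) - tr N a x) + Dd N a (snd x) + kap N"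
      by (simp add: hp_hc Dd_def)
    have "(h (fst x, a, snd x) - hp N (fst x, a, snd x))^2 \<le> 3 * ((h (fst x, a, snd x) - tr N a x)^2 + (Dd N a (snd x))^2 + (kap N)^2)"
      unfolding e by (rule sq3)
    then have "(h (fst x, a, snd x) - hp N (fst x, a, snd x))^2 * qm q0 a x
        \<le> 3 * ((h (fst x, a, snd x) - tr N a x)^2 + (Dd N a (snd x))^2 + (kap N)^2) * qm q0 a x"
      by (rule mult_right_mono[OF _ qm_nonneg])
    then show ?thesis by (simp add: B_def algebra_simps)
  qed
  have "Pa a (\<lambda>w. (h w - hp N w)^2) \<le> (\<integral>\<^sup>+ x. ennreal ((h (fst x, a, snd x) - hp N (fst x, a, snd x))^2 * qm q0 a x) \<partial>nu a)"
    by (rule Pa_le_q) simp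
  also have "\<dots> \<le> (\<integral>\<^sup>+ x. ennreal (B x) \<partial>nu a)" by (intro nn_integral_mono ennreal_leI pt)
  also have "\<dots> = ennreal (\<integral>x. B x \<partial>nu a)" using iB B0 by (intro nn_integral_eq_integral) auto
  also have "\<dots> \<le> ennreal (9 * EE N a + 9 * EE N True)"
  proof (intro ennreal_leI)
    have "(\<integral>x. B x \<partial>nu a) \<le> 3 * EE N a + 3 * (2 * EE N a + 2 * EE N True) + 3 * EE N True"
      unfolding intB by (intro add_mono order_refl mult_left_mono Dd_term(2)[OF N] kap_sq[OF N]) simp_all
    then show "(\<integral>x. B x \<partial>nu a) \<le> 9 * EE N a + 9 * EE N True" by simp
  qed
  finally show ?thesis .
qed

lemma err_hp:
  assumes N: "0 \<le> N"
  shows "Pnn mu0 mu1 muZ ppi S q0 (\<lambda>w. (h w - hp N w)^2) \<le> ennreal (27 * (EE N False + EE N True))"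
proof -
  have "Pnn mu0 mu1 muZ ppi S q0 (\<lambda>w. (h w - hp N w)^2)
      \<le> ennreal (9 * EE N False + 9 * EE N True) + ennreal (9 * EE N True + 9 * EE N True)"
    unfolding Pnn_split by (intro add_mono err_a[OF N])
  also have "\<dots> = ennreal (9 * EE N False + 27 * EE N True)"
    using EE_nonneg[of N False] EE_nonneg[of N True] by (simp add: ennreal_plus[symmetric] del: ennreal_plus)
  also have "\<dots> \<le> ennreal (27 * (EE N False + EE N True))"
    using EE_nonneg[of N False] by (intro ennreal_leI) simp
  finally show ?thesis .
qed

lemma EE_lim: "(\<lambda>n. EE (real n) a) \<longlonglongrightarrow> 0"
proof -
  have "(\<lambda>n. \<integral>x. (h (fst x, a, snd x) - tr (real n) a x)^2 * qm q0 a x \<partial>nu a) \<longlonglongrightarrow> (\<integral>x. 0 \<partial>nu a)"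
  proof (rule integral_dominated_convergence[where w="\<lambda>x. (h (fst x, a, snd x))^2 * qm q0 a x"])
    show "(\<lambda>x. 0::real) \<in> borel_measurable (nu a)" by simp
    show "(\<lambda>x. (h (fst x, a, snd x) - tr (real n) a x)^2 * qm q0 a x) \<in> borel_measurable (nu a)" for n
      using q0m[of a] by measurable
    show "integrable (nu a) (\<lambda>x. (h (fst x, a, snd x))^2 * qm q0 a x)" by (rule h2int)
    show "AE x in nu a. (\<lambda>n. (h (fst x, a, snd x) - tr (real n) a x)^2 * qm q0 a x) \<longlonglongrightarrow> 0"
    proof (intro AE_I2)
      fix x
      obtain n0 :: nat where n0: "\<bar>h (fst x, a, snd x)\<bar> \<le> real n0" using real_arch_simple by blast
      have "\<forall>n\<ge>n0. (h (fst x, a, snd x) - tr (real n) a x)^2 * qm q0 a x = 0"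
      proof (intro allI impI)
        fix n assume "n \<ge> n0"
        then have "\<bar>h (fst x, a, snd x)\<bar> \<le> real n" using n0 by linarith
        then have "tr (real n) a x = h (fst x, a, snd x)" by (auto simp: tr_def)
        then show "(h (fst x, a, snd x) - tr (real n) a x)^2 * qm q0 a x = 0" by simp
      qed
      then have "eventually (\<lambda>n. (h (fst x, a, snd x) - tr (real n) a x)^2 * qm q0 a x = 0) sequentially"
        using eventually_sequentially by blast
      then show "(\<lambda>n. (h (fst x, a, snd x) - tr (real n) a x)^2 * qm q0 a x) \<longlonglongrightarrow> 0"
        by (rule tendsto_eventually)
    qed
    show "AE x in nu a. norm ((h (fst x, a, snd x) - tr (real n) a x)^2 * qm q0 a x) \<le> (h (fst x, a, snd x))^2 * qm q0 a x" for n
    proof (intro AE_I2)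
      fix x
      have "\<bar>(h (fst x, a, snd x) - tr (real n) a x)^2 * qm q0 a x\<bar> \<le> \<bar>(h (fst x, a, snd x))^2 * qm q0 a x\<bar>"
        by (rule abs_sq_mono[OF htr_sq qm_nonneg]) simp
      then show "norm ((h (fst x, a, snd x) - tr (real n) a x)^2 * qm q0 a x) \<le> (h (fst x, a, snd x))^2 * qm q0 a x"
        using qm_nonneg[of q0 a x] by simp
    qed
  qed
  then show ?thesis by (simp add: EE_def)
qed

lemma approx:
  assumes ep: "e > 0"
  shows "\<exists>N>0. Pnn mu0 mu1 muZ ppi S q0 (\<lambda>w. (h w - hp N w)^2) < ennreal e"
proof -
  have "(\<lambda>n. 27 * (EE (real n) False + EE (real n) True)) \<longlonglongrightarrow> 27 * (0 + 0)"
    by (intro tendsto_intros EE_lim)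
  then have "eventually (\<lambda>n. 27 * (EE (real n) False + EE (real n) True) < e) sequentially"
    using ep by (intro order_tendstoD(2)) auto
  then obtain n0 where n0: "\<forall>n\<ge>n0. 27 * (EE (real n) False + EE (real n) True) < e"
    unfolding eventually_sequentially by blast
  define n where "n = Suc n0"
  have np: "real n > 0" by (simp add: n_def)
  have "Pnn mu0 mu1 muZ ppi S q0 (\<lambda>w. (h w - hp (real n) w)^2) \<le> ennreal (27 * (EE (real n) False + EE (real n) True))"
    using np by (intro err_hp) simp
  also have "\<dots> < ennreal e"
    using n0[rule_format, of n] EE_nonneg[of "real n" False] EE_nonneg[of "real n" True] ep
    by (subst ennreal_less_iff) (auto simp: n_def)
  finally show ?thesis using np by blast
qed

end

context L4 begin

lemma scores_RHS: "scores mu0 mu1 muZ ppi S q0 \<subseteq> RHS"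
  unfolding scores_def using score_RHS by blast

lemma tangent_sub: "tangent_space mu0 mu1 muZ ppi S q0 \<subseteq> RHS"
proof
  fix h assume h: "h \<in> tangent_space mu0 mu1 muZ ppi S q0"
  then have hL: "h \<in> L2P mu0 mu1 muZ ppi S q0" by (simp add: tangent_space_def)
  show "h \<in> RHS"
  proof (rule RHS_closed[OF hL])
    fix e :: real assume "e > 0"
    then obtain g where g: "g \<in> lin_span (scores mu0 mu1 muZ ppi S q0)"
      and P: "Pnn mu0 mu1 muZ ppi S q0 (\<lambda>w. (h w - g w)^2) < ennreal e"
      using h by (auto simp: tangent_space_def)
    have "g \<in> RHS" using g lin_span_RHS[OF scores_RHS] by blast
    then show "\<exists>g\<in>RHS. Pnn mu0 mu1 muZ ppi S q0 (\<lambda>w. (h w - g w)^2) < ennreal e" using P by blast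
  qed
qed

lemma Pa_cong_q:
  assumes "\<And>x. f (fst x, a, snd x) * qm q0 a x = g (fst x, a, snd x) * qm q0 a x"
  shows "Pa a f = Pa a g"
  unfolding Pa_def by (simp only: assms)

lemma sub_tangent: "RHS \<subseteq> tangent_space mu0 mu1 muZ ppi S q0"
proof
  fix h assume hR: "h \<in> RHS"
  then have hL: "h \<in> L2P mu0 mu1 muZ ppi S q0" by (simp add: RHS_def)
  interpret H: L4h mu0 mu1 muZ S nS ppi q0 h
    by (intro L4h.intro L4_axioms L4h_axioms.intro hR)
  have "\<exists>g\<in>lin_span (scores mu0 mu1 muZ ppi S q0). Pnn mu0 mu1 muZ ppi S q0 (\<lambda>w. (h w - g w)^2) < ennreal e"
    if ep: "e > 0" for e
  proof -
    obtain N where Np: "N > 0" and P: "Pnn mu0 mu1 muZ ppi S q0 (\<lambda>w. (h w - H.hp N w)^2) < ennreal e"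
      using H.approx[OF ep] by blast
    have N0: "0 \<le> N" using Np by simp
    show ?thesis
    proof (cases "Pnn mu0 mu1 muZ ppi S q0 (\<lambda>w. (H.hp N w)^2) = 0")
      case True
      have z: "(\<lambda>w. 0) \<in> lin_span (scores mu0 mu1 muZ ppi S q0)"
        unfolding lin_span_def by (rule CollectI, rule exI[of _ 0]) simp
      have "Pa a (\<lambda>w. (h w - H.hp N w)^2) = Pa a (\<lambda>w. (h w - 0)^2)" for a
      proof -
        have "Pa a (\<lambda>w. (H.hp N w)^2) = 0" using True by (cases a) (simp_all add: Pnn_split)
        then have "AE x in nu a. ennreal ((H.hp N (fst x, a, snd x))^2 * qm q0 a x * pwz a (snd x)) = 0"
          unfolding Pa_def using H.hp_meas[of N a] q0m[of a] pw_meas[of a]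
          by (subst (asm) nn_integral_0_iff_AE) (auto)
        then have ae: "AE x in nu a. H.hp N (fst x, a, snd x) * qm q0 a x = 0"
        proof eventually_elim
          case (elim x)
          have "(H.hp N (fst x, a, snd x))^2 * qm q0 a x * pwz a (snd x) \<le> 0"
            using elim by (simp add: ennreal_eq_0_iff)
          moreover have "0 \<le> (H.hp N (fst x, a, snd x))^2 * qm q0 a x * pwz a (snd x)"
            using pw_pos[of a "snd x"] qm_nonneg[of q0 a x] by simp
          ultimately have "(H.hp N (fst x, a, snd x))^2 * qm q0 a x * pwz a (snd x) = 0" by simp
          then have "H.hp N (fst x, a, snd x) = 0 \<or> qm q0 a x = 0" using pw_pos[of a "snd x"] by simp
          then show ?case by auto
        qed
        show ?thesis unfolding Pa_def
        proof (rule nn_integral_cong_AE)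
          show "AE x in nu a. ennreal ((h (fst x, a, snd x) - H.hp N (fst x, a, snd x))^2 * qm q0 a x * pwz a (snd x))
             = ennreal ((h (fst x, a, snd x) - 0)^2 * qm q0 a x * pwz a (snd x))"
            using ae by eventually_elim auto
        qed
      qed
      then have P0: "Pnn mu0 mu1 muZ ppi S q0 (\<lambda>w. (h w - 0)^2) < ennreal e"
        using P by (simp add: Pnn_split)
      show ?thesis by (rule bexI[where x="\<lambda>w. 0"]) (use P0 z in auto)
    next
      case False
      interpret I: L4c mu0 mu1 muZ S nS ppi q0 "H.hp N" "4 * N"
      proof (intro L4c.intro L4_axioms L4c_axioms.intro)
        show "\<And>a. (\<lambda>x. H.hp N (fst x, a, snd x)) \<in> borel_measurable (nu a)" by (rule H.hp_meas)
        show "\<And>w. \<bar>H.hp N w\<bar> \<le> 4 * N" by (rule H.hp_bd[OF N0])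
        show "0 < 4 * N" using Np by simp
        show "\<And>a. (\<integral>x. H.hp N (fst x, a, snd x) * qm q0 a x \<partial>nu a) = 0" by (rule H.hp_A[OF N0])
        show "AE z in muZ. (\<integral> y. H.hp N (y, True, z) * qm q0 True (y, z) \<partial>mu1)
                   = (\<integral> y. H.hp N (y, False, z) * qm q0 False (y, z) \<partial>mu0)" by (rule H.hp_B[OF N0])
        show "Pnn mu0 mu1 muZ ppi S q0 (\<lambda>w. (H.hp N w)^2) \<noteq> 0" by (rule False)
      qed
      define g where "g = score mu0 mu1 q0 I.Dc 0"
      have gs: "g \<in> scores mu0 mu1 muZ ppi S q0" unfolding g_def by (rule I.score_in)
      have gl: "g \<in> lin_span (scores mu0 mu1 muZ ppi S q0)"
        unfolding lin_span_def
        by (rule CollectI, rule exI[of _ 1], rule exI[of _ "\<lambda>_. 1"], rule exI[of _ "\<lambda>_. g"]) (simp add: gs)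
      have "Pa a (\<lambda>w. (h w - g w)^2) = Pa a (\<lambda>w. (h w - H.hp N w)^2)" for a
      proof (rule Pa_cong_q)
        fix x :: "real \<times> (real^'k)"
        show "(h (fst x, a, snd x) - g (fst x, a, snd x))^2 * qm q0 a x = (h (fst x, a, snd x) - H.hp N (fst x, a, snd x))^2 * qm q0 a x"
          using qm_nonneg[of q0 a x] I.score_Dc[of "fst x" a "snd x"] by (auto simp: g_def)
      qed
      then have "Pnn mu0 mu1 muZ ppi S q0 (\<lambda>w. (h w - g w)^2) < ennreal e"
        using P by (simp add: Pnn_split)
      then show ?thesis using gl by blast
    qed
  qed
  then show "h \<in> tangent_space mu0 mu1 muZ ppi S q0" using hL by (simp add: tangent_space_def)
qed

lemma main: "tangent_space mu0 mu1 muZ ppi S q0 = RHS"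
  using tangent_sub sub_tangent by blast

end

theorem lemma4:
  fixes mu0 mu1 :: "real measure" and muZ :: "(real^'k) measure"
    and S :: "(real^'k) \<Rightarrow> nat" and nS :: nat and ppi :: "nat \<Rightarrow> real"
    and q0 :: "real \<times> real \<times> (real^'k) \<Rightarrow> real"
  assumes "sigma_finite_measure mu0" "sigma_finite_measure mu1" "sigma_finite_measure muZ"
    and "sets mu0 = sets borel" "sets mu1 = sets borel" "sets muZ = sets borel"
    and "S \<in> measurable muZ (count_space UNIV)" "\<forall>z. S z \<in> {1..nS}"
    and "\<forall>s\<in>{1..nS}. 0 < ppi s \<and> ppi s < 1"
    and "q0 \<in> Qfam mu0 mu1 muZ"
  shows "tangent_space mu0 mu1 muZ ppi S q0 =
    {h \<in> L2P mu0 mu1 muZ ppi S q0.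
       (\<forall>a. (\<integral> x. h (fst x, a, snd x) * qmarg mu0 mu1 q0 a x \<partial>nuM mu0 mu1 muZ a) = 0) \<and>
       (AE z in muZ. (\<integral> y. h (y, True, z) * qmarg mu0 mu1 q0 True (y, z) \<partial>mu1)
                   = (\<integral> y. h (y, False, z) * qmarg mu0 mu1 q0 False (y, z) \<partial>mu0))}"
proof -
  interpret L: L4 mu0 mu1 muZ S nS ppi q0
    using assms by (intro L4.intro) auto
  show ?thesis using L.main by (simp add: L.RHS_def)
qed


end
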